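(* Let $\mathbb C$ be a semi-abelian category, and let $f\colon X'\to X$, $g\colon Y'\to Y$, $h\colon W'\to W$ be normal epimorphisms. Then the induced morphism $f\otimes^h g\colon X'\otimes^{W'}Y'\to X\otimes^W Y$ is a normal epimorphism.
   Context: A semi-abelian category is a pointed, Barr-exact, Bourn-protomodular category with binary coproducts. For objects $W,X,Y$, let $X\otimes^W Y$ be the kernel of $\langle [\iota_1,\iota_2,0],[\iota_1,0,\iota_2]\rangle\colon W+X+Y\to (W+X)\times_W(W+Y)$, where $\iota_i$ are coproduct injections and $(W+X)\times_W(W+Y)$ is the pullback of $[1,0]\colon W+X\to W$ and $[1,0]\colon W+Y\to W$. This is functorial in $(W,X,Y)$, and $f\otimes^h g$ is the restriction of $h+f+g\colon W'+X'+Y'\to W+X+Y$ to these kernels. *)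

theory Defs
  imports Main
begin

section \<open>Categories (relativised to carriers); composition: Cmp C g f = g o f\<close>

record ('o, 'm) cat =
  Obj :: "'o set"
  Arr :: "'m set"
  Dom :: "'m \<Rightarrow> 'o"
  Cod :: "'m \<Rightarrow> 'o"
  Cmp :: "'m \<Rightarrow> 'm \<Rightarrow> 'm"
  Idm :: "'o \<Rightarrow> 'm"

definition hom :: "('o,'m) cat \<Rightarrow> 'o \<Rightarrow> 'o \<Rightarrow> 'm set" where
  "hom C a b = {f \<in> Arr C. Dom C f = a \<and> Cod C f = b}"

definition category :: "('o,'m) cat \<Rightarrow> bool" where
  "category C \<longleftrightarrow>
     (\<forall>f\<in>Arr C. Dom C f \<in> Obj C \<and> Cod C f \<in> Obj C) \<and>
     (\<forall>a\<in>Obj C. Idm C a \<in> hom C a a) \<and>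
     (\<forall>f\<in>Arr C. \<forall>g\<in>Arr C. Cod C f = Dom C g \<longrightarrow>
         Cmp C g f \<in> hom C (Dom C f) (Cod C g)) \<and>
     (\<forall>f\<in>Arr C. \<forall>g\<in>Arr C. \<forall>h\<in>Arr C. Cod C f = Dom C g \<longrightarrow> Cod C g = Dom C h \<longrightarrow>
         Cmp C h (Cmp C g f) = Cmp C (Cmp C h g) f) \<and>
     (\<forall>f\<in>Arr C. Cmp C f (Idm C (Dom C f)) = f \<and> Cmp C (Idm C (Cod C f)) f = f)"

definition iso :: "('o,'m) cat \<Rightarrow> 'm \<Rightarrow> bool" where
  "iso C f \<longleftrightarrow> f \<in> Arr C \<and> (\<exists>g\<in>hom C (Cod C f) (Dom C f).
      Cmp C g f = Idm C (Dom C f) \<and> Cmp C f g = Idm C (Cod C f))"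

definition terminal :: "('o,'m) cat \<Rightarrow> 'o \<Rightarrow> bool" where
  "terminal C t \<longleftrightarrow> t \<in> Obj C \<and> (\<forall>a\<in>Obj C. \<exists>!f. f \<in> hom C a t)"

definition zero_object :: "('o,'m) cat \<Rightarrow> 'o \<Rightarrow> bool" where
  "zero_object C z \<longleftrightarrow> z \<in> Obj C \<and>
     (\<forall>a\<in>Obj C. (\<exists>!f. f \<in> hom C a z) \<and> (\<exists>!f. f \<in> hom C z a))"

definition pointed :: "('o,'m) cat \<Rightarrow> bool" where
  "pointed C \<longleftrightarrow> (\<exists>z. zero_object C z)"

definition is_zero :: "('o,'m) cat \<Rightarrow> 'm \<Rightarrow> bool" where
  "is_zero C f \<longleftrightarrow> f \<in> Arr C \<and> (\<exists>z u v. zero_object C z \<and> u \<in> hom C (Dom C f) z \<and>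
      v \<in> hom C z (Cod C f) \<and> f = Cmp C v u)"

definition is_pullback :: "('o,'m) cat \<Rightarrow> 'm \<Rightarrow> 'm \<Rightarrow> 'm \<Rightarrow> 'm \<Rightarrow> bool" where
  "is_pullback C f g p1 p2 \<longleftrightarrow>
     f \<in> Arr C \<and> g \<in> Arr C \<and> p1 \<in> Arr C \<and> p2 \<in> Arr C \<and> Cod C f = Cod C g \<and>
     Cod C p1 = Dom C f \<and> Cod C p2 = Dom C g \<and> Dom C p1 = Dom C p2 \<and>
     Cmp C f p1 = Cmp C g p2 \<and>
     (\<forall>q1\<in>Arr C. \<forall>q2\<in>Arr C. Dom C q1 = Dom C q2 \<longrightarrow> Cod C q1 = Dom C f \<longrightarrow>
        Cod C q2 = Dom C g \<longrightarrow> Cmp C f q1 = Cmp C g q2 \<longrightarrow>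
        (\<exists>!u. u \<in> hom C (Dom C q1) (Dom C p1) \<and> Cmp C p1 u = q1 \<and> Cmp C p2 u = q2))"

definition finitely_complete :: "('o,'m) cat \<Rightarrow> bool" where
  "finitely_complete C \<longleftrightarrow> (\<exists>t. terminal C t) \<and>
     (\<forall>f\<in>Arr C. \<forall>g\<in>Arr C. Cod C f = Cod C g \<longrightarrow> (\<exists>p1 p2. is_pullback C f g p1 p2))"

definition is_kernel :: "('o,'m) cat \<Rightarrow> 'm \<Rightarrow> 'm \<Rightarrow> bool" where
  "is_kernel C f k \<longleftrightarrow> f \<in> Arr C \<and> k \<in> Arr C \<and> Cod C k = Dom C f \<and> is_zero C (Cmp C f k) \<and>
     (\<forall>q\<in>Arr C. Cod C q = Dom C f \<longrightarrow> is_zero C (Cmp C f q) \<longrightarrow>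
        (\<exists>!u. u \<in> hom C (Dom C q) (Dom C k) \<and> Cmp C k u = q))"

definition is_cokernel :: "('o,'m) cat \<Rightarrow> 'm \<Rightarrow> 'm \<Rightarrow> bool" where
  "is_cokernel C f q \<longleftrightarrow> f \<in> Arr C \<and> q \<in> Arr C \<and> Dom C q = Cod C f \<and> is_zero C (Cmp C q f) \<and>
     (\<forall>g\<in>Arr C. Dom C g = Cod C f \<longrightarrow> is_zero C (Cmp C g f) \<longrightarrow>
        (\<exists>!u. u \<in> hom C (Cod C q) (Cod C g) \<and> Cmp C u q = g))"

definition normal_epi :: "('o,'m) cat \<Rightarrow> 'm \<Rightarrow> bool" where
  "normal_epi C q \<longleftrightarrow> (\<exists>f. is_cokernel C f q)"

definition is_coequalizer :: "('o,'m) cat \<Rightarrow> 'm \<Rightarrow> 'm \<Rightarrow> 'm \<Rightarrow> bool" where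
  "is_coequalizer C f g q \<longleftrightarrow> f \<in> Arr C \<and> g \<in> Arr C \<and> q \<in> Arr C \<and>
     Dom C f = Dom C g \<and> Cod C f = Cod C g \<and> Dom C q = Cod C f \<and> Cmp C q f = Cmp C q g \<and>
     (\<forall>h\<in>Arr C. Dom C h = Cod C f \<longrightarrow> Cmp C h f = Cmp C h g \<longrightarrow>
        (\<exists>!u. u \<in> hom C (Cod C q) (Cod C h) \<and> Cmp C u q = h))"

definition regular_epi :: "('o,'m) cat \<Rightarrow> 'm \<Rightarrow> bool" where
  "regular_epi C q \<longleftrightarrow> (\<exists>f g. is_coequalizer C f g q)"

definition is_kernel_pair :: "('o,'m) cat \<Rightarrow> 'm \<Rightarrow> 'm \<Rightarrow> 'm \<Rightarrow> bool" where
  "is_kernel_pair C f r1 r2 \<longleftrightarrow> is_pullback C f f r1 r2"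

definition regular_cat :: "('o,'m) cat \<Rightarrow> bool" where
  "regular_cat C \<longleftrightarrow> finitely_complete C \<and>
     (\<forall>f r1 r2. is_kernel_pair C f r1 r2 \<longrightarrow> (\<exists>q. is_coequalizer C r1 r2 q)) \<and>
     (\<forall>q g p1 p2. is_pullback C q g p1 p2 \<longrightarrow> regular_epi C q \<longrightarrow> regular_epi C p2)"

definition equiv_rel :: "('o,'m) cat \<Rightarrow> 'm \<Rightarrow> 'm \<Rightarrow> bool" where
  "equiv_rel C r1 r2 \<longleftrightarrow> r1 \<in> Arr C \<and> r2 \<in> Arr C \<and> Dom C r1 = Dom C r2 \<and> Cod C r1 = Cod C r2 \<and>
     (\<forall>a\<in>Arr C. \<forall>b\<in>Arr C. Dom C a = Dom C b \<longrightarrow> Cod C a = Dom C r1 \<longrightarrow> Cod C b = Dom C r1 \<longrightarrow>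
        Cmp C r1 a = Cmp C r1 b \<longrightarrow> Cmp C r2 a = Cmp C r2 b \<longrightarrow> a = b) \<and>
     (\<exists>d\<in>hom C (Cod C r1) (Dom C r1).
        Cmp C r1 d = Idm C (Cod C r1) \<and> Cmp C r2 d = Idm C (Cod C r1)) \<and>
     (\<exists>s\<in>hom C (Dom C r1) (Dom C r1). Cmp C r1 s = r2 \<and> Cmp C r2 s = r1) \<and>
     (\<forall>p1 p2. is_pullback C r2 r1 p1 p2 \<longrightarrow>
        (\<exists>t\<in>hom C (Dom C p1) (Dom C r1). Cmp C r1 t = Cmp C r1 p1 \<and> Cmp C r2 t = Cmp C r2 p2))"

definition barr_exact :: "('o,'m) cat \<Rightarrow> bool" where
  "barr_exact C \<longleftrightarrow> regular_cat C \<and>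
     (\<forall>r1 r2. equiv_rel C r1 r2 \<longrightarrow> (\<exists>f. is_kernel_pair C f r1 r2))"

text \<open>Bourn protomodularity: for every f : X -> Y the change-of-base functor
  f^* : Pt(Y) -> Pt(X) reflects isomorphisms.  A morphism phi of points
  (p,s) -> (p',s') over Y = Cod f is pulled back to the induced map u between the
  pullbacks of p and p' along f.\<close>
definition protomodular :: "('o,'m) cat \<Rightarrow> bool" where
  "protomodular C \<longleftrightarrow>
     (\<forall>f p s p' s' phi a b c d u.
        f \<in> Arr C \<longrightarrow> p \<in> Arr C \<longrightarrow> s \<in> Arr C \<longrightarrow> p' \<in> Arr C \<longrightarrow> s' \<in> Arr C \<longrightarrow>
        Cod C p = Cod C f \<longrightarrow> s \<in> hom C (Cod C f) (Dom C p) \<longrightarrow> Cmp C p s = Idm C (Cod C f) \<longrightarrow>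
        Cod C p' = Cod C f \<longrightarrow> s' \<in> hom C (Cod C f) (Dom C p') \<longrightarrow> Cmp C p' s' = Idm C (Cod C f) \<longrightarrow>
        phi \<in> hom C (Dom C p) (Dom C p') \<longrightarrow> Cmp C p' phi = p \<longrightarrow> Cmp C phi s = s' \<longrightarrow>
        is_pullback C f p a b \<longrightarrow> is_pullback C f p' c d \<longrightarrow>
        u \<in> hom C (Dom C a) (Dom C c) \<longrightarrow> Cmp C c u = a \<longrightarrow> Cmp C d u = Cmp C phi b \<longrightarrow>
        iso C u \<longrightarrow> iso C phi)"

definition is_coproduct :: "('o,'m) cat \<Rightarrow> 'm \<Rightarrow> 'm \<Rightarrow> bool" where
  "is_coproduct C i1 i2 \<longleftrightarrow> i1 \<in> Arr C \<and> i2 \<in> Arr C \<and> Cod C i1 = Cod C i2 \<and>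
     (\<forall>g1\<in>Arr C. \<forall>g2\<in>Arr C. Dom C g1 = Dom C i1 \<longrightarrow> Dom C g2 = Dom C i2 \<longrightarrow> Cod C g1 = Cod C g2 \<longrightarrow>
        (\<exists>!u. u \<in> hom C (Cod C i1) (Cod C g1) \<and> Cmp C u i1 = g1 \<and> Cmp C u i2 = g2))"

definition is_coproduct3 :: "('o,'m) cat \<Rightarrow> 'm \<Rightarrow> 'm \<Rightarrow> 'm \<Rightarrow> bool" where
  "is_coproduct3 C j1 j2 j3 \<longleftrightarrow> j1 \<in> Arr C \<and> j2 \<in> Arr C \<and> j3 \<in> Arr C \<and>
     Cod C j1 = Cod C j2 \<and> Cod C j2 = Cod C j3 \<and>
     (\<forall>g1\<in>Arr C. \<forall>g2\<in>Arr C. \<forall>g3\<in>Arr C. Dom C g1 = Dom C j1 \<longrightarrow> Dom C g2 = Dom C j2 \<longrightarrow>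
        Dom C g3 = Dom C j3 \<longrightarrow> Cod C g1 = Cod C g2 \<longrightarrow> Cod C g2 = Cod C g3 \<longrightarrow>
        (\<exists>!u. u \<in> hom C (Cod C j1) (Cod C g1) \<and>
              Cmp C u j1 = g1 \<and> Cmp C u j2 = g2 \<and> Cmp C u j3 = g3))"

definition has_binary_coproducts :: "('o,'m) cat \<Rightarrow> bool" where
  "has_binary_coproducts C \<longleftrightarrow>
     (\<forall>a\<in>Obj C. \<forall>b\<in>Obj C. \<exists>i1 i2. Dom C i1 = a \<and> Dom C i2 = b \<and> is_coproduct C i1 i2)"

definition semi_abelian :: "('o,'m) cat \<Rightarrow> bool" where
  "semi_abelian C \<longleftrightarrow> category C \<and> pointed C \<and> barr_exact C \<and> protomodular C \<and>
     has_binary_coproducts C"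

text \<open>X \<otimes>^W Y: given a ternary coproduct W+X+Y with injections j1, j2, j3,
  k is a kernel of <[i1,i2,0],[i1,0,i2]> : W+X+Y -> (W+X) x_W (W+Y), where the
  pullback is of [1,0] : W+X -> W and [1,0] : W+Y -> W (for some choice of
  coproducts W+X, W+Y and of the pullback).\<close>
definition is_tensor :: "('o,'m) cat \<Rightarrow> 'o \<Rightarrow> 'o \<Rightarrow> 'o \<Rightarrow> 'm \<Rightarrow> 'm \<Rightarrow> 'm \<Rightarrow> 'm \<Rightarrow> bool" where
  "is_tensor C W X Y j1 j2 j3 k \<longleftrightarrow>
     is_coproduct3 C j1 j2 j3 \<and> Dom C j1 = W \<and> Dom C j2 = X \<and> Dom C j3 = Y \<and>
     (\<exists>a1 a2 b1 b2 e1 e2 p1 p2 m.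
        is_coproduct C a1 a2 \<and> Dom C a1 = W \<and> Dom C a2 = X \<and>
        is_coproduct C b1 b2 \<and> Dom C b1 = W \<and> Dom C b2 = Y \<and>
        e1 \<in> hom C (Cod C a1) W \<and> Cmp C e1 a1 = Idm C W \<and> is_zero C (Cmp C e1 a2) \<and>
        e2 \<in> hom C (Cod C b1) W \<and> Cmp C e2 b1 = Idm C W \<and> is_zero C (Cmp C e2 b2) \<and>
        is_pullback C e1 e2 p1 p2 \<and>
        m \<in> hom C (Cod C j1) (Dom C p1) \<and>
        Cmp C (Cmp C p1 m) j1 = a1 \<and> Cmp C (Cmp C p1 m) j2 = a2 \<and>
        is_zero C (Cmp C (Cmp C p1 m) j3) \<and>
        Cmp C (Cmp C p2 m) j1 = b1 \<and> is_zero C (Cmp C (Cmp C p2 m) j2) \<and>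
        Cmp C (Cmp C p2 m) j3 = b2 \<and>
        is_kernel C m k)"

end

theory Submission
  imports Defs
begin

locale sa =
  fixes C :: "('o,'m) cat"
  assumes sa: "semi_abelian C"
begin

abbreviation cp (infixr "\<cdot>" 55) where "g \<cdot> f \<equiv> Cmp C g f"

lemma cat: "category C" using sa by (simp add: semi_abelian_def)

lemma hom_iff: "f \<in> hom C a b \<longleftrightarrow> f \<in> Arr C \<and> Dom C f = a \<and> Cod C f = b"
  by (simp add: hom_def)

lemma dom_obj[simp]: "f \<in> Arr C \<Longrightarrow> Dom C f \<in> Obj C"
  using cat by (simp add: category_def)
lemma cod_obj[simp]: "f \<in> Arr C \<Longrightarrow> Cod C f \<in> Obj C"
  using cat by (simp add: category_def)

lemma comp_hom0: "f \<in> Arr C \<Longrightarrow> g \<in> Arr C \<Longrightarrow> Cod C f = Dom C g \<Longrightarrow> g \<cdot> f \<in> hom C (Dom C f) (Cod C g)"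
  using cat unfolding category_def by blast

lemma comp_arr[simp]: "f \<in> Arr C \<Longrightarrow> g \<in> Arr C \<Longrightarrow> Cod C f = Dom C g \<Longrightarrow> g \<cdot> f \<in> Arr C"
  using comp_hom0 by (simp add: hom_def)
lemma comp_dom[simp]: "f \<in> Arr C \<Longrightarrow> g \<in> Arr C \<Longrightarrow> Cod C f = Dom C g \<Longrightarrow> Dom C (g \<cdot> f) = Dom C f"
  using comp_hom0 by (simp add: hom_def)
lemma comp_cod[simp]: "f \<in> Arr C \<Longrightarrow> g \<in> Arr C \<Longrightarrow> Cod C f = Dom C g \<Longrightarrow> Cod C (g \<cdot> f) = Cod C g"
  using comp_hom0 by (simp add: hom_def)

lemma assoc[simp]: "f \<in> Arr C \<Longrightarrow> g \<in> Arr C \<Longrightarrow> h \<in> Arr C \<Longrightarrow> Cod C f = Dom C g \<Longrightarrow> Cod C g = Dom C h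
  \<Longrightarrow> (h \<cdot> g) \<cdot> f = h \<cdot> (g \<cdot> f)"
  using cat unfolding category_def by metis

lemma id_hom: "a \<in> Obj C \<Longrightarrow> Idm C a \<in> hom C a a"
  using cat unfolding category_def by blast
lemma id_arr[simp]: "a \<in> Obj C \<Longrightarrow> Idm C a \<in> Arr C"
  using id_hom by (simp add: hom_def)
lemma id_dom[simp]: "a \<in> Obj C \<Longrightarrow> Dom C (Idm C a) = a"
  using id_hom by (simp add: hom_def)
lemma id_cod[simp]: "a \<in> Obj C \<Longrightarrow> Cod C (Idm C a) = a"
  using id_hom by (simp add: hom_def)
lemma idl[simp]: "f \<in> Arr C \<Longrightarrow> Cod C f = b \<Longrightarrow> Idm C b \<cdot> f = f"
  using cat unfolding category_def by blast
lemma idr[simp]: "f \<in> Arr C \<Longrightarrow> Dom C f = a \<Longrightarrow> f \<cdot> Idm C a = f"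
  using cat unfolding category_def by blast

lemma comp_hom: "f \<in> hom C a b \<Longrightarrow> g \<in> hom C b c \<Longrightarrow> g \<cdot> f \<in> hom C a c"
  by (simp add: hom_def)

lemma assoc_hom: "f \<in> hom C a b \<Longrightarrow> g \<in> hom C b c \<Longrightarrow> h \<in> hom C c d \<Longrightarrow> (h \<cdot> g) \<cdot> f = h \<cdot> (g \<cdot> f)"
  by (simp add: hom_def)

lemma idl_hom: "f \<in> hom C a b \<Longrightarrow> Idm C b \<cdot> f = f" by (simp add: hom_def)
lemma idr_hom: "f \<in> hom C a b \<Longrightarrow> f \<cdot> Idm C a = f" by (simp add: hom_def)

section \<open>Zero\<close>

definition zo where "zo = (SOME z. zero_object C z)"

lemma zo: "zero_object C zo"
proof -
  have "pointed C" using sa by (simp add: semi_abelian_def)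
  then show ?thesis unfolding pointed_def zo_def by (metis someI_ex)
qed

lemma zo_obj[simp]: "zo \<in> Obj C" using zo by (simp add: zero_object_def)

definition zr where "zr a b = Cmp C (THE v. v \<in> hom C zo b) (THE u. u \<in> hom C a zo)"

lemma to_zo: "a \<in> Obj C \<Longrightarrow> \<exists>!u. u \<in> hom C a zo" using zo by (simp add: zero_object_def)
lemma from_zo: "a \<in> Obj C \<Longrightarrow> \<exists>!u. u \<in> hom C zo a" using zo by (simp add: zero_object_def)

lemma zr_hom: "a \<in> Obj C \<Longrightarrow> b \<in> Obj C \<Longrightarrow> zr a b \<in> hom C a b"
proof -
  assume a: "a \<in> Obj C" and b: "b \<in> Obj C"
  have 1: "(THE u. u \<in> hom C a zo) \<in> hom C a zo" using theI'[OF to_zo[OF a]] .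
  have 2: "(THE v. v \<in> hom C zo b) \<in> hom C zo b" using theI'[OF from_zo[OF b]] .
  show ?thesis using comp_hom[OF 1 2] by (simp add: zr_def)
qed

lemma zr_arr[simp]: "a \<in> Obj C \<Longrightarrow> b \<in> Obj C \<Longrightarrow> zr a b \<in> Arr C"
  using zr_hom by (simp add: hom_def)
lemma zr_dom[simp]: "a \<in> Obj C \<Longrightarrow> b \<in> Obj C \<Longrightarrow> Dom C (zr a b) = a"
  using zr_hom by (simp add: hom_def)
lemma zr_cod[simp]: "a \<in> Obj C \<Longrightarrow> b \<in> Obj C \<Longrightarrow> Cod C (zr a b) = b"
  using zr_hom by (simp add: hom_def)

lemma zr_is_zero: "a \<in> Obj C \<Longrightarrow> b \<in> Obj C \<Longrightarrow> is_zero C (zr a b)"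
proof -
  assume a: "a \<in> Obj C" and b: "b \<in> Obj C"
  have 1: "(THE u. u \<in> hom C a zo) \<in> hom C a zo" using theI'[OF to_zo[OF a]] .
  have 2: "(THE v. v \<in> hom C zo b) \<in> hom C zo b" using theI'[OF from_zo[OF b]] .
  show ?thesis unfolding is_zero_def using zr_hom[OF a b] 1 2 zo
    by (auto simp: hom_def zr_def)
qed

lemma is_zero_zr: assumes "is_zero C f" shows "f = zr (Dom C f) (Cod C f)"
proof -
  obtain z u v where z: "zero_object C z" and u: "u \<in> hom C (Dom C f) z"
    and v: "v \<in> hom C z (Cod C f)" and f: "f = v \<cdot> u"
    using assms unfolding is_zero_def by blast
  have zO: "z \<in> Obj C" using z by (simp add: zero_object_def)
  obtain w where w: "w \<in> hom C z zo" using to_zo[OF zO] by blast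
  obtain w' where w': "w' \<in> hom C zo z" using from_zo[OF zO] by blast
  have ww: "w' \<cdot> w = Idm C z"
  proof -
    have "\<exists>!g. g \<in> hom C z z" using z zO unfolding zero_object_def by blast
    moreover have "w' \<cdot> w \<in> hom C z z" using comp_hom[OF w w'] .
    moreover have "Idm C z \<in> hom C z z" using id_hom[OF zO] .
    ultimately show ?thesis by blast
  qed
  have fO: "Dom C f \<in> Obj C" "Cod C f \<in> Obj C" using u v dom_obj[of u] cod_obj[of v] by (auto simp: hom_def)
  have e1: "w \<cdot> u = (THE u. u \<in> hom C (Dom C f) zo)"
    using the1_equality[OF to_zo[OF fO(1)] comp_hom[OF u w]] by simp
  have e2: "v \<cdot> w' = (THE v. v \<in> hom C zo (Cod C f))"
    using the1_equality[OF from_zo[OF fO(2)] comp_hom[OF w' v]] by simp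
  have "f = v \<cdot> (w' \<cdot> w) \<cdot> u" using f ww u v zO by (simp add: hom_def)
  also have "\<dots> = (v \<cdot> w') \<cdot> (w \<cdot> u)" using u v w w' by (simp add: hom_def)
  finally show ?thesis using e1 e2 by (simp add: zr_def)
qed

lemma is_zero_iff: "is_zero C f \<longleftrightarrow> f \<in> Arr C \<and> f = zr (Dom C f) (Cod C f)"
proof
  assume z: "is_zero C f"
  have "f \<in> Arr C" using z unfolding is_zero_def by (rule conjunct1)
  then show "f \<in> Arr C \<and> f = zr (Dom C f) (Cod C f)" using is_zero_zr[OF z] by (rule conjI)
next
  assume h: "f \<in> Arr C \<and> f = zr (Dom C f) (Cod C f)"
  then have "is_zero C (zr (Dom C f) (Cod C f))" using zr_is_zero dom_obj cod_obj by blast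
  moreover have e: "f = zr (Dom C f) (Cod C f)" using h by blast
  moreover have "is_zero C f = is_zero C (zr (Dom C f) (Cod C f))" by (rule arg_cong[OF e])
  ultimately show "is_zero C f" by blast
qed

lemma zr_comp_r[simp]: "f \<in> Arr C \<Longrightarrow> Cod C f = a \<Longrightarrow> b \<in> Obj C \<Longrightarrow> zr a b \<cdot> f = zr (Dom C f) b"
proof -
  assume f: "f \<in> Arr C" and a: "Cod C f = a" and b: "b \<in> Obj C"
  have aO: "a \<in> Obj C" using f a by auto
  have 1: "(THE u. u \<in> hom C a zo) \<in> hom C a zo" using theI'[OF to_zo[OF aO]] .
  have 2: "(THE v. v \<in> hom C zo b) \<in> hom C zo b" using theI'[OF from_zo[OF b]] .
  have "is_zero C (zr a b \<cdot> f)" unfolding is_zero_def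
    apply (rule conjI) using f a aO b apply simp
    apply (rule exI[of _ zo], rule exI[of _ "(THE u. u \<in> hom C a zo) \<cdot> f"], rule exI[of _ "(THE v. v \<in> hom C zo b)"])
    using zo 1 2 f a by (auto simp: hom_def zr_def)
  then show ?thesis using is_zero_zr f a aO b by fastforce
qed

lemma zr_comp_l[simp]: "g \<in> Arr C \<Longrightarrow> Dom C g = b \<Longrightarrow> a \<in> Obj C \<Longrightarrow> g \<cdot> zr a b = zr a (Cod C g)"
proof -
  assume g: "g \<in> Arr C" and b: "Dom C g = b" and a: "a \<in> Obj C"
  have bO: "b \<in> Obj C" using g b by auto
  have 1: "(THE u. u \<in> hom C a zo) \<in> hom C a zo" using theI'[OF to_zo[OF a]] .
  have 2: "(THE v. v \<in> hom C zo b) \<in> hom C zo b" using theI'[OF from_zo[OF bO]] .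
  have "is_zero C (g \<cdot> zr a b)" unfolding is_zero_def
    apply (rule conjI) using g b a bO apply simp
    apply (rule exI[of _ zo], rule exI[of _ "(THE u. u \<in> hom C a zo)"], rule exI[of _ "g \<cdot> (THE v. v \<in> hom C zo b)"])
    using zo 1 2 g b a bO by (auto simp: hom_def zr_def)
  then show ?thesis using is_zero_zr g b a bO by fastforce
qed


section \<open>Mono, epi\<close>

definition monic where "monic f \<longleftrightarrow> f \<in> Arr C \<and> (\<forall>x y. x \<in> Arr C \<and> y \<in> Arr C \<and> Cod C x = Dom C f \<and> Cod C y = Dom C f
   \<and> Dom C x = Dom C y \<and> f \<cdot> x = f \<cdot> y \<longrightarrow> x = y)"
definition epic where "epic f \<longleftrightarrow> f \<in> Arr C \<and> (\<forall>x y. x \<in> Arr C \<and> y \<in> Arr C \<and> Dom C x = Cod C f \<and> Dom C y = Cod C f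
   \<and> Cod C x = Cod C y \<and> x \<cdot> f = y \<cdot> f \<longrightarrow> x = y)"

lemma monicD: assumes m: "monic f" and x: "x \<in> hom C a (Dom C f)" and y: "y \<in> hom C a (Dom C f)" and e: "f \<cdot> x = f \<cdot> y" shows "x = y"
proof -
  have "\<forall>x y. x \<in> Arr C \<and> y \<in> Arr C \<and> Cod C x = Dom C f \<and> Cod C y = Dom C f
   \<and> Dom C x = Dom C y \<and> f \<cdot> x = f \<cdot> y \<longrightarrow> x = y" using m unfolding monic_def by (rule conjunct2)
  moreover have "x \<in> Arr C \<and> y \<in> Arr C \<and> Cod C x = Dom C f \<and> Cod C y = Dom C f
   \<and> Dom C x = Dom C y \<and> f \<cdot> x = f \<cdot> y" using x y e by (simp add: hom_def)
  ultimately show ?thesis by blast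
qed
lemma epicD: assumes m: "epic f" and x: "x \<in> hom C (Cod C f) b" and y: "y \<in> hom C (Cod C f) b" and e: "x \<cdot> f = y \<cdot> f" shows "x = y"
proof -
  have "\<forall>x y. x \<in> Arr C \<and> y \<in> Arr C \<and> Dom C x = Cod C f \<and> Dom C y = Cod C f
   \<and> Cod C x = Cod C y \<and> x \<cdot> f = y \<cdot> f \<longrightarrow> x = y" using m unfolding epic_def by (rule conjunct2)
  moreover have "x \<in> Arr C \<and> y \<in> Arr C \<and> Dom C x = Cod C f \<and> Dom C y = Cod C f
   \<and> Cod C x = Cod C y \<and> x \<cdot> f = y \<cdot> f" using x y e by (simp add: hom_def)
  ultimately show ?thesis by blast
qed
lemma monicI: assumes "f \<in> Arr C" and h: "\<And>a x y. x \<in> hom C a (Dom C f) \<Longrightarrow> y \<in> hom C a (Dom C f) \<Longrightarrow> f \<cdot> x = f \<cdot> y \<Longrightarrow> x = y" shows "monic f"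
  unfolding monic_def
proof (intro conjI allI impI)
  show "f \<in> Arr C" by fact
  fix x y assume "x \<in> Arr C \<and> y \<in> Arr C \<and> Cod C x = Dom C f \<and> Cod C y = Dom C f \<and> Dom C x = Dom C y \<and> f \<cdot> x = f \<cdot> y"
  then show "x = y" using h[of x "Dom C x" y] by (simp add: hom_def)
qed
lemma epicI: assumes "f \<in> Arr C" and h: "\<And>b x y. x \<in> hom C (Cod C f) b \<Longrightarrow> y \<in> hom C (Cod C f) b \<Longrightarrow> x \<cdot> f = y \<cdot> f \<Longrightarrow> x = y" shows "epic f"
  unfolding epic_def
proof (intro conjI allI impI)
  show "f \<in> Arr C" by fact
  fix x y assume "x \<in> Arr C \<and> y \<in> Arr C \<and> Dom C x = Cod C f \<and> Dom C y = Cod C f \<and> Cod C x = Cod C y \<and> x \<cdot> f = y \<cdot> f"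
  then show "x = y" using h[of x "Cod C x" y] by (simp add: hom_def)
qed

lemma monic_arr: "monic f \<Longrightarrow> f \<in> Arr C" unfolding monic_def by (rule conjunct1)
lemma epic_arr: "epic f \<Longrightarrow> f \<in> Arr C" unfolding epic_def by (rule conjunct1)

lemma monic_comp: assumes f: "monic f" and g: "monic g" and c: "Cod C f = Dom C g" shows "monic (g \<cdot> f)"
proof -
  have fA: "f \<in> Arr C" and gA: "g \<in> Arr C" using monic_arr f g by auto
  have fh: "f \<in> hom C (Dom C f) (Dom C g)" and gh: "g \<in> hom C (Dom C g) (Cod C g)" using fA gA c by (auto simp: hom_def)
  show ?thesis
  proof (rule monicI)
    show "g \<cdot> f \<in> Arr C" using fA gA c by simp
    fix a x y assume x0: "x \<in> hom C a (Dom C (g \<cdot> f))" and y0: "y \<in> hom C a (Dom C (g \<cdot> f))" and e: "(g \<cdot> f) \<cdot> x = (g \<cdot> f) \<cdot> y"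
    have x: "x \<in> hom C a (Dom C f)" and y: "y \<in> hom C a (Dom C f)" using x0 y0 fA gA c by auto
    have "g \<cdot> (f \<cdot> x) = g \<cdot> (f \<cdot> y)" using e assoc_hom[OF x fh gh] assoc_hom[OF y fh gh] by simp
    then have "f \<cdot> x = f \<cdot> y" using monicD[OF g comp_hom[OF x fh] comp_hom[OF y fh]] by simp
    then show "x = y" using monicD[OF f x y] by simp
  qed
qed

lemma epic_comp: assumes f: "epic f" and g: "epic g" and c: "Cod C f = Dom C g" shows "epic (g \<cdot> f)"
proof -
  have fA: "f \<in> Arr C" and gA: "g \<in> Arr C" using epic_arr f g by auto
  have fh: "f \<in> hom C (Dom C f) (Dom C g)" and gh: "g \<in> hom C (Dom C g) (Cod C g)" using fA gA c by (auto simp: hom_def)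
  show ?thesis
  proof (rule epicI)
    show "g \<cdot> f \<in> Arr C" using fA gA c by simp
    fix b x y assume x0: "x \<in> hom C (Cod C (g \<cdot> f)) b" and y0: "y \<in> hom C (Cod C (g \<cdot> f)) b" and e: "x \<cdot> (g \<cdot> f) = y \<cdot> (g \<cdot> f)"
    have x: "x \<in> hom C (Cod C g) b" and y: "y \<in> hom C (Cod C g) b" using x0 y0 fA gA c by auto
    have "(x \<cdot> g) \<cdot> f = (y \<cdot> g) \<cdot> f" using e assoc_hom[OF fh gh x] assoc_hom[OF fh gh y] by simp
    moreover have "x \<cdot> g \<in> hom C (Cod C f) b" "y \<cdot> g \<in> hom C (Cod C f) b" using comp_hom[OF gh x] comp_hom[OF gh y] unfolding c .
    ultimately have "x \<cdot> g = y \<cdot> g" using epicD[OF f] by blast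
    then show "x = y" using epicD[OF g x y] by simp
  qed
qed

lemma iso_monic_split: assumes m: "monic m" and d: "d \<in> hom C (Cod C m) (Dom C m)" and md: "m \<cdot> d = Idm C (Cod C m)"
  shows "iso C m" "d \<cdot> m = Idm C (Dom C m)"
proof -
  have mA: "m \<in> Arr C" using m by (rule monic_arr)
  have mh: "m \<in> hom C (Dom C m) (Cod C m)" using mA by (simp add: hom_def)
  have "m \<cdot> (d \<cdot> m) = (m \<cdot> d) \<cdot> m" using assoc_hom[OF mh d mh] by simp
  also have "\<dots> = m \<cdot> Idm C (Dom C m)" using md mh idl_hom[OF mh] idr_hom[OF mh] by simp
  finally have "m \<cdot> (d \<cdot> m) = m \<cdot> Idm C (Dom C m)" .
  then show e: "d \<cdot> m = Idm C (Dom C m)"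
    using monicD[OF m, of "d \<cdot> m" "Dom C m" "Idm C (Dom C m)"] d mA by (simp add: hom_def)
  show "iso C m" unfolding iso_def using mA d md e by blast
qed

lemma iso_inv: assumes "iso C m" obtains d where "d \<in> hom C (Cod C m) (Dom C m)" "d \<cdot> m = Idm C (Dom C m)" "m \<cdot> d = Idm C (Cod C m)"
  using assms unfolding iso_def by blast

lemma iso_monic: assumes "iso C m" shows "monic m"
proof -
  obtain d where d: "d \<in> hom C (Cod C m) (Dom C m)" "d \<cdot> m = Idm C (Dom C m)" "m \<cdot> d = Idm C (Cod C m)"
    using iso_inv[OF assms] by blast
  have mA: "m \<in> Arr C" using assms unfolding iso_def by (rule conjunct1)
  show ?thesis
  proof (rule monicI[OF mA])
    fix a x y assume x: "x \<in> hom C a (Dom C m)" and y: "y \<in> hom C a (Dom C m)" and e: "m \<cdot> x = m \<cdot> y"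
    have "d \<cdot> (m \<cdot> x) = d \<cdot> (m \<cdot> y)" using e by simp
    have mh: "m \<in> hom C (Dom C m) (Cod C m)" using mA by (simp add: hom_def)
    have "(d \<cdot> m) \<cdot> x = (d \<cdot> m) \<cdot> y" using assoc_hom[OF x mh d(1)] assoc_hom[OF y mh d(1)] \<open>d \<cdot> (m \<cdot> x) = d \<cdot> (m \<cdot> y)\<close> by simp
    then show "x = y" using d x y mA by (simp add: hom_def)
  qed
qed

section \<open>Pullbacks\<close>

lemma ex1_eq: "\<exists>!u. P u \<Longrightarrow> P x \<Longrightarrow> P y \<Longrightarrow> x = y" by blast

lemma pb_arrs0: assumes "is_pullback C f g p1 p2"
  shows "f \<in> Arr C \<and> g \<in> Arr C \<and> p1 \<in> Arr C \<and> p2 \<in> Arr C \<and> Cod C f = Cod C g \<and> Cod C p1 = Dom C f \<and>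
    Cod C p2 = Dom C g \<and> Dom C p1 = Dom C p2 \<and> f \<cdot> p1 = g \<cdot> p2"
  using assms apply (unfold is_pullback_def) apply (elim conjE) apply (intro conjI) apply assumption+ done

lemma pb_arrs: assumes "is_pullback C f g p1 p2"
  shows "f \<in> Arr C" "g \<in> Arr C" "p1 \<in> Arr C" "p2 \<in> Arr C" "Cod C f = Cod C g" "Cod C p1 = Dom C f"
    "Cod C p2 = Dom C g" "Dom C p1 = Dom C p2" "f \<cdot> p1 = g \<cdot> p2"
  using pb_arrs0[OF assms] by simp_all

lemma pb_univ: assumes pb: "is_pullback C f g p1 p2" and "q1 \<in> Arr C" "q2 \<in> Arr C" "Dom C q1 = Dom C q2"
   "Cod C q1 = Dom C f" "Cod C q2 = Dom C g" "f \<cdot> q1 = g \<cdot> q2"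
  shows "\<exists>!u. u \<in> hom C (Dom C q1) (Dom C p1) \<and> p1 \<cdot> u = q1 \<and> p2 \<cdot> u = q2"
proof -
  have "\<forall>q1\<in>Arr C. \<forall>q2\<in>Arr C. Dom C q1 = Dom C q2 \<longrightarrow> Cod C q1 = Dom C f \<longrightarrow>
        Cod C q2 = Dom C g \<longrightarrow> f \<cdot> q1 = g \<cdot> q2 \<longrightarrow>
        (\<exists>!u. u \<in> hom C (Dom C q1) (Dom C p1) \<and> p1 \<cdot> u = q1 \<and> p2 \<cdot> u = q2)"
    using pb apply (unfold is_pullback_def) apply (elim conjE) apply assumption done
  from this[rule_format, OF assms(2) assms(3) assms(4) assms(5) assms(6) assms(7)] show ?thesis .
qed

lemma pb_ex: assumes pb: "is_pullback C f g p1 p2" and q1: "q1 \<in> hom C Z (Dom C f)" and q2: "q2 \<in> hom C Z (Dom C g)"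
  and e: "f \<cdot> q1 = g \<cdot> q2"
  obtains u where "u \<in> hom C Z (Dom C p1)" "p1 \<cdot> u = q1" "p2 \<cdot> u = q2"
proof -
  have "\<exists>!u. u \<in> hom C (Dom C q1) (Dom C p1) \<and> p1 \<cdot> u = q1 \<and> p2 \<cdot> u = q2"
    by (rule pb_univ[OF pb]) (use q1 q2 e in \<open>simp_all add: hom_def\<close>)
  then obtain u where u: "u \<in> hom C (Dom C q1) (Dom C p1)" "p1 \<cdot> u = q1" "p2 \<cdot> u = q2" by blast
  have "Dom C q1 = Z" using q1 by (simp add: hom_def)
  then show ?thesis using that u by simp
qed

lemma pb_uniq: assumes pb: "is_pullback C f g p1 p2" and x: "x \<in> hom C Z (Dom C p1)" and y: "y \<in> hom C Z (Dom C p1)"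
  and e1: "p1 \<cdot> x = p1 \<cdot> y" and e2: "p2 \<cdot> x = p2 \<cdot> y"
  shows "x = y"
proof -
  note a = pb_arrs[OF pb]
  have ph: "p1 \<in> hom C (Dom C p1) (Dom C f)" "p2 \<in> hom C (Dom C p1) (Dom C g)"
     "f \<in> hom C (Dom C f) (Cod C f)" "g \<in> hom C (Dom C g) (Cod C f)" using a by (simp_all add: hom_def)
  have ee: "f \<cdot> (p1 \<cdot> x) = g \<cdot> (p2 \<cdot> x)" using assoc_hom[OF x ph(1) ph(3)] assoc_hom[OF x ph(2) ph(4)] a(9) by simp
  have h1: "p1 \<cdot> x \<in> hom C Z (Dom C f)" "p2 \<cdot> x \<in> hom C Z (Dom C g)" using comp_hom[OF x ph(1)] comp_hom[OF x ph(2)] by simp_all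
  have "\<exists>!u. u \<in> hom C (Dom C (p1 \<cdot> x)) (Dom C p1) \<and> p1 \<cdot> u = p1 \<cdot> x \<and> p2 \<cdot> u = p2 \<cdot> x"
    by (rule pb_univ[OF pb]) (use h1 ee in \<open>simp_all add: hom_def\<close>)
  moreover have "Dom C (p1 \<cdot> x) = Z" using h1 by (simp add: hom_def)
  ultimately have ex: "\<exists>!u. u \<in> hom C Z (Dom C p1) \<and> p1 \<cdot> u = p1 \<cdot> x \<and> p2 \<cdot> u = p2 \<cdot> x" by simp
  have Px: "x \<in> hom C Z (Dom C p1) \<and> p1 \<cdot> x = p1 \<cdot> x \<and> p2 \<cdot> x = p2 \<cdot> x" using x by simp
  have Py: "y \<in> hom C Z (Dom C p1) \<and> p1 \<cdot> y = p1 \<cdot> x \<and> p2 \<cdot> y = p2 \<cdot> x" using y e1 e2 by simp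
  show ?thesis by (rule ex1_eq[OF ex Px Py])
qed

lemma pb_exists: assumes "f \<in> Arr C" "g \<in> Arr C" "Cod C f = Cod C g"
  obtains p1 p2 where "is_pullback C f g p1 p2"
proof -
  have "finitely_complete C" using sa by (simp add: semi_abelian_def barr_exact_def regular_cat_def)
  then have "\<forall>f\<in>Arr C. \<forall>g\<in>Arr C. Cod C f = Cod C g \<longrightarrow> (\<exists>p1 p2. is_pullback C f g p1 p2)"
    unfolding finitely_complete_def by (rule conjunct2)
  then show ?thesis using assms that by blast
qed

lemma pb_monic: assumes pb: "is_pullback C f g p1 p2" and m: "monic g" shows "monic p1"
proof (rule monicI)
  note a = pb_arrs[OF pb]
  show "p1 \<in> Arr C" using a by simp
  fix Z x y assume x: "x \<in> hom C Z (Dom C p1)" and y: "y \<in> hom C Z (Dom C p1)" and e: "p1 \<cdot> x = p1 \<cdot> y"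
  have "g \<cdot> (p2 \<cdot> x) = g \<cdot> (p2 \<cdot> y)"
  proof -
    have "g \<cdot> (p2 \<cdot> x) = f \<cdot> (p1 \<cdot> x)" using a x assoc[of x p1 f] assoc[of x p2 g] by (simp add: hom_def)
    also have "\<dots> = f \<cdot> (p1 \<cdot> y)" using e by simp
    also have "\<dots> = g \<cdot> (p2 \<cdot> y)" using a y assoc[of y p1 f] assoc[of y p2 g] by (simp add: hom_def)
    finally show ?thesis .
  qed
  then have "p2 \<cdot> x = p2 \<cdot> y" using monicD[OF m, of "p2 \<cdot> x" Z "p2 \<cdot> y"] a x y by (auto simp: hom_def)
  then show "x = y" using pb_uniq[OF pb x y e] by simp
qed

section \<open>Kernels\<close>

lemma zero_eq: assumes z: "is_zero C f" and d: "Dom C f = a" and c: "Cod C f = b" shows "f = zr a b"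
  using is_zero_zr[OF z] unfolding d c .

lemma ker_props0: assumes "is_kernel C f k"
  shows "f \<in> Arr C \<and> k \<in> Arr C \<and> Cod C k = Dom C f \<and> is_zero C (Cmp C f k)"
  using assms apply (unfold is_kernel_def) apply (elim conjE) apply (intro conjI) apply assumption+ done

lemma ker_univ: assumes "is_kernel C f k" "q \<in> Arr C" "Cod C q = Dom C f" "is_zero C (Cmp C f q)"
  shows "\<exists>!u. u \<in> hom C (Dom C q) (Dom C k) \<and> k \<cdot> u = q"
proof -
  have "\<forall>q\<in>Arr C. Cod C q = Dom C f \<longrightarrow> is_zero C (Cmp C f q) \<longrightarrow>
        (\<exists>!u. u \<in> hom C (Dom C q) (Dom C k) \<and> Cmp C k u = q)"
    using assms(1) apply (unfold is_kernel_def) apply (elim conjE) apply assumption done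
  from this[rule_format, OF assms(2) assms(3) assms(4)] show ?thesis .
qed

lemma ker_props: assumes "is_kernel C f k"
  shows "f \<in> Arr C" "k \<in> Arr C" "Cod C k = Dom C f" "f \<cdot> k = zr (Dom C k) (Cod C f)"
proof -
  note h = ker_props0[OF assms]
  show "f \<in> Arr C" "k \<in> Arr C" "Cod C k = Dom C f" using h by blast+
  have "is_zero C (f \<cdot> k)" using h by blast
  from zero_eq[OF this] show "f \<cdot> k = zr (Dom C k) (Cod C f)" using h by simp
qed

lemma ker_ex: assumes k: "is_kernel C f k" and q: "q \<in> hom C Z (Dom C f)" and z: "f \<cdot> q = zr Z (Cod C f)"
  obtains u where "u \<in> hom C Z (Dom C k)" "k \<cdot> u = q"
proof -
  have fA: "f \<in> Arr C" using ker_props[OF k] by simp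
  have z0: "is_zero C (f \<cdot> q)" using z q fA zr_is_zero[of Z "Cod C f"] dom_obj[of q] by (simp add: hom_def)
  have "\<exists>!u. u \<in> hom C (Dom C q) (Dom C k) \<and> k \<cdot> u = q" by (rule ker_univ[OF k _ _ z0]) (use q in \<open>simp_all add: hom_def\<close>)
  then show ?thesis using that q by (auto simp: hom_def)
qed

lemma ker_monic: assumes k: "is_kernel C f k" shows "monic k"
proof (rule monicI)
  show "k \<in> Arr C" using ker_props[OF k] by simp
  fix Z x y assume x: "x \<in> hom C Z (Dom C k)" and y: "y \<in> hom C Z (Dom C k)" and e: "k \<cdot> x = k \<cdot> y"
  note kp = ker_props[OF k]
  have q: "k \<cdot> x \<in> Arr C" "Cod C (k \<cdot> x) = Dom C f" "Dom C (k \<cdot> x) = Z" using kp x by (auto simp: hom_def)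
  have "f \<cdot> (k \<cdot> x) = (f \<cdot> k) \<cdot> x" using kp x assoc[of x k f] by (simp add: hom_def)
  also have "\<dots> = zr Z (Cod C f)" using kp x by (simp add: hom_def)
  finally have "f \<cdot> (k \<cdot> x) = zr Z (Cod C f)" .
  then have z0: "is_zero C (f \<cdot> (k \<cdot> x))" using zr_is_zero kp q dom_obj[of "k \<cdot> x"] by simp
  have "\<exists>!u. u \<in> hom C (Dom C (k \<cdot> x)) (Dom C k) \<and> k \<cdot> u = k \<cdot> x" by (rule ker_univ[OF k _ _ z0]) (use q in simp_all)
  then have ex: "\<exists>!u. u \<in> hom C Z (Dom C k) \<and> k \<cdot> u = k \<cdot> x" using q by simp
  have Px: "x \<in> hom C Z (Dom C k) \<and> k \<cdot> x = k \<cdot> x" using x by simp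
  have Py: "y \<in> hom C Z (Dom C k) \<and> k \<cdot> y = k \<cdot> x" using y e by simp
  show "x = y" by (rule ex1_eq[OF ex Px Py])
qed

lemma to_zo_uniq: "x \<in> hom C a zo \<Longrightarrow> y \<in> hom C a zo \<Longrightarrow> x = y"
proof -
  assume x: "x \<in> hom C a zo" and y: "y \<in> hom C a zo"
  have "a \<in> Obj C" using x dom_obj[of x] by (simp add: hom_def)
  from ex1_eq[OF to_zo[OF this] x y] show "x = y" .
qed

lemma from_zo_uniq: "x \<in> hom C zo a \<Longrightarrow> y \<in> hom C zo a \<Longrightarrow> x = y"
proof -
  assume x: "x \<in> hom C zo a" and y: "y \<in> hom C zo a"
  have "a \<in> Obj C" using x cod_obj[of x] by (simp add: hom_def)
  from ex1_eq[OF from_zo[OF this] x y] show "x = y" .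
qed

lemma kerI: assumes "f \<in> Arr C" "k \<in> Arr C" "Cod C k = Dom C f" "f \<cdot> k = zr (Dom C k) (Cod C f)"
  and "\<And>Z q. q \<in> hom C Z (Dom C f) \<Longrightarrow> f \<cdot> q = zr Z (Cod C f) \<Longrightarrow> \<exists>u. u \<in> hom C Z (Dom C k) \<and> k \<cdot> u = q"
  and "monic k"
  shows "is_kernel C f k"
  unfolding is_kernel_def
proof (intro conjI ballI impI)
  show "f \<in> Arr C" "k \<in> Arr C" "Cod C k = Dom C f" by fact+
  show "is_zero C (f \<cdot> k)" using assms(1-4) zr_is_zero by simp
  fix q assume q: "q \<in> Arr C" "Cod C q = Dom C f" and z: "is_zero C (f \<cdot> q)"
  have qh: "q \<in> hom C (Dom C q) (Dom C f)" using q by (simp add: hom_def)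
  have "f \<cdot> q = zr (Dom C q) (Cod C f)" using zero_eq[OF z] q assms(1) by simp
  then obtain u where u: "u \<in> hom C (Dom C q) (Dom C k)" "k \<cdot> u = q" using assms(5)[OF qh] by blast
  show "\<exists>!u. u \<in> hom C (Dom C q) (Dom C k) \<and> k \<cdot> u = q"
  proof (rule ex1I[of _ u])
    show "u \<in> hom C (Dom C q) (Dom C k) \<and> k \<cdot> u = q" using u by simp
    fix v assume v: "v \<in> hom C (Dom C q) (Dom C k) \<and> k \<cdot> v = q"
    then show "v = u" using monicD[OF assms(6), of v "Dom C q" u] u by simp
  qed
qed

lemma kernel_exists: assumes f: "f \<in> Arr C" obtains k where "is_kernel C f k"
proof -
  have zA: "zr zo (Cod C f) \<in> Arr C" using f by simp
  obtain p1 p2 where pb: "is_pullback C f (zr zo (Cod C f)) p1 p2"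
    using pb_exists[OF f zA] f by auto
  note a = pb_arrs[OF pb]
  have p2h: "p2 \<in> hom C (Dom C p1) zo" using a f by (simp add: hom_def)
  have mon: "monic p1"
  proof (rule monicI)
    show "p1 \<in> Arr C" using a by simp
    fix Z x y assume x: "x \<in> hom C Z (Dom C p1)" and y: "y \<in> hom C Z (Dom C p1)" and e: "p1 \<cdot> x = p1 \<cdot> y"
    have "p2 \<cdot> x = p2 \<cdot> y" using to_zo_uniq comp_hom[OF x p2h] comp_hom[OF y p2h] by blast
    then show "x = y" using pb_uniq[OF pb x y e] by simp
  qed
  have "is_kernel C f p1"
  proof (rule kerI[OF f a(3) a(6) _ _ mon])
    show "f \<cdot> p1 = zr (Dom C p1) (Cod C f)" using a f p2h by (simp add: hom_def)
    fix Z q assume q: "q \<in> hom C Z (Dom C f)" and fq: "f \<cdot> q = zr Z (Cod C f)"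
    have ZO: "Z \<in> Obj C" using q dom_obj[of q] by (simp add: hom_def)
    have zq: "zr zo (Cod C f) \<cdot> zr Z zo = zr Z (Cod C f)" using ZO f by simp
    have zh: "zr Z zo \<in> hom C Z (Dom C (zr zo (Cod C f)))" using ZO zr_hom f by simp
    obtain u where u: "u \<in> hom C Z (Dom C p1)" "p1 \<cdot> u = q" "p2 \<cdot> u = zr Z zo"
      using pb_ex[OF pb q zh] fq zq by metis
    show "\<exists>u. u \<in> hom C Z (Dom C p1) \<and> p1 \<cdot> u = q" using u by blast
  qed
  then show ?thesis using that by blast
qed

end

context sa begin

lemma post: assumes "a \<cdot> b = c \<cdot> d" "b \<in> hom C X Y" "a \<in> hom C Y W" "d \<in> hom C X Y'" "c \<in> hom C Y' W" "z \<in> hom C Z X"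
  shows "a \<cdot> (b \<cdot> z) = c \<cdot> (d \<cdot> z)"
proof -
  have "a \<cdot> (b \<cdot> z) = (a \<cdot> b) \<cdot> z" using assoc_hom[OF assms(6) assms(2) assms(3)] by simp
  also have "\<dots> = (c \<cdot> d) \<cdot> z" using assms(1) by simp
  also have "\<dots> = c \<cdot> (d \<cdot> z)" using assoc_hom[OF assms(6) assms(4) assms(5)] by simp
  finally show ?thesis .
qed

lemma post1: assumes "a \<cdot> b = c" "b \<in> hom C X Y" "a \<in> hom C Y W" "z \<in> hom C Z X"
  shows "a \<cdot> (b \<cdot> z) = c \<cdot> z"
proof -
  have "a \<cdot> (b \<cdot> z) = (a \<cdot> b) \<cdot> z" using assoc_hom[OF assms(4) assms(2) assms(3)] by simp
  then show ?thesis using assms(1) by simp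
qed

section \<open>Coequalizers, regular and strong epis\<close>

lemma coeq_props0: assumes "is_coequalizer C f g q"
  shows "f \<in> Arr C \<and> g \<in> Arr C \<and> q \<in> Arr C \<and> Dom C f = Dom C g \<and> Cod C f = Cod C g \<and> Dom C q = Cod C f \<and> q \<cdot> f = q \<cdot> g"
  using assms apply (unfold is_coequalizer_def) apply (elim conjE) apply (intro conjI) apply assumption+ done

lemma coeq_univ: assumes "is_coequalizer C f g q" "h \<in> Arr C" "Dom C h = Cod C f" "h \<cdot> f = h \<cdot> g"
  shows "\<exists>!u. u \<in> hom C (Cod C q) (Cod C h) \<and> u \<cdot> q = h"
proof -
  have "\<forall>h\<in>Arr C. Dom C h = Cod C f \<longrightarrow> Cmp C h f = Cmp C h g \<longrightarrow>
        (\<exists>!u. u \<in> hom C (Cod C q) (Cod C h) \<and> Cmp C u q = h)"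
    using assms(1) apply (unfold is_coequalizer_def) apply (elim conjE) apply assumption done
  from this[rule_format, OF assms(2) assms(3) assms(4)] show ?thesis .
qed

lemma coeqI: assumes "f \<in> Arr C" "g \<in> Arr C" "q \<in> Arr C" "Dom C f = Dom C g" "Cod C f = Cod C g" "Dom C q = Cod C f" "q \<cdot> f = q \<cdot> g"
  and "\<And>h. h \<in> Arr C \<Longrightarrow> Dom C h = Cod C f \<Longrightarrow> h \<cdot> f = h \<cdot> g \<Longrightarrow> \<exists>!u. u \<in> hom C (Cod C q) (Cod C h) \<and> u \<cdot> q = h"
  shows "is_coequalizer C f g q"
  unfolding is_coequalizer_def using assms by blast

lemma regular_coeq: "regular_epi C q \<Longrightarrow> \<exists>f g. is_coequalizer C f g q" by (simp add: regular_epi_def)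

lemma coeq_epic: assumes c: "is_coequalizer C f g q" shows "epic q"
proof -
  note p = coeq_props0[OF c]
  show ?thesis
  proof (rule epicI)
    show "q \<in> Arr C" using p by blast
    fix b x y assume x: "x \<in> hom C (Cod C q) b" and y: "y \<in> hom C (Cod C q) b" and e: "x \<cdot> q = y \<cdot> q"
    have qh: "q \<in> hom C (Cod C f) (Cod C q)" using p by (simp add: hom_def)
    have fh: "f \<in> hom C (Dom C f) (Cod C f)" and gh: "g \<in> hom C (Dom C f) (Cod C f)" using p by (simp_all add: hom_def)
    have hA: "x \<cdot> q \<in> hom C (Cod C f) b" using comp_hom[OF qh x] .
    have "(x \<cdot> q) \<cdot> f = (x \<cdot> q) \<cdot> g"
    proof -
      have "(x \<cdot> q) \<cdot> f = x \<cdot> (q \<cdot> f)" using assoc_hom[OF fh qh x] .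
      also have "\<dots> = x \<cdot> (q \<cdot> g)" using p by simp
      also have "\<dots> = (x \<cdot> q) \<cdot> g" using assoc_hom[OF gh qh x] by simp
      finally show ?thesis .
    qed
    then have ex: "\<exists>!u. u \<in> hom C (Cod C q) (Cod C (x \<cdot> q)) \<and> u \<cdot> q = x \<cdot> q"
      using coeq_univ[OF c, of "x \<cdot> q"] hA by (simp add: hom_def)
    have cb: "Cod C (x \<cdot> q) = b" using hA by (simp add: hom_def)
    have Px: "x \<in> hom C (Cod C q) (Cod C (x \<cdot> q)) \<and> x \<cdot> q = x \<cdot> q" using x cb by simp
    have Py: "y \<in> hom C (Cod C q) (Cod C (x \<cdot> q)) \<and> y \<cdot> q = x \<cdot> q" using y cb e by simp
    show "x = y" by (rule ex1_eq[OF ex Px Py])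
  qed
qed

lemma regular_epic: "regular_epi C q \<Longrightarrow> epic q"
  using coeq_epic regular_coeq by blast

definition strong_epi where
  "strong_epi e \<longleftrightarrow> e \<in> Arr C \<and> (\<forall>n u v. monic n \<and> u \<in> hom C (Dom C e) (Dom C n) \<and> v \<in> hom C (Cod C e) (Cod C n)
      \<and> v \<cdot> e = n \<cdot> u \<longrightarrow> (\<exists>d. d \<in> hom C (Cod C e) (Dom C n) \<and> n \<cdot> d = v \<and> d \<cdot> e = u))"

lemma strongD: assumes "strong_epi e" "monic n" "u \<in> hom C (Dom C e) (Dom C n)" "v \<in> hom C (Cod C e) (Cod C n)" "v \<cdot> e = n \<cdot> u"
  obtains d where "d \<in> hom C (Cod C e) (Dom C n)" "n \<cdot> d = v" "d \<cdot> e = u"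
proof -
  have "\<forall>n u v. monic n \<and> u \<in> hom C (Dom C e) (Dom C n) \<and> v \<in> hom C (Cod C e) (Cod C n)
      \<and> v \<cdot> e = n \<cdot> u \<longrightarrow> (\<exists>d. d \<in> hom C (Cod C e) (Dom C n) \<and> n \<cdot> d = v \<and> d \<cdot> e = u)"
    using assms(1) unfolding strong_epi_def by (rule conjunct2)
  then have "\<exists>d. d \<in> hom C (Cod C e) (Dom C n) \<and> n \<cdot> d = v \<and> d \<cdot> e = u" using assms(2-5) by blast
  then show ?thesis using that by blast
qed

lemma strong_arr: "strong_epi e \<Longrightarrow> e \<in> Arr C" unfolding strong_epi_def by (rule conjunct1)

lemma regular_strong: assumes r: "regular_epi C e" shows "strong_epi e"
proof -
  obtain f g where c: "is_coequalizer C f g e" using regular_coeq[OF r] by blast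
  note p = coeq_props0[OF c]
  have eE: "epic e" using coeq_epic[OF c] .
  have eh: "e \<in> hom C (Cod C f) (Cod C e)" using p by (simp add: hom_def)
  have fh: "f \<in> hom C (Dom C f) (Cod C f)" and gh: "g \<in> hom C (Dom C f) (Cod C f)" using p by (simp_all add: hom_def)
  show ?thesis unfolding strong_epi_def
  proof (intro conjI allI impI)
    show "e \<in> Arr C" using p by blast
    fix n u v assume h: "monic n \<and> u \<in> hom C (Dom C e) (Dom C n) \<and> v \<in> hom C (Cod C e) (Cod C n) \<and> v \<cdot> e = n \<cdot> u"
    have n: "monic n" and u: "u \<in> hom C (Cod C f) (Dom C n)" and v: "v \<in> hom C (Cod C e) (Cod C n)" and vu: "v \<cdot> e = n \<cdot> u"
      using h p by auto
    have nh: "n \<in> hom C (Dom C n) (Cod C n)" using monic_arr[OF n] by (simp add: hom_def)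
    have "n \<cdot> (u \<cdot> f) = n \<cdot> (u \<cdot> g)"
    proof -
      have "n \<cdot> (u \<cdot> f) = v \<cdot> (e \<cdot> f)" using post[OF vu[symmetric] u nh eh v fh] by simp
      also have "\<dots> = v \<cdot> (e \<cdot> g)" using p by simp
      also have "\<dots> = n \<cdot> (u \<cdot> g)" using post[OF vu eh v u nh gh] by simp
      finally show ?thesis .
    qed
    then have ufg: "u \<cdot> f = u \<cdot> g" using monicD[OF n comp_hom[OF fh u] comp_hom[OF gh u]] by simp
    have uA: "u \<in> Arr C" "Dom C u = Cod C f" using u by (simp_all add: hom_def)
    have ex: "\<exists>!d. d \<in> hom C (Cod C e) (Cod C u) \<and> d \<cdot> e = u" by (rule coeq_univ[OF c uA ufg])
    then obtain d where d: "d \<in> hom C (Cod C e) (Cod C u)" "d \<cdot> e = u" by blast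
    have d': "d \<in> hom C (Cod C e) (Dom C n)" using d u by (simp add: hom_def)
    have "(n \<cdot> d) \<cdot> e = v \<cdot> e" using assoc_hom[OF eh d' nh] d vu by simp
    then have "n \<cdot> d = v" using epicD[OF eE comp_hom[OF d' nh] v] by simp
    then show "\<exists>d. d \<in> hom C (Cod C e) (Dom C n) \<and> n \<cdot> d = v \<and> d \<cdot> e = u" using d' d by blast
  qed
qed


lemma regular_cat: "regular_cat C" using sa by (simp add: semi_abelian_def barr_exact_def)

lemma kp_coeq: assumes "is_pullback C f f r1 r2" obtains q where "is_coequalizer C r1 r2 q"
proof -
  have "\<forall>f r1 r2. is_kernel_pair C f r1 r2 \<longrightarrow> (\<exists>q. is_coequalizer C r1 r2 q)"
    using regular_cat unfolding regular_cat_def by (elim conjE)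
  then show ?thesis using assms that unfolding is_kernel_pair_def by blast
qed

lemma stable: assumes "is_pullback C q g p1 p2" "regular_epi C q" shows "regular_epi C p2"
proof -
  have "\<forall>q g p1 p2. is_pullback C q g p1 p2 \<longrightarrow> regular_epi C q \<longrightarrow> regular_epi C p2"
    using regular_cat unfolding regular_cat_def by (elim conjE)
  then show ?thesis using assms by blast
qed

lemma regularI: "is_coequalizer C f g q \<Longrightarrow> regular_epi C q" unfolding regular_epi_def by blast

lemma image_fact: assumes f: "f \<in> Arr C"
  obtains e m where "regular_epi C e" "monic m" "e \<in> hom C (Dom C f) (Dom C m)" "m \<in> hom C (Dom C m) (Cod C f)" "m \<cdot> e = f"
proof -
  obtain r1 r2 where kp: "is_pullback C f f r1 r2" using pb_exists[OF f f] by blast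
  note ka = pb_arrs[OF kp]
  obtain e where c: "is_coequalizer C r1 r2 e" using kp_coeq[OF kp] by blast
  note cp = coeq_props0[OF c]
  have eR: "regular_epi C e" using regularI[OF c] .
  have eE: "epic e" using coeq_epic[OF c] .
  define A where "A = Dom C f"
  define B where "B = Cod C f"
  define R where "R = Dom C r1"
  define I where "I = Cod C e"
  have fh: "f \<in> hom C A B" using f by (simp add: hom_def A_def B_def)
  have r1h: "r1 \<in> hom C R A" and r2h: "r2 \<in> hom C R A" using ka by (simp_all add: hom_def R_def A_def)
  have eh: "e \<in> hom C A I" using cp ka by (simp add: hom_def I_def A_def)
  have "\<exists>!u. u \<in> hom C (Cod C e) (Cod C f) \<and> u \<cdot> e = f" by (rule coeq_univ[OF c f]) (use ka in simp_all)
  then obtain m where mh: "m \<in> hom C I B" and me: "m \<cdot> e = f" unfolding I_def B_def by blast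
  have mon: "monic m"
  proof (rule monicI)
    show "m \<in> Arr C" using mh by (simp add: hom_def)
    fix Z x y assume x0: "x \<in> hom C Z (Dom C m)" and y0: "y \<in> hom C Z (Dom C m)" and mxy: "m \<cdot> x = m \<cdot> y"
    have x: "x \<in> hom C Z I" and y: "y \<in> hom C Z I" using x0 y0 mh by (simp_all add: hom_def)
    have mA: "m \<in> Arr C" using mh by (simp add: hom_def)
    obtain u1 u2 where kpm: "is_pullback C m m u1 u2" using pb_exists[OF mA mA] by blast
    note ua = pb_arrs[OF kpm]
    define S where "S = Dom C u1"
    have u1h: "u1 \<in> hom C S I" and u2h: "u2 \<in> hom C S I" using ua mh by (simp_all add: hom_def S_def)
    obtain w where wh: "w \<in> hom C Z S" and w1: "u1 \<cdot> w = x" and w2: "u2 \<cdot> w = y"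
      using pb_ex[OF kpm, of x Z y] x y mh mxy S_def by (auto simp: hom_def)
    have eA: "e \<in> Arr C" "Cod C e = Cod C u1" using eh u1h by (simp_all add: hom_def)
    obtain \<pi> \<rho> where pb1: "is_pullback C e u1 \<pi> \<rho>" using pb_exists[OF eA(1) _ eA(2)] u1h by (auto simp: hom_def)
    note pa = pb_arrs[OF pb1]
    define P1 where "P1 = Dom C \<pi>"
    have \<pi>h: "\<pi> \<in> hom C P1 A" and \<rho>h: "\<rho> \<in> hom C P1 S" using pa eh u1h by (simp_all add: hom_def P1_def)
    have \<rho>R: "regular_epi C \<rho>" using stable[OF pb1 eR] .
    have u2\<rho>h: "u2 \<cdot> \<rho> \<in> hom C P1 I" using comp_hom[OF \<rho>h u2h] .
    obtain \<pi>2 \<rho>2 where pb2: "is_pullback C e (u2 \<cdot> \<rho>) \<pi>2 \<rho>2" using pb_exists[OF eA(1), of "u2 \<cdot> \<rho>"] u2\<rho>h eh by (auto simp: hom_def)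
    note pa2 = pb_arrs[OF pb2]
    define P2 where "P2 = Dom C \<pi>2"
    have \<pi>2h: "\<pi>2 \<in> hom C P2 A" and \<rho>2h: "\<rho>2 \<in> hom C P2 P1" using pa2 eh u2\<rho>h by (simp_all add: hom_def P2_def)
    have \<rho>2R: "regular_epi C \<rho>2" using stable[OF pb2 eR] .
    have \<rho>\<rho>2: "\<rho> \<cdot> \<rho>2 \<in> hom C P2 S" using comp_hom[OF \<rho>2h \<rho>h] .
    have \<pi>\<rho>2: "\<pi> \<cdot> \<rho>2 \<in> hom C P2 A" using comp_hom[OF \<rho>2h \<pi>h] .
    have S1: "e \<cdot> (\<pi> \<cdot> \<rho>2) = u1 \<cdot> (\<rho> \<cdot> \<rho>2)" using post[OF pa(9) \<pi>h eh \<rho>h u1h \<rho>2h] .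
    have S2: "e \<cdot> \<pi>2 = u2 \<cdot> (\<rho> \<cdot> \<rho>2)" using pa2(9) assoc_hom[OF \<rho>2h \<rho>h u2h] by simp
    have S3: "f \<cdot> (\<pi> \<cdot> \<rho>2) = f \<cdot> \<pi>2"
    proof -
      have "f \<cdot> (\<pi> \<cdot> \<rho>2) = m \<cdot> (e \<cdot> (\<pi> \<cdot> \<rho>2))" using post1[OF me eh mh \<pi>\<rho>2] by simp
      also have "\<dots> = m \<cdot> (u1 \<cdot> (\<rho> \<cdot> \<rho>2))" using S1 by simp
      also have "\<dots> = m \<cdot> (u2 \<cdot> (\<rho> \<cdot> \<rho>2))" using post[OF ua(9) u1h mh u2h mh \<rho>\<rho>2] .
      also have "\<dots> = m \<cdot> (e \<cdot> \<pi>2)" using S2 by simp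
      also have "\<dots> = f \<cdot> \<pi>2" using post1[OF me eh mh \<pi>2h] .
      finally show ?thesis .
    qed
    obtain v where vh: "v \<in> hom C P2 R" and v1: "r1 \<cdot> v = \<pi> \<cdot> \<rho>2" and v2: "r2 \<cdot> v = \<pi>2"
      using pb_ex[OF kp \<pi>\<rho>2[unfolded A_def] \<pi>2h[unfolded A_def] S3] unfolding R_def by blast
    have "u1 \<cdot> (\<rho> \<cdot> \<rho>2) = u2 \<cdot> (\<rho> \<cdot> \<rho>2)"
    proof -
      have "u1 \<cdot> (\<rho> \<cdot> \<rho>2) = e \<cdot> (r1 \<cdot> v)" using S1 v1 by simp
      also have "\<dots> = e \<cdot> (r2 \<cdot> v)" using post[OF cp[THEN conjunct2, THEN conjunct2, THEN conjunct2, THEN conjunct2, THEN conjunct2, THEN conjunct2] r1h eh r2h eh vh] .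
      also have "\<dots> = u2 \<cdot> (\<rho> \<cdot> \<rho>2)" using S2 v2 by simp
      finally show ?thesis .
    qed
    moreover have "epic (\<rho> \<cdot> \<rho>2)" using epic_comp[OF regular_epic[OF \<rho>2R] regular_epic[OF \<rho>R]] \<rho>2h \<rho>h by (simp add: hom_def)
    moreover have "Cod C (\<rho> \<cdot> \<rho>2) = S" using \<rho>\<rho>2 by (simp add: hom_def)
    ultimately have "u1 = u2" using epicD[of "\<rho> \<cdot> \<rho>2" u1 I u2] u1h u2h by simp
    then show "x = y" using w1 w2 by simp
  qed
  show ?thesis using that[OF eR mon] eh mh me mon unfolding A_def B_def I_def
    by (simp add: hom_def)
qed

lemma iso_comp_regular: assumes r: "regular_epi C e" and i: "iso C m" and c: "Cod C e = Dom C m" shows "regular_epi C (m \<cdot> e)"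
proof -
  obtain a b where ce: "is_coequalizer C a b e" using regular_coeq[OF r] by blast
  note p = coeq_props0[OF ce]
  obtain d where dh: "d \<in> hom C (Cod C m) (Dom C m)" and dm: "d \<cdot> m = Idm C (Dom C m)" and md: "m \<cdot> d = Idm C (Cod C m)"
    using iso_inv[OF i] by blast
  have mA: "m \<in> Arr C" using i unfolding iso_def by (rule conjunct1)
  define X where "X = Cod C a"
  define Y where "Y = Dom C m"
  define Z where "Z = Cod C m"
  have eh: "e \<in> hom C X Y" using p c by (simp add: hom_def X_def Y_def)
  have mh: "m \<in> hom C Y Z" using mA by (simp add: hom_def Y_def Z_def)
  have dh': "d \<in> hom C Z Y" using dh by (simp add: Y_def Z_def)
  have ah: "a \<in> hom C (Dom C a) X" and bh: "b \<in> hom C (Dom C a) X" using p by (simp_all add: hom_def X_def)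
  have meh: "m \<cdot> e \<in> hom C X Z" using comp_hom[OF eh mh] .
  have eE: "epic e" using coeq_epic[OF ce] .
  show ?thesis
  proof (rule regularI, rule coeqI)
    show "a \<in> Arr C" "b \<in> Arr C" "Dom C a = Dom C b" "Cod C a = Cod C b" using p by simp_all
    show "m \<cdot> e \<in> Arr C" "Dom C (m \<cdot> e) = Cod C a" using meh by (simp_all add: hom_def X_def)
    show "(m \<cdot> e) \<cdot> a = (m \<cdot> e) \<cdot> b" using assoc_hom[OF ah eh mh] assoc_hom[OF bh eh mh] p by simp
    fix h assume hA: "h \<in> Arr C" and hd: "Dom C h = Cod C a" and hab: "h \<cdot> a = h \<cdot> b"
    have "\<exists>!u. u \<in> hom C (Cod C e) (Cod C h) \<and> u \<cdot> e = h" by (rule coeq_univ[OF ce hA hd hab])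
    then obtain u where uh: "u \<in> hom C Y (Cod C h)" and ue: "u \<cdot> e = h" using c by (auto simp: Y_def)
    have udh: "u \<cdot> d \<in> hom C Z (Cod C h)" using comp_hom[OF dh' uh] .
    have dmY: "d \<cdot> m = Idm C Y" using dm by (simp add: Y_def)
    have "(u \<cdot> d) \<cdot> (m \<cdot> e) = u \<cdot> ((d \<cdot> m) \<cdot> e)" using assoc_hom[OF meh dh' uh] assoc_hom[OF eh mh dh'] by simp
    also have "\<dots> = h" using dmY idl_hom[OF eh] ue by simp
    finally have E: "(u \<cdot> d) \<cdot> (m \<cdot> e) = h" .
    have CZ: "Cod C (m \<cdot> e) = Z" using meh by (simp add: hom_def)
    show "\<exists>!u. u \<in> hom C (Cod C (m \<cdot> e)) (Cod C h) \<and> u \<cdot> (m \<cdot> e) = h"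
    proof (rule ex1I[of _ "u \<cdot> d"])
      show "u \<cdot> d \<in> hom C (Cod C (m \<cdot> e)) (Cod C h) \<and> (u \<cdot> d) \<cdot> (m \<cdot> e) = h" using udh E CZ by simp
      fix w assume w: "w \<in> hom C (Cod C (m \<cdot> e)) (Cod C h) \<and> w \<cdot> (m \<cdot> e) = h"
      have wh: "w \<in> hom C Z (Cod C h)" using w CZ by simp
      have "(w \<cdot> m) \<cdot> e = ((u \<cdot> d) \<cdot> m) \<cdot> e" using assoc_hom[OF eh mh wh] assoc_hom[OF eh mh udh] w E by simp
      then have "w \<cdot> m = (u \<cdot> d) \<cdot> m" using epicD[OF eE, of "w \<cdot> m" "Cod C h" "(u \<cdot> d) \<cdot> m"] comp_hom[OF mh wh] comp_hom[OF mh udh] eh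
        by (simp add: hom_def)
      then have "(w \<cdot> m) \<cdot> d = ((u \<cdot> d) \<cdot> m) \<cdot> d" by simp
      then have "w \<cdot> (m \<cdot> d) = (u \<cdot> d) \<cdot> (m \<cdot> d)" using assoc_hom[OF dh' mh wh] assoc_hom[OF dh' mh udh] by simp
      then show "w = u \<cdot> d" using md idr_hom[OF wh] idr_hom[OF udh] by (simp add: Z_def)
    qed
  qed
qed

lemma strong_regular: assumes s: "strong_epi f" shows "regular_epi C f"
proof -
  have f: "f \<in> Arr C" using strong_arr[OF s] .
  obtain e m where eR: "regular_epi C e" and mon: "monic m" and eh: "e \<in> hom C (Dom C f) (Dom C m)"
    and mh: "m \<in> hom C (Dom C m) (Cod C f)" and me: "m \<cdot> e = f" using image_fact[OF f] by blast
  have idh: "Idm C (Cod C f) \<in> hom C (Cod C f) (Cod C m)" using mh id_hom[of "Cod C f"] f by (simp add: hom_def)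
  have "Idm C (Cod C f) \<cdot> f = m \<cdot> e" using me f by simp
  then obtain d where dh: "d \<in> hom C (Cod C f) (Dom C m)" and md: "m \<cdot> d = Idm C (Cod C f)" and de: "d \<cdot> f = e"
    using strongD[OF s mon, of e "Idm C (Cod C f)"] eh idh by blast
  have CM: "Cod C m = Cod C f" using mh by (simp add: hom_def)
  have "iso C m" using iso_monic_split(1)[OF mon] dh md CM by simp
  then have "regular_epi C (m \<cdot> e)" using iso_comp_regular[OF eR] eh by (simp add: hom_def)
  then show ?thesis using me by simp
qed

end

context sa begin

lemma proto: assumes "f \<in> Arr C" "p \<in> Arr C" "s \<in> Arr C" "p' \<in> Arr C" "s' \<in> Arr C"
  "Cod C p = Cod C f" "s \<in> hom C (Cod C f) (Dom C p)" "p \<cdot> s = Idm C (Cod C f)"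
  "Cod C p' = Cod C f" "s' \<in> hom C (Cod C f) (Dom C p')" "p' \<cdot> s' = Idm C (Cod C f)"
  "phi \<in> hom C (Dom C p) (Dom C p')" "p' \<cdot> phi = p" "phi \<cdot> s = s'"
  "is_pullback C f p a b" "is_pullback C f p' c d"
  "u \<in> hom C (Dom C a) (Dom C c)" "c \<cdot> u = a" "d \<cdot> u = phi \<cdot> b" "iso C u"
  shows "iso C phi"
proof -
  have "protomodular C" using sa by (simp add: semi_abelian_def)
  then have h: "\<forall>f p s p' s' phi a b c d u.
        f \<in> Arr C \<longrightarrow> p \<in> Arr C \<longrightarrow> s \<in> Arr C \<longrightarrow> p' \<in> Arr C \<longrightarrow> s' \<in> Arr C \<longrightarrow>
        Cod C p = Cod C f \<longrightarrow> s \<in> hom C (Cod C f) (Dom C p) \<longrightarrow> Cmp C p s = Idm C (Cod C f) \<longrightarrow>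
        Cod C p' = Cod C f \<longrightarrow> s' \<in> hom C (Cod C f) (Dom C p') \<longrightarrow> Cmp C p' s' = Idm C (Cod C f) \<longrightarrow>
        phi \<in> hom C (Dom C p) (Dom C p') \<longrightarrow> Cmp C p' phi = p \<longrightarrow> Cmp C phi s = s' \<longrightarrow>
        is_pullback C f p a b \<longrightarrow> is_pullback C f p' c d \<longrightarrow>
        u \<in> hom C (Dom C a) (Dom C c) \<longrightarrow> Cmp C c u = a \<longrightarrow> Cmp C d u = Cmp C phi b \<longrightarrow>
        iso C u \<longrightarrow> iso C phi" unfolding protomodular_def .
  show ?thesis by (rule h[rule_format]; fact)
qed

lemma iso_id: "a \<in> Obj C \<Longrightarrow> iso C (Idm C a)"
  unfolding iso_def using id_hom[of a] by (intro conjI bexI[of _ "Idm C a"]) (simp_all add: hom_def)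

lemma monic_cancel: assumes m: "monic (g \<cdot> f)" and f: "f \<in> Arr C" and g: "g \<in> Arr C" and c: "Cod C f = Dom C g" shows "monic f"
proof (rule monicI[OF f])
  fix a x y assume x: "x \<in> hom C a (Dom C f)" and y: "y \<in> hom C a (Dom C f)" and e: "f \<cdot> x = f \<cdot> y"
  have fh: "f \<in> hom C (Dom C f) (Dom C g)" and gh: "g \<in> hom C (Dom C g) (Cod C g)" using f g c by (simp_all add: hom_def)
  have "(g \<cdot> f) \<cdot> x = (g \<cdot> f) \<cdot> y" using assoc_hom[OF x fh gh] assoc_hom[OF y fh gh] e by simp
  moreover have "x \<in> hom C a (Dom C (g \<cdot> f))" "y \<in> hom C a (Dom C (g \<cdot> f))" using x y f g c by simp_all
  ultimately show "x = y" using monicD[OF m] by blast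
qed

lemma ker_pb: assumes k: "is_kernel C p \<kappa>"
  shows "is_pullback C (zr zo (Cod C p)) p (zr (Dom C \<kappa>) zo) \<kappa>"
proof -
  note kp = ker_props[OF k]
  have km: "monic \<kappa>" using ker_monic[OF k] .
  define K where "K = Dom C \<kappa>"
  define A where "A = Dom C p"
  define B where "B = Cod C p"
  have KO: "K \<in> Obj C" and BO: "B \<in> Obj C" using kp by (simp_all add: K_def B_def)
  have kh: "\<kappa> \<in> hom C K A" and ph: "p \<in> hom C A B" using kp by (simp_all add: hom_def K_def A_def B_def)
  show ?thesis unfolding is_pullback_def
  proof (intro conjI ballI impI)
    show "zr zo (Cod C p) \<in> Arr C" "p \<in> Arr C" "zr (Dom C \<kappa>) zo \<in> Arr C" "\<kappa> \<in> Arr C" using kp by simp_all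
    show "Cod C (zr zo (Cod C p)) = Cod C p" "Cod C (zr (Dom C \<kappa>) zo) = Dom C (zr zo (Cod C p))"
      "Cod C \<kappa> = Dom C p" "Dom C (zr (Dom C \<kappa>) zo) = Dom C \<kappa>" using kp by simp_all
    show "zr zo (Cod C p) \<cdot> zr (Dom C \<kappa>) zo = p \<cdot> \<kappa>" using kp by simp
    fix q1 q2 assume q1: "q1 \<in> Arr C" and q2: "q2 \<in> Arr C" and d: "Dom C q1 = Dom C q2"
      and c1: "Cod C q1 = Dom C (zr zo (Cod C p))" and c2: "Cod C q2 = Dom C p" and e: "zr zo (Cod C p) \<cdot> q1 = p \<cdot> q2"
    define Z where "Z = Dom C q2"
    have q1h: "q1 \<in> hom C Z zo" and q2h: "q2 \<in> hom C Z A" using q1 q2 d c1 c2 kp by (simp_all add: hom_def Z_def A_def)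
    have ZO: "Z \<in> Obj C" using q2 by (simp add: Z_def)
    have "p \<cdot> q2 = zr Z (Cod C p)" using e[symmetric] q1h kp by (simp add: hom_def)
    then obtain w where wh: "w \<in> hom C Z (Dom C \<kappa>)" and kw: "\<kappa> \<cdot> w = q2" using ker_ex[OF k, of q2 Z] q2h by (auto simp: A_def)
    have z1: "zr (Dom C \<kappa>) zo \<cdot> w = q1" using to_zo_uniq[OF _ q1h, of "zr (Dom C \<kappa>) zo \<cdot> w"] wh KO ZO
      by (simp add: hom_def K_def)
    show "\<exists>!u. u \<in> hom C (Dom C q1) (Dom C (zr (Dom C \<kappa>) zo)) \<and> zr (Dom C \<kappa>) zo \<cdot> u = q1 \<and> \<kappa> \<cdot> u = q2"
    proof (rule ex1I[of _ w])
      show "w \<in> hom C (Dom C q1) (Dom C (zr (Dom C \<kappa>) zo)) \<and> zr (Dom C \<kappa>) zo \<cdot> w = q1 \<and> \<kappa> \<cdot> w = q2"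
        using wh z1 kw d KO by (simp add: Z_def K_def)
      fix v assume v: "v \<in> hom C (Dom C q1) (Dom C (zr (Dom C \<kappa>) zo)) \<and> zr (Dom C \<kappa>) zo \<cdot> v = q1 \<and> \<kappa> \<cdot> v = q2"
      have vh: "v \<in> hom C Z (Dom C \<kappa>)" using v d KO by (simp add: Z_def K_def)
      have "\<kappa> \<cdot> v = \<kappa> \<cdot> w" using v kw by simp
      then show "v = w" using monicD[OF km vh wh] by simp
    qed
  qed
qed

text \<open>Joint strong epicity of kernel and section, from protomodularity.\<close>
lemma joint: assumes ph: "p \<in> hom C A B" and sh: "s \<in> hom C B A" and ps: "p \<cdot> s = Idm C B"
  and k: "is_kernel C p \<kappa>" and n: "monic n" and nh: "n \<in> hom C J A"
  and s0: "s0 \<in> hom C B J" and ns0: "n \<cdot> s0 = s" and k0: "\<kappa>0 \<in> hom C (Dom C \<kappa>) J" and nk0: "n \<cdot> \<kappa>0 = \<kappa>"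
  shows "iso C n"
proof -
  note kp = ker_props[OF k]
  define K where "K = Dom C \<kappa>"
  have KO: "K \<in> Obj C" using kp by (simp add: K_def)
  have BO: "B \<in> Obj C" using ph cod_obj[of p] by (simp add: hom_def)
  have kh: "\<kappa> \<in> hom C K A" using kp ph by (simp add: hom_def K_def)
  have k0h: "\<kappa>0 \<in> hom C K J" using k0 by (simp add: K_def)
  have pnh: "p \<cdot> n \<in> hom C J B" using comp_hom[OF nh ph] .
  have fh: "zr zo B \<in> hom C zo B" using zr_hom BO by simp
  have pb2: "is_pullback C (zr zo B) p (zr K zo) \<kappa>" using ker_pb[OF k] ph by (simp add: hom_def K_def)
  have pk0: "(p \<cdot> n) \<cdot> \<kappa>0 = zr K B"
  proof -
    have "(p \<cdot> n) \<cdot> \<kappa>0 = p \<cdot> \<kappa>" using assoc_hom[OF k0h nh ph] nk0 by simp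
    then show ?thesis using kp ph by (simp add: hom_def K_def)
  qed
  have k0m: "monic \<kappa>0" using monic_cancel[of n \<kappa>0] nk0 ker_monic[OF k] k0h nh by (simp add: hom_def)
  have k0ker: "is_kernel C (p \<cdot> n) \<kappa>0"
  proof (rule kerI)
    show "p \<cdot> n \<in> Arr C" "\<kappa>0 \<in> Arr C" "Cod C \<kappa>0 = Dom C (p \<cdot> n)" using pnh k0h by (simp_all add: hom_def)
    show "(p \<cdot> n) \<cdot> \<kappa>0 = zr (Dom C \<kappa>0) (Cod C (p \<cdot> n))" using pk0 pnh k0h by (simp add: hom_def)
    show "monic \<kappa>0" by fact
    fix Z q assume q: "q \<in> hom C Z (Dom C (p \<cdot> n))" and z: "(p \<cdot> n) \<cdot> q = zr Z (Cod C (p \<cdot> n))"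
    have qh: "q \<in> hom C Z J" using q pnh by (simp add: hom_def)
    have nqh: "n \<cdot> q \<in> hom C Z A" using comp_hom[OF qh nh] .
    have "p \<cdot> (n \<cdot> q) = zr Z (Cod C p)" using assoc_hom[OF qh nh ph] z pnh ph by (simp add: hom_def)
    then obtain w where wh: "w \<in> hom C Z (Dom C \<kappa>)" and kw: "\<kappa> \<cdot> w = n \<cdot> q"
      using ker_ex[OF k, of "n \<cdot> q" Z] nqh ph by (auto simp: hom_def)
    have wh': "w \<in> hom C Z K" using wh by (simp add: K_def)
    have "n \<cdot> (\<kappa>0 \<cdot> w) = n \<cdot> q" using assoc_hom[OF wh' k0h nh] nk0 kw by simp
    then have "\<kappa>0 \<cdot> w = q" using monicD[OF n, of "\<kappa>0 \<cdot> w" Z q] comp_hom[OF wh' k0h] qh nh by (simp add: hom_def)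
    then show "\<exists>u. u \<in> hom C Z (Dom C \<kappa>0) \<and> \<kappa>0 \<cdot> u = q" using wh' k0h by (auto simp: hom_def)
  qed
  have pb1: "is_pullback C (zr zo B) (p \<cdot> n) (zr K zo) \<kappa>0" using ker_pb[OF k0ker] pnh k0h by (simp add: hom_def)
  show "iso C n"
  proof (rule proto[where f="zr zo B" and p="p \<cdot> n" and s=s0 and p'=p and s'=s and a="zr K zo" and b=\<kappa>0
        and c="zr K zo" and d=\<kappa> and u="Idm C K"])
    show "zr zo B \<in> Arr C" "p \<cdot> n \<in> Arr C" "s0 \<in> Arr C" "p \<in> Arr C" "s \<in> Arr C" using fh pnh s0 ph sh by (simp_all add: hom_def)
    show "Cod C (p \<cdot> n) = Cod C (zr zo B)" "Cod C p = Cod C (zr zo B)" using pnh ph BO by (simp_all add: hom_def)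
    show "s0 \<in> hom C (Cod C (zr zo B)) (Dom C (p \<cdot> n))" using s0 pnh BO by (simp add: hom_def)
    show "s \<in> hom C (Cod C (zr zo B)) (Dom C p)" using sh ph BO by (simp add: hom_def)
    show "(p \<cdot> n) \<cdot> s0 = Idm C (Cod C (zr zo B))" using assoc_hom[OF s0 nh ph] ns0 ps BO by simp
    show "p \<cdot> s = Idm C (Cod C (zr zo B))" using ps BO by simp
    show "n \<in> hom C (Dom C (p \<cdot> n)) (Dom C p)" using nh pnh ph by (simp add: hom_def)
    show "p \<cdot> n = p \<cdot> n" by simp
    show "n \<cdot> s0 = s" by fact
    show "is_pullback C (zr zo B) (p \<cdot> n) (zr K zo) \<kappa>0" by fact
    show "is_pullback C (zr zo B) p (zr K zo) \<kappa>" by fact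
    show "Idm C K \<in> hom C (Dom C (zr K zo)) (Dom C (zr K zo))" using id_hom KO by simp
    show "zr K zo \<cdot> Idm C K = zr K zo" using KO by simp
    show "\<kappa> \<cdot> Idm C K = n \<cdot> \<kappa>0" using nk0 kh by (simp add: hom_def)
    show "iso C (Idm C K)" using iso_id KO by simp
  qed
qed

end

context sa begin

lemma pbI: assumes "f \<in> hom C X Z" "g \<in> hom C Y Z" "p1 \<in> hom C P X" "p2 \<in> hom C P Y" "f \<cdot> p1 = g \<cdot> p2"
  and ex: "\<And>W q1 q2. q1 \<in> hom C W X \<Longrightarrow> q2 \<in> hom C W Y \<Longrightarrow> f \<cdot> q1 = g \<cdot> q2 \<Longrightarrow> \<exists>u. u \<in> hom C W P \<and> p1 \<cdot> u = q1 \<and> p2 \<cdot> u = q2"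
  and un: "\<And>W u v. u \<in> hom C W P \<Longrightarrow> v \<in> hom C W P \<Longrightarrow> p1 \<cdot> u = p1 \<cdot> v \<Longrightarrow> p2 \<cdot> u = p2 \<cdot> v \<Longrightarrow> u = v"
  shows "is_pullback C f g p1 p2"
  unfolding is_pullback_def
proof (intro conjI ballI impI)
  show "f \<in> Arr C" "g \<in> Arr C" "p1 \<in> Arr C" "p2 \<in> Arr C" "Cod C f = Cod C g" "Cod C p1 = Dom C f"
    "Cod C p2 = Dom C g" "Dom C p1 = Dom C p2" "f \<cdot> p1 = g \<cdot> p2" using assms(1-5) by (simp_all add: hom_def)
  fix q1 q2 assume q1: "q1 \<in> Arr C" and q2: "q2 \<in> Arr C" and d: "Dom C q1 = Dom C q2"
      and c1: "Cod C q1 = Dom C f" and c2: "Cod C q2 = Dom C g" and e: "f \<cdot> q1 = g \<cdot> q2"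
  have q1h: "q1 \<in> hom C (Dom C q1) X" and q2h: "q2 \<in> hom C (Dom C q1) Y" using q1 q2 d c1 c2 assms(1,2) by (simp_all add: hom_def)
  obtain u where u: "u \<in> hom C (Dom C q1) P" "p1 \<cdot> u = q1" "p2 \<cdot> u = q2" using ex[OF q1h q2h e] by blast
  have DP: "Dom C p1 = P" using assms(3) by (simp add: hom_def)
  show "\<exists>!u. u \<in> hom C (Dom C q1) (Dom C p1) \<and> p1 \<cdot> u = q1 \<and> p2 \<cdot> u = q2"
  proof (rule ex1I[of _ u])
    show "u \<in> hom C (Dom C q1) (Dom C p1) \<and> p1 \<cdot> u = q1 \<and> p2 \<cdot> u = q2" using u DP by simp
    fix v assume v: "v \<in> hom C (Dom C q1) (Dom C p1) \<and> p1 \<cdot> v = q1 \<and> p2 \<cdot> v = q2"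
    have vh: "v \<in> hom C (Dom C q1) P" using v DP by simp
    have "p1 \<cdot> v = p1 \<cdot> u" "p2 \<cdot> v = p2 \<cdot> u" using u v by simp_all
    then show "v = u" using un[OF vh u(1)] by simp
  qed
qed

lemma regular_arr: "regular_epi C e \<Longrightarrow> e \<in> Arr C" using regular_epic epic_arr by blast

lemma lemmaK:
  assumes \<alpha>R: "regular_epi C \<alpha>"
  and p'h: "p' \<in> hom C X' Y'" and s'h: "s' \<in> hom C Y' X'" and p's': "p' \<cdot> s' = Idm C Y'"
  and ph: "p \<in> hom C X Y" and sh: "s \<in> hom C Y X" and ps: "p \<cdot> s = Idm C Y"
  and \<alpha>h: "\<alpha> \<in> hom C X' X" and \<beta>h: "\<beta> \<in> hom C Y' Y"
  and e1: "p \<cdot> \<alpha> = \<beta> \<cdot> p'" and e2: "\<alpha> \<cdot> s' = s \<cdot> \<beta>"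
  and k': "is_kernel C p' \<kappa>'" and k: "is_kernel C p \<kappa>"
  and \<nu>h: "\<nu> \<in> hom C (Dom C \<kappa>') (Dom C \<kappa>)" and \<nu>e: "\<kappa> \<cdot> \<nu> = \<alpha> \<cdot> \<kappa>'"
  shows "regular_epi C \<nu>"
proof -
  define N' where "N' = Dom C \<kappa>'"
  define N where "N = Dom C \<kappa>"
  note kp' = ker_props[OF k'] and kp = ker_props[OF k]
  have \<kappa>'h: "\<kappa>' \<in> hom C N' X'" using kp' p'h by (simp add: hom_def N'_def)
  have \<kappa>h: "\<kappa> \<in> hom C N X" using kp ph by (simp add: hom_def N_def)
  have \<nu>h': "\<nu> \<in> hom C N' N" using \<nu>h by (simp add: N_def N'_def)
  have \<kappa>m: "monic \<kappa>" and \<kappa>'m: "monic \<kappa>'" using ker_monic[OF k] ker_monic[OF k'] .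
  have XO: "X \<in> Obj C" "Y \<in> Obj C" "X' \<in> Obj C" "Y' \<in> Obj C" "N \<in> Obj C" "N' \<in> Obj C"
    using ph p'h \<kappa>h \<kappa>'h by (auto simp: hom_def dest: dom_obj cod_obj)
  have \<beta>A: "\<beta> \<in> Arr C" using \<beta>h by (simp add: hom_def)
  obtain \<iota> where ki: "is_kernel C \<beta> \<iota>" using kernel_exists[OF \<beta>A] by blast
  define L where "L = Dom C \<iota>"
  note kip = ker_props[OF ki]
  have \<iota>h: "\<iota> \<in> hom C L Y'" using kip \<beta>h by (simp add: hom_def L_def)
  have LO: "L \<in> Obj C" using \<iota>h by (simp add: hom_def L_def)
  have \<iota>m: "monic \<iota>" using ker_monic[OF ki] .
  have \<beta>\<iota>: "\<beta> \<cdot> \<iota> = zr L Y" using kip \<beta>h by (simp add: hom_def L_def)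
  have p'A: "p' \<in> Arr C" "\<iota> \<in> Arr C" "Cod C p' = Cod C \<iota>" using p'h \<iota>h by (simp_all add: hom_def)
  obtain \<mu>1 \<mu>2 where pbM: "is_pullback C p' \<iota> \<mu>1 \<mu>2" using pb_exists[OF p'A] by blast
  note pm = pb_arrs[OF pbM]
  define M where "M = Dom C \<mu>1"
  have \<mu>1h: "\<mu>1 \<in> hom C M X'" and \<mu>2h: "\<mu>2 \<in> hom C M L" using pm p'h \<iota>h by (simp_all add: hom_def M_def L_def)
  have MO: "M \<in> Obj C" using \<mu>1h by (auto simp: hom_def dest: dom_obj)
  have pbM': "\<And>W q1 q2. q1 \<in> hom C W X' \<Longrightarrow> q2 \<in> hom C W L \<Longrightarrow> p' \<cdot> q1 = \<iota> \<cdot> q2 \<Longrightarrow> \<exists>u. u \<in> hom C W M \<and> \<mu>1 \<cdot> u = q1 \<and> \<mu>2 \<cdot> u = q2"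
  proof -
    fix W q1 q2 assume "q1 \<in> hom C W X'" "q2 \<in> hom C W L" "p' \<cdot> q1 = \<iota> \<cdot> q2"
    then show "\<exists>u. u \<in> hom C W M \<and> \<mu>1 \<cdot> u = q1 \<and> \<mu>2 \<cdot> u = q2"
      using pb_ex[OF pbM, of q1 W q2] p'h \<iota>h unfolding M_def by (metis hom_iff)
  qed
  have s'\<iota>: "s' \<cdot> \<iota> \<in> hom C L X'" using comp_hom[OF \<iota>h s'h] .
  have "p' \<cdot> (s' \<cdot> \<iota>) = \<iota> \<cdot> Idm C L"
    using post1[OF p's' s'h p'h \<iota>h] idl_hom[OF \<iota>h] idr_hom[OF \<iota>h] by simp
  then obtain sL where sLh: "sL \<in> hom C L M" and sL1: "\<mu>1 \<cdot> sL = s' \<cdot> \<iota>" and sL2: "\<mu>2 \<cdot> sL = Idm C L"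
    using pbM'[OF s'\<iota> id_hom[OF LO]] by blast
  have zN'L: "zr N' L \<in> hom C N' L" using zr_hom XO LO by simp
  have "p' \<cdot> \<kappa>' = \<iota> \<cdot> zr N' L" using kp' \<iota>h XO LO p'h by (simp add: hom_def N'_def)
  then obtain \<kappa>M where \<kappa>Mh: "\<kappa>M \<in> hom C N' M" and \<kappa>M1: "\<mu>1 \<cdot> \<kappa>M = \<kappa>'" and \<kappa>M2: "\<mu>2 \<cdot> \<kappa>M = zr N' L"
    using pbM'[OF \<kappa>'h zN'L] by blast
  have \<kappa>Mm: "monic \<kappa>M" using monic_cancel[of \<mu>1 \<kappa>M] \<kappa>M1 \<kappa>'m \<kappa>Mh \<mu>1h by (simp add: hom_def)
  have \<kappa>Mk: "is_kernel C \<mu>2 \<kappa>M"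
  proof (rule kerI)
    show "\<mu>2 \<in> Arr C" "\<kappa>M \<in> Arr C" "Cod C \<kappa>M = Dom C \<mu>2" using \<mu>2h \<kappa>Mh by (simp_all add: hom_def)
    show "\<mu>2 \<cdot> \<kappa>M = zr (Dom C \<kappa>M) (Cod C \<mu>2)" using \<kappa>M2 \<mu>2h \<kappa>Mh by (simp add: hom_def)
    show "monic \<kappa>M" by fact
    fix W z assume z0: "z \<in> hom C W (Dom C \<mu>2)" and zz: "\<mu>2 \<cdot> z = zr W (Cod C \<mu>2)"
    have z: "z \<in> hom C W M" using z0 \<mu>2h by (simp add: hom_def)
    have WO: "W \<in> Obj C" using z by (auto simp: hom_def dest: dom_obj)
    have "p' \<cdot> (\<mu>1 \<cdot> z) = \<iota> \<cdot> (\<mu>2 \<cdot> z)" using post[OF pm(9) \<mu>1h p'h \<mu>2h \<iota>h z] .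
    also have "\<dots> = zr W Y'" using zz \<mu>2h \<iota>h WO by (simp add: hom_def)
    finally have "p' \<cdot> (\<mu>1 \<cdot> z) = zr W (Cod C p')" using p'h by (simp add: hom_def)
    then obtain w where wh: "w \<in> hom C W (Dom C \<kappa>')" and kw: "\<kappa>' \<cdot> w = \<mu>1 \<cdot> z"
      using ker_ex[OF k', of "\<mu>1 \<cdot> z" W] comp_hom[OF z \<mu>1h] p'h by (auto simp: hom_def)
    have wh': "w \<in> hom C W N'" using wh by (simp add: N'_def)
    have "\<kappa>M \<cdot> w = z"
    proof (rule pb_uniq[OF pbM])
      show "\<kappa>M \<cdot> w \<in> hom C W (Dom C \<mu>1)" "z \<in> hom C W (Dom C \<mu>1)" using comp_hom[OF wh' \<kappa>Mh] z by (simp_all add: M_def)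
      show "\<mu>1 \<cdot> (\<kappa>M \<cdot> w) = \<mu>1 \<cdot> z" using post1[OF \<kappa>M1 \<kappa>Mh \<mu>1h wh'] kw by simp
      show "\<mu>2 \<cdot> (\<kappa>M \<cdot> w) = \<mu>2 \<cdot> z" using post1[OF \<kappa>M2 \<kappa>Mh \<mu>2h wh'] zz wh' \<mu>2h LO by (simp add: hom_def)
    qed
    then show "\<exists>u. u \<in> hom C W (Dom C \<kappa>M) \<and> \<kappa>M \<cdot> u = z" using wh' \<kappa>Mh by (auto simp: hom_def)
  qed
  have \<alpha>\<mu>1: "\<alpha> \<cdot> \<mu>1 \<in> hom C M X" using comp_hom[OF \<mu>1h \<alpha>h] .
  have "p \<cdot> (\<alpha> \<cdot> \<mu>1) = \<beta> \<cdot> (p' \<cdot> \<mu>1)" using post[OF e1 \<alpha>h ph p'h \<beta>h \<mu>1h] .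
  also have "\<dots> = \<beta> \<cdot> (\<iota> \<cdot> \<mu>2)" using pm(9) by simp
  also have "\<dots> = (\<beta> \<cdot> \<iota>) \<cdot> \<mu>2" using assoc_hom[OF \<mu>2h \<iota>h \<beta>h] by simp
  also have "\<dots> = zr M Y" using \<beta>\<iota> \<mu>2h XO by (simp add: hom_def)
  finally have "p \<cdot> (\<alpha> \<cdot> \<mu>1) = zr M (Cod C p)" using ph by (simp add: hom_def)
  then obtain \<mu> where \<mu>h0: "\<mu> \<in> hom C M (Dom C \<kappa>)" and \<kappa>\<mu>: "\<kappa> \<cdot> \<mu> = \<alpha> \<cdot> \<mu>1"
    using ker_ex[OF k, of "\<alpha> \<cdot> \<mu>1" M] \<alpha>\<mu>1 ph by (auto simp: hom_def)
  have \<mu>h: "\<mu> \<in> hom C M N" using \<mu>h0 by (simp add: N_def)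
  have pbA: "is_pullback C \<alpha> \<kappa> \<mu>1 \<mu>"
  proof (rule pbI[OF \<alpha>h \<kappa>h \<mu>1h \<mu>h \<kappa>\<mu>[symmetric]])
    fix W x y assume x: "x \<in> hom C W X'" and y: "y \<in> hom C W N" and xy: "\<alpha> \<cdot> x = \<kappa> \<cdot> y"
    have WO: "W \<in> Obj C" using x by (auto simp: hom_def dest: dom_obj)
    have "\<beta> \<cdot> (p' \<cdot> x) = p \<cdot> (\<alpha> \<cdot> x)" using post[OF e1[symmetric] p'h \<beta>h \<alpha>h ph x] .
    also have "\<dots> = p \<cdot> (\<kappa> \<cdot> y)" using xy by simp
    also have "\<dots> = zr W Y" using post1[OF kp(4) \<kappa>h ph y] \<kappa>h ph y WO XO by (simp add: hom_def N_def)
    finally have "\<beta> \<cdot> (p' \<cdot> x) = zr W (Cod C \<beta>)" using \<beta>h by (simp add: hom_def)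
    then obtain w where wh: "w \<in> hom C W (Dom C \<iota>)" and iw: "\<iota> \<cdot> w = p' \<cdot> x"
      using ker_ex[OF ki, of "p' \<cdot> x" W] comp_hom[OF x p'h] \<beta>h by (auto simp: hom_def)
    have wh': "w \<in> hom C W L" using wh by (simp add: L_def)
    obtain v where vh: "v \<in> hom C W M" and v1: "\<mu>1 \<cdot> v = x" and v2: "\<mu>2 \<cdot> v = w"
      using pbM'[OF x wh' iw[symmetric]] by blast
    have "\<kappa> \<cdot> (\<mu> \<cdot> v) = (\<alpha> \<cdot> \<mu>1) \<cdot> v" using post1[OF \<kappa>\<mu> \<mu>h \<kappa>h vh] .
    also have "\<dots> = \<alpha> \<cdot> (\<mu>1 \<cdot> v)" using assoc_hom[OF vh \<mu>1h \<alpha>h] .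
    also have "\<dots> = \<kappa> \<cdot> y" using v1 xy by simp
    finally have "\<kappa> \<cdot> (\<mu> \<cdot> v) = \<kappa> \<cdot> y" .
    then have "\<mu> \<cdot> v = y" using monicD[OF \<kappa>m, of "\<mu> \<cdot> v" W y] comp_hom[OF vh \<mu>h] y \<kappa>h by (simp add: hom_def N_def)
    then show "\<exists>u. u \<in> hom C W M \<and> \<mu>1 \<cdot> u = x \<and> \<mu> \<cdot> u = y" using vh v1 by blast
  next
    fix W u v assume u: "u \<in> hom C W M" and v: "v \<in> hom C W M" and e1': "\<mu>1 \<cdot> u = \<mu>1 \<cdot> v" and e2': "\<mu> \<cdot> u = \<mu> \<cdot> v"
    have "\<iota> \<cdot> (\<mu>2 \<cdot> u) = \<iota> \<cdot> (\<mu>2 \<cdot> v)"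
      using post[OF pm(9)[symmetric] \<mu>2h \<iota>h \<mu>1h p'h u] post[OF pm(9)[symmetric] \<mu>2h \<iota>h \<mu>1h p'h v] e1' by simp
    then have "\<mu>2 \<cdot> u = \<mu>2 \<cdot> v" using monicD[OF \<iota>m, of "\<mu>2 \<cdot> u" W "\<mu>2 \<cdot> v"] comp_hom[OF u \<mu>2h] comp_hom[OF v \<mu>2h] \<iota>h
      by (simp add: hom_def L_def)
    then show "u = v" using pb_uniq[OF pbM, of u W v] u v e1' by (simp add: M_def)
  qed
  have \<mu>R: "regular_epi C \<mu>" using stable[OF pbA \<alpha>R] .
  have \<mu>sL: "\<mu> \<cdot> sL = zr L N"
  proof -
    have "\<kappa> \<cdot> (\<mu> \<cdot> sL) = \<alpha> \<cdot> (\<mu>1 \<cdot> sL)" using post[OF \<kappa>\<mu> \<mu>h \<kappa>h \<mu>1h \<alpha>h sLh] .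
    also have "\<dots> = \<alpha> \<cdot> (s' \<cdot> \<iota>)" using sL1 by simp
    also have "\<dots> = s \<cdot> (\<beta> \<cdot> \<iota>)" using post[OF e2 s'h \<alpha>h \<beta>h sh \<iota>h] .
    also have "\<dots> = zr L X" using \<beta>\<iota> sh LO by (simp add: hom_def)
    also have "\<dots> = \<kappa> \<cdot> zr L N" using \<kappa>h LO by (simp add: hom_def)
    finally show ?thesis using monicD[OF \<kappa>m, of "\<mu> \<cdot> sL" L "zr L N"] comp_hom[OF sLh \<mu>h] zr_hom[OF LO XO(5)] \<kappa>h
      by (simp add: hom_def N_def)
  qed
  have \<mu>\<kappa>M: "\<mu> \<cdot> \<kappa>M = \<nu>"
  proof -
    have "\<kappa> \<cdot> (\<mu> \<cdot> \<kappa>M) = \<alpha> \<cdot> (\<mu>1 \<cdot> \<kappa>M)" using post[OF \<kappa>\<mu> \<mu>h \<kappa>h \<mu>1h \<alpha>h \<kappa>Mh] .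
    also have "\<dots> = \<kappa> \<cdot> \<nu>" using \<kappa>M1 \<nu>e by simp
    finally show ?thesis using monicD[OF \<kappa>m, of "\<mu> \<cdot> \<kappa>M" N' \<nu>] comp_hom[OF \<kappa>Mh \<mu>h] \<nu>h' \<kappa>h
      by (simp add: hom_def N_def)
  qed
  have \<nu>A: "\<nu> \<in> Arr C" using \<nu>h' by (simp add: hom_def)
  obtain e n where eR: "regular_epi C e" and nm: "monic n" and eh0: "e \<in> hom C (Dom C \<nu>) (Dom C n)"
    and nh0: "n \<in> hom C (Dom C n) (Cod C \<nu>)" and ne: "n \<cdot> e = \<nu>" using image_fact[OF \<nu>A] by blast
  define I where "I = Dom C n"
  have eh: "e \<in> hom C N' I" and nh: "n \<in> hom C I N" using eh0 nh0 \<nu>h' by (simp_all add: hom_def I_def)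
  have IO: "I \<in> Obj C" using nh by (auto simp: hom_def dest: dom_obj)
  have \<mu>A: "\<mu> \<in> Arr C" "n \<in> Arr C" "Cod C \<mu> = Cod C n" using \<mu>h nh by (simp_all add: hom_def)
  obtain j1 j2 where pbJ: "is_pullback C \<mu> n j1 j2" using pb_exists[OF \<mu>A] by blast
  note pj = pb_arrs[OF pbJ]
  define J where "J = Dom C j1"
  have j1h: "j1 \<in> hom C J M" and j2h: "j2 \<in> hom C J I" using pj \<mu>h nh by (simp_all add: hom_def J_def I_def)
  have j1m: "monic j1" using pb_monic[OF pbJ nm] .
  have "\<mu> \<cdot> \<kappa>M = n \<cdot> e" using \<mu>\<kappa>M ne by simp
  then obtain \<kappa>0 where \<kappa>0h0: "\<kappa>0 \<in> hom C N' (Dom C j1)" and \<kappa>01: "j1 \<cdot> \<kappa>0 = \<kappa>M"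
    using pb_ex[OF pbJ, of \<kappa>M N' e] \<kappa>Mh eh \<mu>h nh by (auto simp: hom_def)
  have "\<mu> \<cdot> sL = n \<cdot> zr L I" using \<mu>sL nh LO by (simp add: hom_def)
  then obtain s0 where s0h0: "s0 \<in> hom C L (Dom C j1)" and s01: "j1 \<cdot> s0 = sL"
    using pb_ex[OF pbJ, of sL L "zr L I"] sLh \<mu>h nh LO IO by (auto simp: hom_def)
  have \<mu>2h': "\<mu>2 \<in> hom C M L" by fact
  have "iso C j1"
  proof (rule joint[OF \<mu>2h' sLh sL2 \<kappa>Mk j1m j1h])
    show "s0 \<in> hom C L J" using s0h0 by (simp add: J_def)
    show "j1 \<cdot> s0 = sL" by fact
    show "\<kappa>0 \<in> hom C (Dom C \<kappa>M) J" using \<kappa>0h0 \<kappa>Mh by (simp add: J_def hom_def)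
    show "j1 \<cdot> \<kappa>0 = \<kappa>M" by fact
  qed
  then obtain d where dh0: "d \<in> hom C (Cod C j1) (Dom C j1)" and j1d: "j1 \<cdot> d = Idm C (Cod C j1)" using iso_inv by blast
  have dh: "d \<in> hom C M J" using dh0 j1h by (simp add: hom_def J_def)
  have j1d': "j1 \<cdot> d = Idm C M" using j1d j1h by (simp add: hom_def)
  have j2d: "j2 \<cdot> d \<in> hom C M I" using comp_hom[OF dh j2h] .
  have "\<mu> = \<mu> \<cdot> (j1 \<cdot> d)" using j1d' idr_hom[OF \<mu>h] by simp
  also have "\<dots> = n \<cdot> (j2 \<cdot> d)" using post[OF pj(9) j1h \<mu>h j2h nh dh] .
  finally have \<mu>n: "Idm C N \<cdot> \<mu> = n \<cdot> (j2 \<cdot> d)" using idl_hom[OF \<mu>h] by simp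
  have idN: "Idm C N \<in> hom C (Cod C \<mu>) (Cod C n)" using id_hom[OF XO(5)] \<mu>h nh by (simp add: hom_def)
  have j2d': "j2 \<cdot> d \<in> hom C (Dom C \<mu>) (Dom C n)" using j2d \<mu>h nh by (simp add: hom_def)
  obtain d' where d'h: "d' \<in> hom C (Cod C \<mu>) (Dom C n)" and nd': "n \<cdot> d' = Idm C N"
    using strongD[OF regular_strong[OF \<mu>R] nm j2d' idN \<mu>n] by blast
  have "iso C n" using iso_monic_split(1)[OF nm] d'h nd' \<mu>h nh by (simp add: hom_def)
  then have "regular_epi C (n \<cdot> e)" using iso_comp_regular[OF eR] eh nh by (simp add: hom_def)
  then show ?thesis using ne by simp
qed

end

context sa begin

lemma equalizer: assumes x: "x \<in> hom C R G" and y: "y \<in> hom C R G"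
  obtains e E where "e \<in> hom C E R" "monic e" "x \<cdot> e = y \<cdot> e"
    "\<And>Z z. z \<in> hom C Z R \<Longrightarrow> x \<cdot> z = y \<cdot> z \<Longrightarrow> \<exists>w. w \<in> hom C Z E \<and> e \<cdot> w = z"
proof -
  have RO: "R \<in> Obj C" and GO: "G \<in> Obj C" using x by (auto simp: hom_def dest: dom_obj cod_obj)
  have zA: "zr R zo \<in> Arr C" "zr G zo \<in> Arr C" "Cod C (zr R zo) = Cod C (zr G zo)" using RO GO by simp_all
  obtain \<pi>1 \<pi>2 where pr: "is_pullback C (zr R zo) (zr G zo) \<pi>1 \<pi>2" using pb_exists[OF zA] by blast
  note pa = pb_arrs[OF pr]
  define P where "P = Dom C \<pi>1"
  have \<pi>1h: "\<pi>1 \<in> hom C P R" and \<pi>2h: "\<pi>2 \<in> hom C P G" using pa RO GO by (simp_all add: hom_def P_def)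
  have pair: "\<And>Z a b. a \<in> hom C Z R \<Longrightarrow> b \<in> hom C Z G \<Longrightarrow> \<exists>u. u \<in> hom C Z P \<and> \<pi>1 \<cdot> u = a \<and> \<pi>2 \<cdot> u = b"
  proof -
    fix Z a b assume a: "a \<in> hom C Z R" and b: "b \<in> hom C Z G"
    have ZO: "Z \<in> Obj C" using a by (auto simp: hom_def dest: dom_obj)
    have "zr R zo \<cdot> a = zr G zo \<cdot> b" using a b ZO by (simp add: hom_def)
    then obtain u where "u \<in> hom C Z (Dom C \<pi>1)" "\<pi>1 \<cdot> u = a" "\<pi>2 \<cdot> u = b" using pb_ex[OF pr, of a Z b] a b RO GO by (auto simp: hom_def)
    then show "\<exists>u. u \<in> hom C Z P \<and> \<pi>1 \<cdot> u = a \<and> \<pi>2 \<cdot> u = b" by (auto simp: P_def)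
  qed
  have puniq: "\<And>Z u v. u \<in> hom C Z P \<Longrightarrow> v \<in> hom C Z P \<Longrightarrow> \<pi>1 \<cdot> u = \<pi>1 \<cdot> v \<Longrightarrow> \<pi>2 \<cdot> u = \<pi>2 \<cdot> v \<Longrightarrow> u = v"
  proof -
    fix Z u v assume u: "u \<in> hom C Z P" and v: "v \<in> hom C Z P" and e1: "\<pi>1 \<cdot> u = \<pi>1 \<cdot> v" and e2: "\<pi>2 \<cdot> u = \<pi>2 \<cdot> v"
    show "u = v" by (rule pb_uniq[OF pr u[unfolded P_def] v[unfolded P_def] e1 e2])
  qed
  obtain ix where ixh: "ix \<in> hom C R P" and ix1: "\<pi>1 \<cdot> ix = Idm C R" and ix2: "\<pi>2 \<cdot> ix = x"
    using pair[OF id_hom[OF RO] x] by blast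
  obtain iy where iyh: "iy \<in> hom C R P" and iy1: "\<pi>1 \<cdot> iy = Idm C R" and iy2: "\<pi>2 \<cdot> iy = y"
    using pair[OF id_hom[OF RO] y] by blast
  have iA: "ix \<in> Arr C" "iy \<in> Arr C" "Cod C ix = Cod C iy" using ixh iyh by (simp_all add: hom_def)
  obtain e1 e2 where pbE: "is_pullback C ix iy e1 e2" using pb_exists[OF iA] by blast
  note pe = pb_arrs[OF pbE]
  define E where "E = Dom C e1"
  have e1h: "e1 \<in> hom C E R" and e2h: "e2 \<in> hom C E R" using pe ixh iyh by (simp_all add: hom_def E_def)
  have e12: "e1 = e2"
  proof -
    have "e1 = Idm C R \<cdot> e1" using idl_hom[OF e1h] by simp
    also have "\<dots> = \<pi>1 \<cdot> (ix \<cdot> e1)" using post1[OF ix1 ixh \<pi>1h e1h] by simp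
    also have "\<dots> = \<pi>1 \<cdot> (iy \<cdot> e2)" using pe(9) by simp
    also have "\<dots> = e2" using post1[OF iy1 iyh \<pi>1h e2h] idl_hom[OF e2h] by simp
    finally show ?thesis .
  qed
  have xe: "x \<cdot> e1 = y \<cdot> e1"
  proof -
    have "x \<cdot> e1 = \<pi>2 \<cdot> (ix \<cdot> e1)" using post1[OF ix2 ixh \<pi>2h e1h] by simp
    also have "\<dots> = \<pi>2 \<cdot> (iy \<cdot> e2)" using pe(9) by simp
    also have "\<dots> = y \<cdot> e1" using post1[OF iy2 iyh \<pi>2h e2h] e12 by simp
    finally show ?thesis .
  qed
  have mon: "monic e1"
  proof (rule monicI)
    show "e1 \<in> Arr C" using e1h by (simp add: hom_def)
    fix Z a b assume a: "a \<in> hom C Z (Dom C e1)" and b: "b \<in> hom C Z (Dom C e1)" and ab: "e1 \<cdot> a = e1 \<cdot> b"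
    show "a = b" using pb_uniq[OF pbE a b ab] ab e12 by simp
  qed
  have univ: "\<And>Z z. z \<in> hom C Z R \<Longrightarrow> x \<cdot> z = y \<cdot> z \<Longrightarrow> \<exists>w. w \<in> hom C Z E \<and> e1 \<cdot> w = z"
  proof -
    fix Z z assume z: "z \<in> hom C Z R" and xz: "x \<cdot> z = y \<cdot> z"
    have "ix \<cdot> z = iy \<cdot> z"
    proof (rule puniq[OF comp_hom[OF z ixh] comp_hom[OF z iyh]])
      show "\<pi>1 \<cdot> (ix \<cdot> z) = \<pi>1 \<cdot> (iy \<cdot> z)" using post1[OF ix1 ixh \<pi>1h z] post1[OF iy1 iyh \<pi>1h z] by simp
      show "\<pi>2 \<cdot> (ix \<cdot> z) = \<pi>2 \<cdot> (iy \<cdot> z)" using post1[OF ix2 ixh \<pi>2h z] post1[OF iy2 iyh \<pi>2h z] xz by simp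
    qed
    then obtain w where "w \<in> hom C Z (Dom C e1)" "e1 \<cdot> w = z" using pb_ex[OF pbE, of z Z z] z ixh iyh by (auto simp: hom_def)
    then show "\<exists>w. w \<in> hom C Z E \<and> e1 \<cdot> w = z" by (auto simp: E_def)
  qed
  show ?thesis using that[OF e1h mon xe univ] .
qed

lemma iso_epic: assumes i: "iso C m" shows "epic m"
proof -
  obtain d where d: "d \<in> hom C (Cod C m) (Dom C m)" "d \<cdot> m = Idm C (Dom C m)" "m \<cdot> d = Idm C (Cod C m)"
    using iso_inv[OF i] by blast
  have mA: "m \<in> Arr C" using i unfolding iso_def by (rule conjunct1)
  have mh: "m \<in> hom C (Dom C m) (Cod C m)" using mA by (simp add: hom_def)
  show ?thesis
  proof (rule epicI[OF mA])
    fix b x y assume x: "x \<in> hom C (Cod C m) b" and y: "y \<in> hom C (Cod C m) b" and e: "x \<cdot> m = y \<cdot> m"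
    have "x \<cdot> (m \<cdot> d) = y \<cdot> (m \<cdot> d)" using assoc_hom[OF d(1) mh x] assoc_hom[OF d(1) mh y] e by simp
    then show "x = y" using d(3) idr_hom[OF x] idr_hom[OF y] by simp
  qed
qed

lemma cokerI: assumes "k \<in> Arr C" "q \<in> Arr C" "Dom C q = Cod C k" "is_zero C (q \<cdot> k)"
  and "\<And>g. g \<in> Arr C \<Longrightarrow> Dom C g = Cod C k \<Longrightarrow> is_zero C (g \<cdot> k) \<Longrightarrow> \<exists>!u. u \<in> hom C (Cod C q) (Cod C g) \<and> u \<cdot> q = g"
  shows "is_cokernel C k q"
  unfolding is_cokernel_def
proof (intro conjI ballI impI)
  show "k \<in> Arr C" "q \<in> Arr C" "Dom C q = Cod C k" "is_zero C (q \<cdot> k)" using assms(1-4) by simp_all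
  fix g assume "g \<in> Arr C" "Dom C g = Cod C k" "is_zero C (g \<cdot> k)"
  then show "\<exists>!u. u \<in> hom C (Cod C q) (Cod C g) \<and> u \<cdot> q = g" by (rule assms(5))
qed

lemma coeq_props: assumes "is_coequalizer C f g q"
  shows "f \<in> Arr C" "g \<in> Arr C" "q \<in> Arr C" "Dom C f = Dom C g" "Cod C f = Cod C g" "Dom C q = Cod C f" "q \<cdot> f = q \<cdot> g"
  using coeq_props0[OF assms] by simp_all

lemma regular_normal: assumes qR: "regular_epi C q" shows "normal_epi C q"
proof -
  obtain a b where cab: "is_coequalizer C a b q" using regular_coeq[OF qR] by blast
  note cp = coeq_props[OF cab]
  define A where "A = Dom C q"
  define B where "B = Cod C q"
  define D where "D = Dom C a"
  have qA: "q \<in> Arr C" by (rule cp(3))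
  have qh: "q \<in> hom C A B" using qA by (simp add: hom_def A_def B_def)
  have ah: "a \<in> hom C D A" using cp(1) cp(6) by (simp add: hom_def A_def D_def)
  have bh: "b \<in> hom C D A" using cp(2) cp(4) cp(5) cp(6) by (simp add: hom_def A_def D_def)
  have AO: "A \<in> Obj C" "B \<in> Obj C" using qA by (simp_all add: A_def B_def)
  obtain k where kk: "is_kernel C q k" using kernel_exists[OF qA] by blast
  note kp = ker_props[OF kk]
  define K where "K = Dom C k"
  have kh: "k \<in> hom C K A" using kp by (simp add: hom_def K_def A_def)
  have KO: "K \<in> Obj C" using kp by (simp add: K_def)
  have km: "monic k" using ker_monic[OF kk] .
  have qk: "q \<cdot> k = zr K B" using kp(4) by (simp add: K_def B_def)
  obtain r1 r2 where kp2: "is_pullback C q q r1 r2" using pb_exists[OF qA qA] by blast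
  note ra = pb_arrs[OF kp2]
  define R where "R = Dom C r1"
  have r1h: "r1 \<in> hom C R A" using ra by (simp add: hom_def R_def A_def)
  have r2h: "r2 \<in> hom C R A" using ra by (simp add: hom_def R_def A_def)
  have RO: "R \<in> Obj C" using ra by (simp add: R_def)
  have kpex: "\<And>Z u v. u \<in> hom C Z A \<Longrightarrow> v \<in> hom C Z A \<Longrightarrow> q \<cdot> u = q \<cdot> v \<Longrightarrow> \<exists>t. t \<in> hom C Z R \<and> r1 \<cdot> t = u \<and> r2 \<cdot> t = v"
  proof -
    fix Z u v assume u: "u \<in> hom C Z A" and v: "v \<in> hom C Z A" and e: "q \<cdot> u = q \<cdot> v"
    obtain t where "t \<in> hom C Z (Dom C r1)" "r1 \<cdot> t = u" "r2 \<cdot> t = v"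
      using pb_ex[OF kp2 u[unfolded A_def] v[unfolded A_def] e] by blast
    then show "\<exists>t. t \<in> hom C Z R \<and> r1 \<cdot> t = u \<and> r2 \<cdot> t = v" unfolding R_def by blast
  qed
  obtain \<delta> where \<delta>h: "\<delta> \<in> hom C A R" and \<delta>1: "r1 \<cdot> \<delta> = Idm C A" and \<delta>2: "r2 \<cdot> \<delta> = Idm C A"
    using kpex[OF id_hom[OF AO(1)] id_hom[OF AO(1)] refl] by blast
  have zKA: "zr K A \<in> hom C K A" using zr_hom KO AO by simp
  have "q \<cdot> zr K A = q \<cdot> k" using qk qh KO AO by (simp add: hom_def)
  then obtain \<kappa>0 where \<kappa>0h: "\<kappa>0 \<in> hom C K R" and \<kappa>01: "r1 \<cdot> \<kappa>0 = zr K A" and \<kappa>02: "r2 \<cdot> \<kappa>0 = k"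
    using kpex[OF zKA kh] by blast
  have \<kappa>0m: "monic \<kappa>0" using monic_cancel[of r2 \<kappa>0] \<kappa>02 km \<kappa>0h r2h by (simp add: hom_def)
  have \<kappa>0k: "is_kernel C r1 \<kappa>0"
  proof (rule kerI)
    show "r1 \<in> Arr C" "\<kappa>0 \<in> Arr C" "Cod C \<kappa>0 = Dom C r1" using r1h \<kappa>0h by (simp_all add: hom_def R_def)
    show "r1 \<cdot> \<kappa>0 = zr (Dom C \<kappa>0) (Cod C r1)" using \<kappa>01 r1h \<kappa>0h by (simp add: hom_def)
    show "monic \<kappa>0" by fact
    fix Z z assume z0: "z \<in> hom C Z (Dom C r1)" and zz: "r1 \<cdot> z = zr Z (Cod C r1)"
    have z: "z \<in> hom C Z R" using z0 by (simp add: R_def)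
    have ZO: "Z \<in> Obj C" using z by (auto simp: hom_def dest: dom_obj)
    have "q \<cdot> (r2 \<cdot> z) = q \<cdot> (r1 \<cdot> z)" using post[OF ra(9)[symmetric] r2h qh r1h qh z] .
    also have "\<dots> = zr Z (Cod C q)" using zz r1h qh ZO by (simp add: hom_def)
    finally have eqz: "q \<cdot> (r2 \<cdot> z) = zr Z (Cod C q)" .
    have rz: "r2 \<cdot> z \<in> hom C Z (Dom C q)" using comp_hom[OF z r2h] by (simp add: A_def)
    obtain w where wh: "w \<in> hom C Z (Dom C k)" and kw: "k \<cdot> w = r2 \<cdot> z"
      using ker_ex[OF kk rz eqz] by blast
    have wh': "w \<in> hom C Z K" using wh by (simp add: K_def)
    have "\<kappa>0 \<cdot> w = z"
    proof (rule pb_uniq[OF kp2])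
      show "\<kappa>0 \<cdot> w \<in> hom C Z (Dom C r1)" "z \<in> hom C Z (Dom C r1)" using comp_hom[OF wh' \<kappa>0h] z by (simp_all add: R_def)
      show "r1 \<cdot> (\<kappa>0 \<cdot> w) = r1 \<cdot> z" using post1[OF \<kappa>01 \<kappa>0h r1h wh'] zz wh' r1h AO by (simp add: hom_def)
      show "r2 \<cdot> (\<kappa>0 \<cdot> w) = r2 \<cdot> z" using post1[OF \<kappa>02 \<kappa>0h r2h wh'] kw by simp
    qed
    then show "\<exists>u. u \<in> hom C Z (Dom C \<kappa>0) \<and> \<kappa>0 \<cdot> u = z" using wh' \<kappa>0h by (auto simp: hom_def)
  qed
  have "is_cokernel C k q"
  proof (rule cokerI)
    show "k \<in> Arr C" "q \<in> Arr C" "Dom C q = Cod C k" using kp qA by (simp_all add: A_def)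
    show "is_zero C (q \<cdot> k)" using qk zr_is_zero KO AO by simp
    fix g assume gA: "g \<in> Arr C" and gd: "Dom C g = Cod C k" and gz: "is_zero C (g \<cdot> k)"
    define G where "G = Cod C g"
    have gh: "g \<in> hom C A G" using gA gd kp by (simp add: hom_def G_def A_def)
    have GO: "G \<in> Obj C" using gA by (simp add: G_def)
    have gkd: "Dom C (g \<cdot> k) = K" "Cod C (g \<cdot> k) = G" using kh gh by (simp_all add: hom_def)
    have gk: "g \<cdot> k = zr K G" by (rule zero_eq[OF gz gkd])
    have gr1: "g \<cdot> r1 \<in> hom C R G" and gr2: "g \<cdot> r2 \<in> hom C R G" using comp_hom[OF r1h gh] comp_hom[OF r2h gh] by simp_all
    obtain e E where eh: "e \<in> hom C E R" and em: "monic e" and ee: "(g \<cdot> r1) \<cdot> e = (g \<cdot> r2) \<cdot> e"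
      and eu: "\<And>Z z. z \<in> hom C Z R \<Longrightarrow> (g \<cdot> r1) \<cdot> z = (g \<cdot> r2) \<cdot> z \<Longrightarrow> \<exists>w. w \<in> hom C Z E \<and> e \<cdot> w = z"
      using equalizer[OF gr1 gr2] by blast
    have gid: "g \<cdot> Idm C A = g" by (rule idr_hom[OF gh])
    have "(g \<cdot> r1) \<cdot> \<delta> = g \<cdot> (r1 \<cdot> \<delta>)" by (rule assoc_hom[OF \<delta>h r1h gh])
    also have "\<dots> = g \<cdot> (r2 \<cdot> \<delta>)" using \<delta>1 \<delta>2 by simp
    also have "\<dots> = (g \<cdot> r2) \<cdot> \<delta>" by (rule assoc_hom[OF \<delta>h r2h gh, symmetric])
    finally obtain s0 where s0h: "s0 \<in> hom C A E" and es0: "e \<cdot> s0 = \<delta>" using eu[OF \<delta>h] by blast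
    have "(g \<cdot> r1) \<cdot> \<kappa>0 = g \<cdot> (r1 \<cdot> \<kappa>0)" by (rule assoc_hom[OF \<kappa>0h r1h gh])
    also have "\<dots> = g \<cdot> zr K A" using \<kappa>01 by simp
    also have "\<dots> = zr K G" using gh KO by (simp add: hom_def)
    also have "\<dots> = g \<cdot> (r2 \<cdot> \<kappa>0)" using \<kappa>02 gk by simp
    also have "\<dots> = (g \<cdot> r2) \<cdot> \<kappa>0" by (rule assoc_hom[OF \<kappa>0h r2h gh, symmetric])
    finally obtain \<kappa>00 where \<kappa>00h: "\<kappa>00 \<in> hom C K E" and e\<kappa>00: "e \<cdot> \<kappa>00 = \<kappa>0" using eu[OF \<kappa>0h] by blast
    have \<kappa>00h': "\<kappa>00 \<in> hom C (Dom C \<kappa>0) E" using \<kappa>00h \<kappa>0h by (simp add: hom_def)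
    have "iso C e" by (rule joint[OF r1h \<delta>h \<delta>1 \<kappa>0k em eh s0h es0 \<kappa>00h' e\<kappa>00])
    then have eE: "epic e" by (rule iso_epic)
    have CE: "Cod C e = R" using eh by (simp add: hom_def)
    have gr1': "g \<cdot> r1 \<in> hom C (Cod C e) G" and gr2': "g \<cdot> r2 \<in> hom C (Cod C e) G" using gr1 gr2 CE by simp_all
    have gr12: "g \<cdot> r1 = g \<cdot> r2" by (rule epicD[OF eE gr1' gr2' ee])
    obtain t where th: "t \<in> hom C D R" and t1: "r1 \<cdot> t = a" and t2: "r2 \<cdot> t = b"
      using kpex[OF ah bh cp(7)] by blast
    have "g \<cdot> (r1 \<cdot> t) = g \<cdot> (r2 \<cdot> t)" by (rule post[OF gr12 r1h gh r2h gh th])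
    then have gab: "g \<cdot> a = g \<cdot> b" using t1 t2 by simp
    have gd': "Dom C g = Cod C a" using gh ah by (simp add: hom_def)
    show "\<exists>!u. u \<in> hom C (Cod C q) (Cod C g) \<and> u \<cdot> q = g" by (rule coeq_univ[OF cab gA gd' gab])
  qed
  then show ?thesis unfolding normal_epi_def by blast
qed

end

context sa begin

lemma cop_univ: assumes c: "is_coproduct C i1 i2" and g1: "g1 \<in> hom C (Dom C i1) Z" and g2: "g2 \<in> hom C (Dom C i2) Z"
  shows "\<exists>!u. u \<in> hom C (Cod C i1) Z \<and> u \<cdot> i1 = g1 \<and> u \<cdot> i2 = g2"
proof -
  have h: "\<forall>g1\<in>Arr C. \<forall>g2\<in>Arr C. Dom C g1 = Dom C i1 \<longrightarrow> Dom C g2 = Dom C i2 \<longrightarrow> Cod C g1 = Cod C g2 \<longrightarrow>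
        (\<exists>!u. u \<in> hom C (Cod C i1) (Cod C g1) \<and> Cmp C u i1 = g1 \<and> Cmp C u i2 = g2)"
    using c apply (unfold is_coproduct_def) apply (elim conjE) apply assumption done
  have a: "g1 \<in> Arr C" "g2 \<in> Arr C" "Dom C g1 = Dom C i1" "Dom C g2 = Dom C i2" "Cod C g1 = Cod C g2" "Cod C g1 = Z"
    using g1 g2 by (simp_all add: hom_def)
  from h[rule_format, OF a(1) a(2) a(3) a(4) a(5)] show ?thesis unfolding a(6) .
qed

lemma cop_arrs: assumes c: "is_coproduct C i1 i2" shows "i1 \<in> Arr C" "i2 \<in> Arr C" "Cod C i1 = Cod C i2"
proof -
  have "i1 \<in> Arr C \<and> i2 \<in> Arr C \<and> Cod C i1 = Cod C i2"
    using c apply (unfold is_coproduct_def) apply (elim conjE) apply (intro conjI) apply assumption+ done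
  then show "i1 \<in> Arr C" "i2 \<in> Arr C" "Cod C i1 = Cod C i2" by simp_all
qed

lemma cop_ex: assumes c: "is_coproduct C i1 i2" and g1: "g1 \<in> hom C (Dom C i1) Z" and g2: "g2 \<in> hom C (Dom C i2) Z"
  obtains u where "u \<in> hom C (Cod C i1) Z" "u \<cdot> i1 = g1" "u \<cdot> i2 = g2"
  using cop_univ[OF c g1 g2] by blast

lemma cop_eq: assumes c: "is_coproduct C i1 i2" and x: "x \<in> hom C (Cod C i1) Z" and y: "y \<in> hom C (Cod C i1) Z"
  and e1: "x \<cdot> i1 = y \<cdot> i1" and e2: "x \<cdot> i2 = y \<cdot> i2" shows "x = y"
proof -
  note ca = cop_arrs[OF c]
  have g1: "y \<cdot> i1 \<in> hom C (Dom C i1) Z" and g2: "y \<cdot> i2 \<in> hom C (Dom C i2) Z" using ca x y by (simp_all add: hom_def)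
  have ex: "\<exists>!u. u \<in> hom C (Cod C i1) Z \<and> u \<cdot> i1 = y \<cdot> i1 \<and> u \<cdot> i2 = y \<cdot> i2" by (rule cop_univ[OF c g1 g2])
  have Px: "x \<in> hom C (Cod C i1) Z \<and> x \<cdot> i1 = y \<cdot> i1 \<and> x \<cdot> i2 = y \<cdot> i2" using x e1 e2 by blast
  have Py: "y \<in> hom C (Cod C i1) Z \<and> y \<cdot> i1 = y \<cdot> i1 \<and> y \<cdot> i2 = y \<cdot> i2" using y by blast
  show ?thesis by (rule ex1_eq[OF ex Px Py])
qed

lemma cop3_univ: assumes c: "is_coproduct3 C j1 j2 j3" and g1: "g1 \<in> hom C (Dom C j1) Z" and g2: "g2 \<in> hom C (Dom C j2) Z"
  and g3: "g3 \<in> hom C (Dom C j3) Z"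
  shows "\<exists>!u. u \<in> hom C (Cod C j1) Z \<and> u \<cdot> j1 = g1 \<and> u \<cdot> j2 = g2 \<and> u \<cdot> j3 = g3"
proof -
  have h: "\<forall>g1\<in>Arr C. \<forall>g2\<in>Arr C. \<forall>g3\<in>Arr C. Dom C g1 = Dom C j1 \<longrightarrow> Dom C g2 = Dom C j2 \<longrightarrow>
        Dom C g3 = Dom C j3 \<longrightarrow> Cod C g1 = Cod C g2 \<longrightarrow> Cod C g2 = Cod C g3 \<longrightarrow>
        (\<exists>!u. u \<in> hom C (Cod C j1) (Cod C g1) \<and>
              Cmp C u j1 = g1 \<and> Cmp C u j2 = g2 \<and> Cmp C u j3 = g3)"
    using c apply (unfold is_coproduct3_def) apply (elim conjE) apply assumption done
  have a: "g1 \<in> Arr C" "g2 \<in> Arr C" "g3 \<in> Arr C" "Dom C g1 = Dom C j1" "Dom C g2 = Dom C j2" "Dom C g3 = Dom C j3"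
    "Cod C g1 = Cod C g2" "Cod C g2 = Cod C g3" "Cod C g1 = Z"
    using g1 g2 g3 by (simp_all add: hom_def)
  from h[rule_format, OF a(1) a(2) a(3) a(4) a(5) a(6) a(7) a(8)] show ?thesis unfolding a(9) .
qed

lemma cop3_arrs: assumes c: "is_coproduct3 C j1 j2 j3" shows "j1 \<in> Arr C" "j2 \<in> Arr C" "j3 \<in> Arr C" "Cod C j1 = Cod C j2" "Cod C j2 = Cod C j3"
proof -
  have "j1 \<in> Arr C \<and> j2 \<in> Arr C \<and> j3 \<in> Arr C \<and> Cod C j1 = Cod C j2 \<and> Cod C j2 = Cod C j3"
    using c apply (unfold is_coproduct3_def) apply (elim conjE) apply (intro conjI) apply assumption+ done
  then show "j1 \<in> Arr C" "j2 \<in> Arr C" "j3 \<in> Arr C" "Cod C j1 = Cod C j2" "Cod C j2 = Cod C j3" by simp_all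
qed

lemma cop3_ex: assumes c: "is_coproduct3 C j1 j2 j3" and g1: "g1 \<in> hom C (Dom C j1) Z" and g2: "g2 \<in> hom C (Dom C j2) Z"
  and g3: "g3 \<in> hom C (Dom C j3) Z"
  obtains u where "u \<in> hom C (Cod C j1) Z" "u \<cdot> j1 = g1" "u \<cdot> j2 = g2" "u \<cdot> j3 = g3"
  using cop3_univ[OF c g1 g2 g3] by blast

lemma cop3_eq: assumes c: "is_coproduct3 C j1 j2 j3" and x: "x \<in> hom C (Cod C j1) Z" and y: "y \<in> hom C (Cod C j1) Z"
  and e1: "x \<cdot> j1 = y \<cdot> j1" and e2: "x \<cdot> j2 = y \<cdot> j2" and e3: "x \<cdot> j3 = y \<cdot> j3" shows "x = y"
proof -
  note ca = cop3_arrs[OF c]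
  have g1: "y \<cdot> j1 \<in> hom C (Dom C j1) Z" and g2: "y \<cdot> j2 \<in> hom C (Dom C j2) Z" and g3: "y \<cdot> j3 \<in> hom C (Dom C j3) Z"
    using ca x y by (simp_all add: hom_def)
  have ex: "\<exists>!u. u \<in> hom C (Cod C j1) Z \<and> u \<cdot> j1 = y \<cdot> j1 \<and> u \<cdot> j2 = y \<cdot> j2 \<and> u \<cdot> j3 = y \<cdot> j3" by (rule cop3_univ[OF c g1 g2 g3])
  have Px: "x \<in> hom C (Cod C j1) Z \<and> x \<cdot> j1 = y \<cdot> j1 \<and> x \<cdot> j2 = y \<cdot> j2 \<and> x \<cdot> j3 = y \<cdot> j3" using x e1 e2 e3 by blast
  have Py: "y \<in> hom C (Cod C j1) Z \<and> y \<cdot> j1 = y \<cdot> j1 \<and> y \<cdot> j2 = y \<cdot> j2 \<and> y \<cdot> j3 = y \<cdot> j3" using y by blast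
  show ?thesis by (rule ex1_eq[OF ex Px Py])
qed

lemma normal_regular: assumes n: "normal_epi C q" shows "regular_epi C q"
proof -
  obtain f where c: "is_cokernel C f q" using n unfolding normal_epi_def by blast
  have h: "f \<in> Arr C \<and> q \<in> Arr C \<and> Dom C q = Cod C f \<and> is_zero C (Cmp C q f)"
    using c apply (unfold is_cokernel_def) apply (elim conjE) apply (intro conjI) apply assumption+ done
  have u: "\<forall>g\<in>Arr C. Dom C g = Cod C f \<longrightarrow> is_zero C (Cmp C g f) \<longrightarrow>
        (\<exists>!u. u \<in> hom C (Cod C q) (Cod C g) \<and> Cmp C u q = g)"
    using c apply (unfold is_cokernel_def) apply (elim conjE) apply assumption done
  have fA: "f \<in> Arr C" and qA: "q \<in> Arr C" and dq: "Dom C q = Cod C f" and qz: "is_zero C (q \<cdot> f)" using h by simp_all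
  define A where "A = Dom C f"
  define B where "B = Cod C f"
  have AO: "A \<in> Obj C" "B \<in> Obj C" using fA by (simp_all add: A_def B_def)
  have fh: "f \<in> hom C A B" using fA by (simp add: hom_def A_def B_def)
  have zh: "zr A B \<in> hom C A B" using zr_hom AO by simp
  have qh: "q \<in> hom C B (Cod C q)" using qA dq by (simp add: hom_def B_def)
  have qf: "q \<cdot> f = zr A (Cod C q)" using zero_eq[OF qz] fh qh by (simp add: hom_def)
  have "is_coequalizer C f (zr A B) q"
  proof (rule coeqI)
    show "f \<in> Arr C" "zr A B \<in> Arr C" "q \<in> Arr C" "Dom C f = Dom C (zr A B)" "Cod C f = Cod C (zr A B)" "Dom C q = Cod C f"
      using fh zh qh by (simp_all add: hom_def)
    show "q \<cdot> f = q \<cdot> zr A B" using qf qh AO by (simp add: hom_def)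
    fix g assume gA: "g \<in> Arr C" and gd: "Dom C g = Cod C f" and gf: "g \<cdot> f = g \<cdot> zr A B"
    have "g \<cdot> f = zr A (Cod C g)" using gf gA gd AO by (simp add: B_def)
    then have "is_zero C (g \<cdot> f)" using zr_is_zero AO gA fA gd by simp
    then show "\<exists>!u. u \<in> hom C (Cod C q) (Cod C g) \<and> u \<cdot> q = g" using u gA gd by blast
  qed
  then show ?thesis by (rule regularI)
qed

end

context sa begin

lemma sum3_strong:
  assumes c': "is_coproduct3 C j1' j2' j3'" and c: "is_coproduct3 C j1 j2 j3"
  and j1'h: "j1' \<in> hom C W' P'" and j2'h: "j2' \<in> hom C X' P'" and j3'h: "j3' \<in> hom C Y' P'"
  and j1h: "j1 \<in> hom C W P" and j2h: "j2 \<in> hom C X P" and j3h: "j3 \<in> hom C Y P"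
  and hh: "h \<in> hom C W' W" and fh: "f \<in> hom C X' X" and gh: "g \<in> hom C Y' Y"
  and hs: "strong_epi h" and fs: "strong_epi f" and gs: "strong_epi g"
  and \<sigma>h: "\<sigma> \<in> hom C P' P" and e1: "\<sigma> \<cdot> j1' = j1 \<cdot> h" and e2: "\<sigma> \<cdot> j2' = j2 \<cdot> f" and e3: "\<sigma> \<cdot> j3' = j3 \<cdot> g"
  shows "strong_epi \<sigma>"
  unfolding strong_epi_def
proof (intro conjI allI impI)
  show "\<sigma> \<in> Arr C" using \<sigma>h by (simp add: hom_def)
  fix n u v assume H: "monic n \<and> u \<in> hom C (Dom C \<sigma>) (Dom C n) \<and> v \<in> hom C (Cod C \<sigma>) (Cod C n) \<and> v \<cdot> \<sigma> = n \<cdot> u"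
  have nm: "monic n" using H by blast
  define D where "D = Dom C n"
  define E where "E = Cod C n"
  have nh: "n \<in> hom C D E" using monic_arr[OF nm] by (simp add: hom_def D_def E_def)
  have uh: "u \<in> hom C P' D" using H \<sigma>h by (simp add: hom_def D_def)
  have vh: "v \<in> hom C P E" using H \<sigma>h by (simp add: hom_def E_def)
  have vu: "v \<cdot> \<sigma> = n \<cdot> u" using H by blast
  have CP': "Cod C j1' = P'" and CP: "Cod C j1 = P" using j1'h j1h by (simp_all add: hom_def)
  have lift: "\<And>A A' i i' r. strong_epi r \<Longrightarrow> r \<in> hom C A' A \<Longrightarrow> i' \<in> hom C A' P' \<Longrightarrow> i \<in> hom C A P \<Longrightarrow> \<sigma> \<cdot> i' = i \<cdot> r
     \<Longrightarrow> \<exists>d. d \<in> hom C A D \<and> n \<cdot> d = v \<cdot> i \<and> d \<cdot> r = u \<cdot> i'"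
  proof -
    fix A A' i i' r assume rs: "strong_epi r" and rh: "r \<in> hom C A' A" and i'h: "i' \<in> hom C A' P'" and ih: "i \<in> hom C A P"
      and ei: "\<sigma> \<cdot> i' = i \<cdot> r"
    have "(v \<cdot> i) \<cdot> r = v \<cdot> (i \<cdot> r)" by (rule assoc_hom[OF rh ih vh])
    also have "\<dots> = v \<cdot> (\<sigma> \<cdot> i')" using ei by simp
    also have "\<dots> = n \<cdot> (u \<cdot> i')" by (rule post[OF vu \<sigma>h vh uh nh i'h])
    finally have sq: "(v \<cdot> i) \<cdot> r = n \<cdot> (u \<cdot> i')" .
    have a1: "u \<cdot> i' \<in> hom C (Dom C r) (Dom C n)" using comp_hom[OF i'h uh] rh by (simp add: hom_def D_def)
    have a2: "v \<cdot> i \<in> hom C (Cod C r) (Cod C n)" using comp_hom[OF ih vh] rh by (simp add: hom_def E_def)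
    obtain d where "d \<in> hom C (Cod C r) (Dom C n)" "n \<cdot> d = v \<cdot> i" "d \<cdot> r = u \<cdot> i'"
      using strongD[OF rs nm a1 a2 sq] by blast
    then show "\<exists>d. d \<in> hom C A D \<and> n \<cdot> d = v \<cdot> i \<and> d \<cdot> r = u \<cdot> i'" using rh by (auto simp: hom_def D_def)
  qed
  obtain d1 where d1h: "d1 \<in> hom C W D" and nd1: "n \<cdot> d1 = v \<cdot> j1" and d1h': "d1 \<cdot> h = u \<cdot> j1'" using lift[OF hs hh j1'h j1h e1] by blast
  obtain d2 where d2h: "d2 \<in> hom C X D" and nd2: "n \<cdot> d2 = v \<cdot> j2" and d2f: "d2 \<cdot> f = u \<cdot> j2'" using lift[OF fs fh j2'h j2h e2] by blast
  obtain d3 where d3h: "d3 \<in> hom C Y D" and nd3: "n \<cdot> d3 = v \<cdot> j3" and d3g: "d3 \<cdot> g = u \<cdot> j3'" using lift[OF gs gh j3'h j3h e3] by blast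
  have DW: "Dom C j1 = W" "Dom C j2 = X" "Dom C j3 = Y" using j1h j2h j3h by (simp_all add: hom_def)
  obtain d where dh0: "d \<in> hom C (Cod C j1) D" and dj1: "d \<cdot> j1 = d1" and dj2: "d \<cdot> j2 = d2" and dj3: "d \<cdot> j3 = d3"
    using cop3_ex[OF c, of d1 D d2 d3] d1h d2h d3h DW by auto
  have dh: "d \<in> hom C P D" using dh0 CP by simp
  have ndv: "n \<cdot> d = v"
  proof (rule cop3_eq[OF c])
    show "n \<cdot> d \<in> hom C (Cod C j1) E" "v \<in> hom C (Cod C j1) E" using comp_hom[OF dh nh] vh CP by simp_all
    show "(n \<cdot> d) \<cdot> j1 = v \<cdot> j1" using assoc_hom[OF j1h dh nh] dj1 nd1 by simp
    show "(n \<cdot> d) \<cdot> j2 = v \<cdot> j2" using assoc_hom[OF j2h dh nh] dj2 nd2 by simp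
    show "(n \<cdot> d) \<cdot> j3 = v \<cdot> j3" using assoc_hom[OF j3h dh nh] dj3 nd3 by simp
  qed
  have dsu: "d \<cdot> \<sigma> = u"
  proof (rule cop3_eq[OF c'])
    show "d \<cdot> \<sigma> \<in> hom C (Cod C j1') D" "u \<in> hom C (Cod C j1') D" using comp_hom[OF \<sigma>h dh] uh CP' by simp_all
    show "(d \<cdot> \<sigma>) \<cdot> j1' = u \<cdot> j1'"
    proof -
      have "(d \<cdot> \<sigma>) \<cdot> j1' = d \<cdot> (\<sigma> \<cdot> j1')" by (rule assoc_hom[OF j1'h \<sigma>h dh])
      also have "\<dots> = d \<cdot> (j1 \<cdot> h)" using e1 by simp
      also have "\<dots> = d1 \<cdot> h" by (rule post1[OF dj1 j1h dh hh])
      finally show ?thesis using d1h' by simp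
    qed
    show "(d \<cdot> \<sigma>) \<cdot> j2' = u \<cdot> j2'"
    proof -
      have "(d \<cdot> \<sigma>) \<cdot> j2' = d \<cdot> (\<sigma> \<cdot> j2')" by (rule assoc_hom[OF j2'h \<sigma>h dh])
      also have "\<dots> = d \<cdot> (j2 \<cdot> f)" using e2 by simp
      also have "\<dots> = d2 \<cdot> f" by (rule post1[OF dj2 j2h dh fh])
      finally show ?thesis using d2f by simp
    qed
    show "(d \<cdot> \<sigma>) \<cdot> j3' = u \<cdot> j3'"
    proof -
      have "(d \<cdot> \<sigma>) \<cdot> j3' = d \<cdot> (\<sigma> \<cdot> j3')" by (rule assoc_hom[OF j3'h \<sigma>h dh])
      also have "\<dots> = d \<cdot> (j3 \<cdot> g)" using e3 by simp
      also have "\<dots> = d3 \<cdot> g" by (rule post1[OF dj3 j3h dh gh])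
      finally show ?thesis using d3g by simp
    qed
  qed
  show "\<exists>d. d \<in> hom C (Cod C \<sigma>) (Dom C n) \<and> n \<cdot> d = v \<and> d \<cdot> \<sigma> = u"
    using dh ndv dsu \<sigma>h by (auto simp: hom_def D_def)
qed

end

context sa begin

lemma tensor_raw: assumes "is_tensor C W X Y j1 j2 j3 k"
  obtains a1 a2 b1 b2 e1 e2 p1 p2 m where
     "is_kernel C m k" "is_pullback C e1 e2 p1 p2"
     "Cmp C (Cmp C p1 m) j1 = a1" "Cmp C (Cmp C p1 m) j2 = a2"
     "Cmp C (Cmp C p2 m) j1 = b1" "Cmp C (Cmp C p2 m) j3 = b2"
     "is_coproduct3 C j1 j2 j3" "Dom C j1 = W" "Dom C j2 = X" "Dom C j3 = Y"
     "is_coproduct C a1 a2" "Dom C a1 = W" "Dom C a2 = X"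
     "is_coproduct C b1 b2" "Dom C b1 = W" "Dom C b2 = Y"
     "e1 \<in> hom C (Cod C a1) W" "Cmp C e1 a1 = Idm C W" "is_zero C (Cmp C e1 a2)"
     "e2 \<in> hom C (Cod C b1) W" "Cmp C e2 b1 = Idm C W" "is_zero C (Cmp C e2 b2)"
     "m \<in> hom C (Cod C j1) (Dom C p1)"
     "is_zero C (Cmp C (Cmp C p1 m) j3)"
     "is_zero C (Cmp C (Cmp C p2 m) j2)"
  using assms apply (unfold is_tensor_def) apply (elim conjE exE) apply (rule that) apply assumption+ done

lemma tensor_unpack: assumes t: "is_tensor C W X Y j1 j2 j3 k"
  obtains P WX WY Q a1 a2 b1 b2 e1 e2 p1 p2 m where
     "is_coproduct3 C j1 j2 j3" "j1 \<in> hom C W P" "j2 \<in> hom C X P" "j3 \<in> hom C Y P"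
     "is_coproduct C a1 a2" "a1 \<in> hom C W WX" "a2 \<in> hom C X WX"
     "is_coproduct C b1 b2" "b1 \<in> hom C W WY" "b2 \<in> hom C Y WY"
     "e1 \<in> hom C WX W" "e1 \<cdot> a1 = Idm C W" "e1 \<cdot> a2 = zr X W"
     "e2 \<in> hom C WY W" "e2 \<cdot> b1 = Idm C W" "e2 \<cdot> b2 = zr Y W"
     "is_pullback C e1 e2 p1 p2" "p1 \<in> hom C Q WX" "p2 \<in> hom C Q WY"
     "m \<in> hom C P Q"
     "p1 \<cdot> (m \<cdot> j1) = a1" "p1 \<cdot> (m \<cdot> j2) = a2" "p1 \<cdot> (m \<cdot> j3) = zr Y WX"
     "p2 \<cdot> (m \<cdot> j1) = b1" "p2 \<cdot> (m \<cdot> j2) = zr X WY" "p2 \<cdot> (m \<cdot> j3) = b2"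
     "is_kernel C m k"
proof -
  obtain a1 a2 b1 b2 e1 e2 p1 p2 m where
     kk: "is_kernel C m k" and pb: "is_pullback C e1 e2 p1 p2"
     and m1: "(p1 \<cdot> m) \<cdot> j1 = a1" and m2: "(p1 \<cdot> m) \<cdot> j2 = a2"
     and n1: "(p2 \<cdot> m) \<cdot> j1 = b1" and n3: "(p2 \<cdot> m) \<cdot> j3 = b2"
     and c3: "is_coproduct3 C j1 j2 j3" and dj: "Dom C j1 = W" "Dom C j2 = X" "Dom C j3 = Y"
     and ca: "is_coproduct C a1 a2" and da: "Dom C a1 = W" "Dom C a2 = X"
     and cb: "is_coproduct C b1 b2" and db: "Dom C b1 = W" "Dom C b2 = Y"
     and e1h: "e1 \<in> hom C (Cod C a1) W" and e1a1: "e1 \<cdot> a1 = Idm C W" and e1a2: "is_zero C (e1 \<cdot> a2)"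
     and e2h: "e2 \<in> hom C (Cod C b1) W" and e2b1: "e2 \<cdot> b1 = Idm C W" and e2b2: "is_zero C (e2 \<cdot> b2)"
     and mh: "m \<in> hom C (Cod C j1) (Dom C p1)"
     and m3: "is_zero C ((p1 \<cdot> m) \<cdot> j3)"
     and n2: "is_zero C ((p2 \<cdot> m) \<cdot> j2)"
    by (rule tensor_raw[OF t])
  note j = cop3_arrs[OF c3] and a = cop_arrs[OF ca] and b = cop_arrs[OF cb] and pa = pb_arrs[OF pb]
  define P where "P = Cod C j1"
  define WX where "WX = Cod C a1"
  define WY where "WY = Cod C b1"
  define Q where "Q = Dom C p1"
  have j1h: "j1 \<in> hom C W P" and j2h: "j2 \<in> hom C X P" and j3h: "j3 \<in> hom C Y P"
    using j dj by (simp_all add: hom_def P_def)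
  have a1h: "a1 \<in> hom C W WX" and a2h: "a2 \<in> hom C X WX" using a da by (simp_all add: hom_def WX_def)
  have b1h: "b1 \<in> hom C W WY" and b2h: "b2 \<in> hom C Y WY" using b db by (simp_all add: hom_def WY_def)
  have e1h': "e1 \<in> hom C WX W" and e2h': "e2 \<in> hom C WY W" using e1h e2h by (simp_all add: WX_def WY_def)
  have p1h: "p1 \<in> hom C Q WX" and p2h: "p2 \<in> hom C Q WY" using pa e1h' e2h' by (simp_all add: hom_def Q_def)
  have mh': "m \<in> hom C P Q" using mh by (simp add: P_def Q_def)
  have O: "W \<in> Obj C" "X \<in> Obj C" "Y \<in> Obj C" "WX \<in> Obj C" "WY \<in> Obj C" using j1h j2h j3h a1h b1h
    by (auto simp: hom_def dest: dom_obj cod_obj)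
  have z1: "e1 \<cdot> a2 = zr X W" using zero_eq[OF e1a2] a2h e1h' by (simp add: hom_def)
  have z2: "e2 \<cdot> b2 = zr Y W" using zero_eq[OF e2b2] b2h e2h' by (simp add: hom_def)
  have q1: "p1 \<cdot> (m \<cdot> j1) = a1" using m1 assoc_hom[OF j1h mh' p1h] by simp
  have q2: "p1 \<cdot> (m \<cdot> j2) = a2" using m2 assoc_hom[OF j2h mh' p1h] by simp
  have q3: "p1 \<cdot> (m \<cdot> j3) = zr Y WX"
  proof -
    have "(p1 \<cdot> m) \<cdot> j3 \<in> hom C Y WX" using comp_hom[OF j3h comp_hom[OF mh' p1h]] .
    then have "(p1 \<cdot> m) \<cdot> j3 = zr Y WX" using zero_eq[OF m3] by (simp add: hom_def)
    then show ?thesis using assoc_hom[OF j3h mh' p1h] by simp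
  qed
  have r1: "p2 \<cdot> (m \<cdot> j1) = b1" using n1 assoc_hom[OF j1h mh' p2h] by simp
  have r2: "p2 \<cdot> (m \<cdot> j2) = zr X WY"
  proof -
    have "(p2 \<cdot> m) \<cdot> j2 \<in> hom C X WY" using comp_hom[OF j2h comp_hom[OF mh' p2h]] .
    then have "(p2 \<cdot> m) \<cdot> j2 = zr X WY" using zero_eq[OF n2] by (simp add: hom_def)
    then show ?thesis using assoc_hom[OF j2h mh' p2h] by simp
  qed
  have r3: "p2 \<cdot> (m \<cdot> j3) = b2" using n3 assoc_hom[OF j3h mh' p2h] by simp
  show ?thesis using that[OF c3 j1h j2h j3h ca a1h a2h cb b1h b2h e1h' e1a1 z1 e2h' e2b1 z2 pb p1h p2h mh' q1 q2 q3 r1 r2 r3 kk] .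
qed

end

context sa begin

lemma tensor_struct:
  assumes c3: "is_coproduct3 C j1 j2 j3" and j1h: "j1 \<in> hom C W P" and j2h: "j2 \<in> hom C X P" and j3h: "j3 \<in> hom C Y P"
  and ca: "is_coproduct C a1 a2" and a1h: "a1 \<in> hom C W WX" and a2h: "a2 \<in> hom C X WX"
  and cb: "is_coproduct C b1 b2" and b1h: "b1 \<in> hom C W WY" and b2h: "b2 \<in> hom C Y WY"
  and e1h: "e1 \<in> hom C WX W" and e1a1: "e1 \<cdot> a1 = Idm C W" and e1a2: "e1 \<cdot> a2 = zr X W"
  and e2h: "e2 \<in> hom C WY W" and e2b1: "e2 \<cdot> b1 = Idm C W" and e2b2: "e2 \<cdot> b2 = zr Y W"
  and pb: "is_pullback C e1 e2 p1 p2" and p1h: "p1 \<in> hom C Q WX" and p2h: "p2 \<in> hom C Q WY"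
  and mh: "m \<in> hom C P Q"
  and q1: "p1 \<cdot> (m \<cdot> j1) = a1" and q2: "p1 \<cdot> (m \<cdot> j2) = a2" and q3: "p1 \<cdot> (m \<cdot> j3) = zr Y WX"
  and r1: "p2 \<cdot> (m \<cdot> j1) = b1" and r2: "p2 \<cdot> (m \<cdot> j2) = zr X WY" and r3: "p2 \<cdot> (m \<cdot> j3) = b2"
  and kk: "is_kernel C m k"
  obtains sX \<kappa>X NX cY \<kappa>Y NY qq ss kh where
    "sX \<in> hom C WX P" "sX \<cdot> a1 = j1" "sX \<cdot> a2 = j2" "(p1 \<cdot> m) \<cdot> sX = Idm C WX"
    "is_kernel C (p1 \<cdot> m) \<kappa>X" "\<kappa>X \<in> hom C NX P"
    "cY \<in> hom C WY P" "cY \<cdot> b1 = j1" "cY \<cdot> b2 = j3"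
    "is_kernel C e2 \<kappa>Y" "\<kappa>Y \<in> hom C NY WY"
    "qq \<in> hom C NX NY" "\<kappa>Y \<cdot> qq = (p2 \<cdot> m) \<cdot> \<kappa>X"
    "ss \<in> hom C NY NX" "\<kappa>X \<cdot> ss = cY \<cdot> \<kappa>Y" "qq \<cdot> ss = Idm C NY"
    "kh \<in> hom C (Dom C k) NX" "\<kappa>X \<cdot> kh = k" "is_kernel C qq kh"
proof -
  have O: "W \<in> Obj C" "X \<in> Obj C" "Y \<in> Obj C" "WX \<in> Obj C" "WY \<in> Obj C" "P \<in> Obj C" "Q \<in> Obj C"
    using j1h j2h j3h a1h b1h mh by (auto simp: hom_def dest: dom_obj cod_obj)
  note pa = pb_arrs[OF pb]
  have CP: "Cod C j1 = P" and CWX: "Cod C a1 = WX" and CWY: "Cod C b1 = WY" using j1h a1h b1h by (simp_all add: hom_def)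
  have DW: "Dom C a1 = W" "Dom C a2 = X" "Dom C b1 = W" "Dom C b2 = Y" using a1h a2h b1h b2h by (simp_all add: hom_def)
  define pX where "pX = p1 \<cdot> m"
  define pY where "pY = p2 \<cdot> m"
  have pXh: "pX \<in> hom C P WX" and pYh: "pY \<in> hom C P WY" using comp_hom[OF mh p1h] comp_hom[OF mh p2h] by (simp_all add: pX_def pY_def)
  have pX1: "pX \<cdot> j1 = a1" and pX2: "pX \<cdot> j2 = a2" and pX3: "pX \<cdot> j3 = zr Y WX"
    using q1 q2 q3 assoc_hom[OF j1h mh p1h] assoc_hom[OF j2h mh p1h] assoc_hom[OF j3h mh p1h] by (simp_all add: pX_def)
  have pY1: "pY \<cdot> j1 = b1" and pY2: "pY \<cdot> j2 = zr X WY" and pY3: "pY \<cdot> j3 = b2"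
    using r1 r2 r3 assoc_hom[OF j1h mh p2h] assoc_hom[OF j2h mh p2h] assoc_hom[OF j3h mh p2h] by (simp_all add: pY_def)
  obtain sX where sXh0: "sX \<in> hom C (Cod C a1) P" and sX1: "sX \<cdot> a1 = j1" and sX2: "sX \<cdot> a2 = j2"
    using cop_ex[OF ca, of j1 P j2] j1h j2h DW by auto
  have sXh: "sX \<in> hom C WX P" using sXh0 CWX by simp
  have pXsX: "pX \<cdot> sX = Idm C WX"
  proof (rule cop_eq[OF ca])
    show "pX \<cdot> sX \<in> hom C (Cod C a1) WX" "Idm C WX \<in> hom C (Cod C a1) WX" using comp_hom[OF sXh pXh] id_hom[OF O(4)] CWX by simp_all
    show "(pX \<cdot> sX) \<cdot> a1 = Idm C WX \<cdot> a1" using assoc_hom[OF a1h sXh pXh] sX1 pX1 idl_hom[OF a1h] by simp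
    show "(pX \<cdot> sX) \<cdot> a2 = Idm C WX \<cdot> a2" using assoc_hom[OF a2h sXh pXh] sX2 pX2 idl_hom[OF a2h] by simp
  qed
  have pXA: "pX \<in> Arr C" using pXh by (simp add: hom_def)
  obtain \<kappa>X where kX: "is_kernel C pX \<kappa>X" using kernel_exists[OF pXA] by blast
  define NX where "NX = Dom C \<kappa>X"
  note kXp = ker_props[OF kX]
  have \<kappa>Xh: "\<kappa>X \<in> hom C NX P" using kXp pXh by (simp add: hom_def NX_def)
  have \<kappa>Xm: "monic \<kappa>X" using ker_monic[OF kX] .
  have NXO: "NX \<in> Obj C" using kXp by (simp add: NX_def)
  have pX\<kappa>X: "pX \<cdot> \<kappa>X = zr NX WX" using kXp pXh by (simp add: hom_def NX_def)
  have e2A: "e2 \<in> Arr C" using e2h by (simp add: hom_def)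
  obtain \<kappa>Y where kY: "is_kernel C e2 \<kappa>Y" using kernel_exists[OF e2A] by blast
  define NY where "NY = Dom C \<kappa>Y"
  note kYp = ker_props[OF kY]
  have \<kappa>Yh: "\<kappa>Y \<in> hom C NY WY" using kYp e2h by (simp add: hom_def NY_def)
  have \<kappa>Ym: "monic \<kappa>Y" using ker_monic[OF kY] .
  have NYO: "NY \<in> Obj C" using kYp by (simp add: NY_def)
  have e2\<kappa>Y: "e2 \<cdot> \<kappa>Y = zr NY W" using kYp e2h by (simp add: hom_def NY_def)
  obtain cY where cYh0: "cY \<in> hom C (Cod C b1) P" and cY1: "cY \<cdot> b1 = j1" and cY2: "cY \<cdot> b2 = j3"
    using cop_ex[OF cb, of j1 P j3] j1h j3h DW by auto
  have cYh: "cY \<in> hom C WY P" using cYh0 CWY by simp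
  have pXcY: "pX \<cdot> cY = a1 \<cdot> e2"
  proof (rule cop_eq[OF cb])
    show "pX \<cdot> cY \<in> hom C (Cod C b1) WX" "a1 \<cdot> e2 \<in> hom C (Cod C b1) WX" using comp_hom[OF cYh pXh] comp_hom[OF e2h a1h] CWY by simp_all
    show "(pX \<cdot> cY) \<cdot> b1 = (a1 \<cdot> e2) \<cdot> b1" using assoc_hom[OF b1h cYh pXh] assoc_hom[OF b1h e2h a1h] cY1 pX1 e2b1 idr_hom[OF a1h] by simp
    show "(pX \<cdot> cY) \<cdot> b2 = (a1 \<cdot> e2) \<cdot> b2" using assoc_hom[OF b2h cYh pXh] assoc_hom[OF b2h e2h a1h] cY2 pX3 e2b2 a1h O by (simp add: hom_def)
  qed
  have pYcY: "pY \<cdot> cY = Idm C WY"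
  proof (rule cop_eq[OF cb])
    show "pY \<cdot> cY \<in> hom C (Cod C b1) WY" "Idm C WY \<in> hom C (Cod C b1) WY" using comp_hom[OF cYh pYh] id_hom[OF O(5)] CWY by simp_all
    show "(pY \<cdot> cY) \<cdot> b1 = Idm C WY \<cdot> b1" using assoc_hom[OF b1h cYh pYh] cY1 pY1 idl_hom[OF b1h] by simp
    show "(pY \<cdot> cY) \<cdot> b2 = Idm C WY \<cdot> b2" using assoc_hom[OF b2h cYh pYh] cY2 pY3 idl_hom[OF b2h] by simp
  qed
  have e2pY: "e2 \<cdot> pY = e1 \<cdot> pX"
  proof -
    have "e2 \<cdot> pY = e2 \<cdot> (p2 \<cdot> m)" by (simp add: pY_def)
    also have "\<dots> = e1 \<cdot> (p1 \<cdot> m)" using post[OF pa(9)[symmetric] p2h e2h p1h e1h mh] .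
    finally show ?thesis by (simp add: pX_def)
  qed
  have pY\<kappa>X: "pY \<cdot> \<kappa>X \<in> hom C NX (Dom C e2)" using comp_hom[OF \<kappa>Xh pYh] e2h by (simp add: hom_def)
  have "e2 \<cdot> (pY \<cdot> \<kappa>X) = e1 \<cdot> (pX \<cdot> \<kappa>X)" using post[OF e2pY pYh e2h pXh e1h \<kappa>Xh] .
  also have "\<dots> = zr NX (Cod C e2)" using pX\<kappa>X e1h e2h NXO by (simp add: hom_def)
  finally obtain qq where qqh0: "qq \<in> hom C NX (Dom C \<kappa>Y)" and \<kappa>Yqq: "\<kappa>Y \<cdot> qq = pY \<cdot> \<kappa>X"
    using ker_ex[OF kY pY\<kappa>X] by blast
  have qqh: "qq \<in> hom C NX NY" using qqh0 by (simp add: NY_def)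
  have cY\<kappa>Y: "cY \<cdot> \<kappa>Y \<in> hom C NY (Dom C pX)" using comp_hom[OF \<kappa>Yh cYh] pXh by (simp add: hom_def)
  have "pX \<cdot> (cY \<cdot> \<kappa>Y) = a1 \<cdot> (e2 \<cdot> \<kappa>Y)" using post[OF pXcY cYh pXh e2h a1h \<kappa>Yh] .
  also have "\<dots> = zr NY (Cod C pX)" using e2\<kappa>Y a1h pXh NYO by (simp add: hom_def)
  finally obtain ss where ssh0: "ss \<in> hom C NY (Dom C \<kappa>X)" and \<kappa>Xss: "\<kappa>X \<cdot> ss = cY \<cdot> \<kappa>Y"
    using ker_ex[OF kX cY\<kappa>Y] by blast
  have ssh: "ss \<in> hom C NY NX" using ssh0 by (simp add: NX_def)
  have qqss: "qq \<cdot> ss = Idm C NY"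
  proof -
    have "\<kappa>Y \<cdot> (qq \<cdot> ss) = pY \<cdot> (\<kappa>X \<cdot> ss)" using post[OF \<kappa>Yqq qqh \<kappa>Yh \<kappa>Xh pYh ssh] .
    also have "\<dots> = (pY \<cdot> cY) \<cdot> \<kappa>Y" using \<kappa>Xss assoc_hom[OF \<kappa>Yh cYh pYh] by simp
    also have "\<dots> = \<kappa>Y \<cdot> Idm C NY" using pYcY idl_hom[OF \<kappa>Yh] idr_hom[OF \<kappa>Yh] by simp
    finally show ?thesis using monicD[OF \<kappa>Ym, of "qq \<cdot> ss" NY "Idm C NY"] comp_hom[OF ssh qqh] id_hom[OF NYO] by (simp add: NY_def)
  qed
  note kp = ker_props[OF kk]
  define K where "K = Dom C k"
  have kh0: "k \<in> hom C K P" using kp mh by (simp add: hom_def K_def)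
  have KO: "K \<in> Obj C" using kp by (simp add: K_def)
  have km: "monic k" using ker_monic[OF kk] .
  have mk: "m \<cdot> k = zr K Q" using kp mh by (simp add: hom_def K_def)
  have kh1: "k \<in> hom C K (Dom C pX)" using kh0 pXh by (simp add: hom_def)
  have "pX \<cdot> k = p1 \<cdot> (m \<cdot> k)" using assoc_hom[OF kh0 mh p1h] by (simp add: pX_def)
  also have "\<dots> = zr K (Cod C pX)" using mk p1h pXh KO by (simp add: hom_def)
  finally obtain kh where khh0: "kh \<in> hom C K (Dom C \<kappa>X)" and \<kappa>Xkh: "\<kappa>X \<cdot> kh = k"
    using ker_ex[OF kX kh1] by blast
  have khh: "kh \<in> hom C K NX" using khh0 by (simp add: NX_def)
  have khm: "monic kh" using monic_cancel[of \<kappa>X kh] \<kappa>Xkh km khh \<kappa>Xh by (simp add: hom_def)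
  have pYk: "pY \<cdot> k = zr K WY"
  proof -
    have "pY \<cdot> k = p2 \<cdot> (m \<cdot> k)" using assoc_hom[OF kh0 mh p2h] by (simp add: pY_def)
    then show ?thesis using mk p2h KO by (simp add: hom_def)
  qed
  have khk: "is_kernel C qq kh"
  proof (rule kerI)
    show "qq \<in> Arr C" "kh \<in> Arr C" "Cod C kh = Dom C qq" using qqh khh by (simp_all add: hom_def)
    show "monic kh" by fact
    have "\<kappa>Y \<cdot> (qq \<cdot> kh) = pY \<cdot> k" using post[OF \<kappa>Yqq qqh \<kappa>Yh \<kappa>Xh pYh khh] \<kappa>Xkh by simp
    also have "\<dots> = \<kappa>Y \<cdot> zr K NY" using pYk \<kappa>Yh KO by (simp add: hom_def)
    finally have "qq \<cdot> kh = zr K NY" using monicD[OF \<kappa>Ym, of "qq \<cdot> kh" K "zr K NY"] comp_hom[OF khh qqh] zr_hom[OF KO NYO]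
      by (simp add: NY_def)
    then show "qq \<cdot> kh = zr (Dom C kh) (Cod C qq)" using qqh khh by (simp add: hom_def)
    fix Z z assume z0: "z \<in> hom C Z (Dom C qq)" and zz: "qq \<cdot> z = zr Z (Cod C qq)"
    have z: "z \<in> hom C Z NX" using z0 qqh by (simp add: hom_def)
    have ZO: "Z \<in> Obj C" using z by (auto simp: hom_def dest: dom_obj)
    have \<kappa>Xz: "\<kappa>X \<cdot> z \<in> hom C Z P" using comp_hom[OF z \<kappa>Xh] .
    have a: "pY \<cdot> (\<kappa>X \<cdot> z) = zr Z WY"
    proof -
      have "pY \<cdot> (\<kappa>X \<cdot> z) = \<kappa>Y \<cdot> (qq \<cdot> z)" using post[OF \<kappa>Yqq[symmetric] \<kappa>Xh pYh qqh \<kappa>Yh z] .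
      then show ?thesis using zz qqh \<kappa>Yh ZO by (simp add: hom_def)
    qed
    have b: "pX \<cdot> (\<kappa>X \<cdot> z) = zr Z WX" using post1[OF pX\<kappa>X \<kappa>Xh pXh z] pXh z O ZO NXO by (simp add: hom_def)
    have mz: "m \<cdot> (\<kappa>X \<cdot> z) = zr Z Q"
    proof (rule pb_uniq[OF pb])
      show "m \<cdot> (\<kappa>X \<cdot> z) \<in> hom C Z (Dom C p1)" "zr Z Q \<in> hom C Z (Dom C p1)" using comp_hom[OF \<kappa>Xz mh] zr_hom[OF ZO O(7)] p1h
        by (simp_all add: hom_def)
      show "p1 \<cdot> (m \<cdot> (\<kappa>X \<cdot> z)) = p1 \<cdot> zr Z Q" using b assoc_hom[OF \<kappa>Xz mh p1h] p1h ZO by (simp add: hom_def pX_def)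
      show "p2 \<cdot> (m \<cdot> (\<kappa>X \<cdot> z)) = p2 \<cdot> zr Z Q" using a assoc_hom[OF \<kappa>Xz mh p2h] p2h ZO by (simp add: hom_def pY_def)
    qed
    have \<kappa>Xz': "\<kappa>X \<cdot> z \<in> hom C Z (Dom C m)" using \<kappa>Xz mh by (simp add: hom_def)
    have mz': "m \<cdot> (\<kappa>X \<cdot> z) = zr Z (Cod C m)" using mz mh by (simp add: hom_def)
    obtain w where wh0: "w \<in> hom C Z (Dom C k)" and kw: "k \<cdot> w = \<kappa>X \<cdot> z" using ker_ex[OF kk \<kappa>Xz' mz'] by blast
    have wh: "w \<in> hom C Z K" using wh0 by (simp add: K_def)
    have "\<kappa>X \<cdot> (kh \<cdot> w) = \<kappa>X \<cdot> z" using post1[OF \<kappa>Xkh khh \<kappa>Xh wh] kw by simp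
    then have "kh \<cdot> w = z" using monicD[OF \<kappa>Xm, of "kh \<cdot> w" Z z] comp_hom[OF wh khh] z by (simp add: NX_def)
    then show "\<exists>u. u \<in> hom C Z (Dom C kh) \<and> kh \<cdot> u = z" using wh khh by (auto simp: hom_def)
  qed
  have kX': "is_kernel C (p1 \<cdot> m) \<kappa>X" using kX by (simp add: pX_def)
  have pXsX': "(p1 \<cdot> m) \<cdot> sX = Idm C WX" using pXsX by (simp add: pX_def)
  have \<kappa>Yqq': "\<kappa>Y \<cdot> qq = (p2 \<cdot> m) \<cdot> \<kappa>X" using \<kappa>Yqq by (simp add: pY_def)
  have khh': "kh \<in> hom C (Dom C k) NX" using khh by (simp add: K_def)
  show ?thesis using that[OF sXh sX1 sX2 pXsX' kX' \<kappa>Xh cYh cY1 cY2 kY \<kappa>Yh qqh \<kappa>Yqq' ssh \<kappa>Xss qqss khh' \<kappa>Xkh khk] .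
qed

end

context sa begin

lemma main:
  assumes "f \<in> hom C X' X" and "g \<in> hom C Y' Y" and "h \<in> hom C W' W"
    and "normal_epi C f" and "normal_epi C g" and "normal_epi C h"
    and "is_tensor C W' X' Y' j1' j2' j3' k'"
    and "is_tensor C W X Y j1 j2 j3 k"
    and "\<sigma> \<in> hom C (Cod C j1') (Cod C j1)"
    and "Cmp C \<sigma> j1' = Cmp C j1 h" and "Cmp C \<sigma> j2' = Cmp C j2 f" and "Cmp C \<sigma> j3' = Cmp C j3 g"
    and "t \<in> hom C (Dom C k') (Dom C k)" and "Cmp C k t = Cmp C \<sigma> k'"
  shows "normal_epi C t"
proof -
  note fh = assms(1) and gh = assms(2) and hh = assms(3)
  note \<sigma>1 = assms(10) and \<sigma>2 = assms(11) and \<sigma>3 = assms(12) and th = assms(13) and kt = assms(14)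
  obtain P' WX' WY' Q' a1' a2' b1' b2' e1' e2' p1' p2' m' where
     c3': "is_coproduct3 C j1' j2' j3'" and j1'h: "j1' \<in> hom C W' P'" and j2'h: "j2' \<in> hom C X' P'" and j3'h: "j3' \<in> hom C Y' P'"
     and ca': "is_coproduct C a1' a2'" and a1'h: "a1' \<in> hom C W' WX'" and a2'h: "a2' \<in> hom C X' WX'"
     and cb': "is_coproduct C b1' b2'" and b1'h: "b1' \<in> hom C W' WY'" and b2'h: "b2' \<in> hom C Y' WY'"
     and e1'h: "e1' \<in> hom C WX' W'" and e1a1': "e1' \<cdot> a1' = Idm C W'" and e1a2': "e1' \<cdot> a2' = zr X' W'"
     and e2'h: "e2' \<in> hom C WY' W'" and e2b1': "e2' \<cdot> b1' = Idm C W'" and e2b2': "e2' \<cdot> b2' = zr Y' W'"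
     and pb': "is_pullback C e1' e2' p1' p2'" and p1'h: "p1' \<in> hom C Q' WX'" and p2'h: "p2' \<in> hom C Q' WY'"
     and m'h: "m' \<in> hom C P' Q'"
     and q1': "p1' \<cdot> (m' \<cdot> j1') = a1'" and q2': "p1' \<cdot> (m' \<cdot> j2') = a2'" and q3': "p1' \<cdot> (m' \<cdot> j3') = zr Y' WX'"
     and r1': "p2' \<cdot> (m' \<cdot> j1') = b1'" and r2': "p2' \<cdot> (m' \<cdot> j2') = zr X' WY'" and r3': "p2' \<cdot> (m' \<cdot> j3') = b2'"
     and kk': "is_kernel C m' k'"
    by (rule tensor_unpack[OF assms(7)])
  obtain P WX WY Q a1 a2 b1 b2 e1 e2 p1 p2 m where
     c3: "is_coproduct3 C j1 j2 j3" and j1h: "j1 \<in> hom C W P" and j2h: "j2 \<in> hom C X P" and j3h: "j3 \<in> hom C Y P"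
     and ca: "is_coproduct C a1 a2" and a1h: "a1 \<in> hom C W WX" and a2h: "a2 \<in> hom C X WX"
     and cb: "is_coproduct C b1 b2" and b1h: "b1 \<in> hom C W WY" and b2h: "b2 \<in> hom C Y WY"
     and e1h: "e1 \<in> hom C WX W" and e1a1: "e1 \<cdot> a1 = Idm C W" and e1a2: "e1 \<cdot> a2 = zr X W"
     and e2h: "e2 \<in> hom C WY W" and e2b1: "e2 \<cdot> b1 = Idm C W" and e2b2: "e2 \<cdot> b2 = zr Y W"
     and pb: "is_pullback C e1 e2 p1 p2" and p1h: "p1 \<in> hom C Q WX" and p2h: "p2 \<in> hom C Q WY"
     and mh: "m \<in> hom C P Q"
     and q1: "p1 \<cdot> (m \<cdot> j1) = a1" and q2: "p1 \<cdot> (m \<cdot> j2) = a2" and q3: "p1 \<cdot> (m \<cdot> j3) = zr Y WX"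
     and r1: "p2 \<cdot> (m \<cdot> j1) = b1" and r2: "p2 \<cdot> (m \<cdot> j2) = zr X WY" and r3: "p2 \<cdot> (m \<cdot> j3) = b2"
     and kk: "is_kernel C m k"
    by (rule tensor_unpack[OF assms(8)])
  obtain sX' \<kappa>X' NX' cY' \<kappa>Y' NY' qq' ss' kh' where
    sX'h: "sX' \<in> hom C WX' P'" and sX1': "sX' \<cdot> a1' = j1'" and sX2': "sX' \<cdot> a2' = j2'" and pXsX': "(p1' \<cdot> m') \<cdot> sX' = Idm C WX'"
    and kX': "is_kernel C (p1' \<cdot> m') \<kappa>X'" and \<kappa>X'h: "\<kappa>X' \<in> hom C NX' P'"
    and cY'h: "cY' \<in> hom C WY' P'" and cY1': "cY' \<cdot> b1' = j1'" and cY2': "cY' \<cdot> b2' = j3'"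
    and kY': "is_kernel C e2' \<kappa>Y'" and \<kappa>Y'h: "\<kappa>Y' \<in> hom C NY' WY'"
    and qq'h: "qq' \<in> hom C NX' NY'" and \<kappa>Yqq': "\<kappa>Y' \<cdot> qq' = (p2' \<cdot> m') \<cdot> \<kappa>X'"
    and ss'h: "ss' \<in> hom C NY' NX'" and \<kappa>Xss': "\<kappa>X' \<cdot> ss' = cY' \<cdot> \<kappa>Y'" and qqss': "qq' \<cdot> ss' = Idm C NY'"
    and kh'h: "kh' \<in> hom C (Dom C k') NX'" and \<kappa>Xkh': "\<kappa>X' \<cdot> kh' = k'" and khk': "is_kernel C qq' kh'"
    by (rule tensor_struct[OF c3' j1'h j2'h j3'h ca' a1'h a2'h cb' b1'h b2'h e1'h e1a1' e1a2' e2'h e2b1' e2b2' pb' p1'h p2'h m'h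
          q1' q2' q3' r1' r2' r3' kk'])
  obtain sX \<kappa>X NX cY \<kappa>Y NY qq ss kh where
    sXh: "sX \<in> hom C WX P" and sX1: "sX \<cdot> a1 = j1" and sX2: "sX \<cdot> a2 = j2" and pXsX: "(p1 \<cdot> m) \<cdot> sX = Idm C WX"
    and kX: "is_kernel C (p1 \<cdot> m) \<kappa>X" and \<kappa>Xh: "\<kappa>X \<in> hom C NX P"
    and cYh: "cY \<in> hom C WY P" and cY1: "cY \<cdot> b1 = j1" and cY2: "cY \<cdot> b2 = j3"
    and kY: "is_kernel C e2 \<kappa>Y" and \<kappa>Yh: "\<kappa>Y \<in> hom C NY WY"
    and qqh: "qq \<in> hom C NX NY" and \<kappa>Yqq: "\<kappa>Y \<cdot> qq = (p2 \<cdot> m) \<cdot> \<kappa>X"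
    and ssh: "ss \<in> hom C NY NX" and \<kappa>Xss: "\<kappa>X \<cdot> ss = cY \<cdot> \<kappa>Y" and qqss: "qq \<cdot> ss = Idm C NY"
    and khh: "kh \<in> hom C (Dom C k) NX" and \<kappa>Xkh: "\<kappa>X \<cdot> kh = k" and khk: "is_kernel C qq kh"
    by (rule tensor_struct[OF c3 j1h j2h j3h ca a1h a2h cb b1h b2h e1h e1a1 e1a2 e2h e2b1 e2b2 pb p1h p2h mh
          q1 q2 q3 r1 r2 r3 kk])
  have O: "W \<in> Obj C" "X \<in> Obj C" "Y \<in> Obj C" "W' \<in> Obj C" "X' \<in> Obj C" "Y' \<in> Obj C"
    "WX \<in> Obj C" "WY \<in> Obj C" "WX' \<in> Obj C" "WY' \<in> Obj C" "NX' \<in> Obj C" "NY' \<in> Obj C" "NX \<in> Obj C" "NY \<in> Obj C"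
    using j1h j2h j3h j1'h j2'h j3'h a1h b1h a1'h b1'h \<kappa>X'h \<kappa>Y'h \<kappa>Xh \<kappa>Yh by (auto simp: hom_def dest: dom_obj cod_obj)
  have CP: "Cod C j1 = P" "Cod C j1' = P'" "Cod C a1 = WX" "Cod C a1' = WX'" "Cod C b1 = WY" "Cod C b1' = WY'"
    using j1h j1'h a1h a1'h b1h b1'h by (simp_all add: hom_def)
  have \<sigma>h: "\<sigma> \<in> hom C P' P" using assms(9) CP by simp
  have hs: "strong_epi h" and fs: "strong_epi f" and gs: "strong_epi g"
    using regular_strong[OF normal_regular] assms(4-6) by blast+
  have \<sigma>R: "regular_epi C \<sigma>"
    by (rule strong_regular[OF sum3_strong[OF c3' c3 j1'h j2'h j3'h j1h j2h j3h hh fh gh hs fs gs \<sigma>h \<sigma>1 \<sigma>2 \<sigma>3]])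
  define pX where "pX = p1 \<cdot> m"
  define pY where "pY = p2 \<cdot> m"
  define pX' where "pX' = p1' \<cdot> m'"
  define pY' where "pY' = p2' \<cdot> m'"
  have pXh: "pX \<in> hom C P WX" and pYh: "pY \<in> hom C P WY" using comp_hom[OF mh p1h] comp_hom[OF mh p2h] by (simp_all add: pX_def pY_def)
  have pX'h: "pX' \<in> hom C P' WX'" and pY'h: "pY' \<in> hom C P' WY'" using comp_hom[OF m'h p1'h] comp_hom[OF m'h p2'h] by (simp_all add: pX'_def pY'_def)
  have pX1: "pX \<cdot> j1 = a1" and pX2: "pX \<cdot> j2 = a2" and pX3: "pX \<cdot> j3 = zr Y WX"
    using q1 q2 q3 assoc_hom[OF j1h mh p1h] assoc_hom[OF j2h mh p1h] assoc_hom[OF j3h mh p1h] by (simp_all add: pX_def)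
  have pY1: "pY \<cdot> j1 = b1" and pY2: "pY \<cdot> j2 = zr X WY" and pY3: "pY \<cdot> j3 = b2"
    using r1 r2 r3 assoc_hom[OF j1h mh p2h] assoc_hom[OF j2h mh p2h] assoc_hom[OF j3h mh p2h] by (simp_all add: pY_def)
  have pX1': "pX' \<cdot> j1' = a1'" and pX2': "pX' \<cdot> j2' = a2'" and pX3': "pX' \<cdot> j3' = zr Y' WX'"
    using q1' q2' q3' assoc_hom[OF j1'h m'h p1'h] assoc_hom[OF j2'h m'h p1'h] assoc_hom[OF j3'h m'h p1'h] by (simp_all add: pX'_def)
  have pY1': "pY' \<cdot> j1' = b1'" and pY2': "pY' \<cdot> j2' = zr X' WY'" and pY3': "pY' \<cdot> j3' = b2'"
    using r1' r2' r3' assoc_hom[OF j1'h m'h p2'h] assoc_hom[OF j2'h m'h p2'h] assoc_hom[OF j3'h m'h p2'h] by (simp_all add: pY'_def)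
  have DW: "Dom C a1' = W'" "Dom C a2' = X'" "Dom C b1' = W'" "Dom C b2' = Y'" using a1'h a2'h b1'h b2'h by (simp_all add: hom_def)
  have a1hh: "a1 \<cdot> h \<in> hom C W' WX" and a2f: "a2 \<cdot> f \<in> hom C X' WX" using comp_hom[OF hh a1h] comp_hom[OF fh a2h] by simp_all
  have b1hh: "b1 \<cdot> h \<in> hom C W' WY" and b2g: "b2 \<cdot> g \<in> hom C Y' WY" using comp_hom[OF hh b1h] comp_hom[OF gh b2h] by simp_all
  obtain \<tau>X where \<tau>Xh0: "\<tau>X \<in> hom C (Cod C a1') WX" and \<tau>X1: "\<tau>X \<cdot> a1' = a1 \<cdot> h" and \<tau>X2: "\<tau>X \<cdot> a2' = a2 \<cdot> f"
    using cop_ex[OF ca', of "a1 \<cdot> h" WX "a2 \<cdot> f"] a1hh a2f DW by auto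
  have \<tau>Xh: "\<tau>X \<in> hom C WX' WX" using \<tau>Xh0 CP by simp
  obtain \<tau>Y where \<tau>Yh0: "\<tau>Y \<in> hom C (Cod C b1') WY" and \<tau>Y1: "\<tau>Y \<cdot> b1' = b1 \<cdot> h" and \<tau>Y2: "\<tau>Y \<cdot> b2' = b2 \<cdot> g"
    using cop_ex[OF cb', of "b1 \<cdot> h" WY "b2 \<cdot> g"] b1hh b2g DW by auto
  have \<tau>Yh: "\<tau>Y \<in> hom C WY' WY" using \<tau>Yh0 CP by simp
  have C1: "pX \<cdot> \<sigma> = \<tau>X \<cdot> pX'"
  proof (rule cop3_eq[OF c3'])
    show "pX \<cdot> \<sigma> \<in> hom C (Cod C j1') WX" "\<tau>X \<cdot> pX' \<in> hom C (Cod C j1') WX" using comp_hom[OF \<sigma>h pXh] comp_hom[OF pX'h \<tau>Xh] CP by simp_all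
    have "(pX \<cdot> \<sigma>) \<cdot> j1' = pX \<cdot> (j1 \<cdot> h)" using assoc_hom[OF j1'h \<sigma>h pXh] \<sigma>1 by simp
    also have "\<dots> = a1 \<cdot> h" using post1[OF pX1 j1h pXh hh] .
    also have "\<dots> = (\<tau>X \<cdot> pX') \<cdot> j1'" using assoc_hom[OF j1'h pX'h \<tau>Xh] pX1' \<tau>X1 by simp
    finally show "(pX \<cdot> \<sigma>) \<cdot> j1' = (\<tau>X \<cdot> pX') \<cdot> j1'" .
    have "(pX \<cdot> \<sigma>) \<cdot> j2' = pX \<cdot> (j2 \<cdot> f)" using assoc_hom[OF j2'h \<sigma>h pXh] \<sigma>2 by simp
    also have "\<dots> = a2 \<cdot> f" using post1[OF pX2 j2h pXh fh] .
    also have "\<dots> = (\<tau>X \<cdot> pX') \<cdot> j2'" using assoc_hom[OF j2'h pX'h \<tau>Xh] pX2' \<tau>X2 by simp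
    finally show "(pX \<cdot> \<sigma>) \<cdot> j2' = (\<tau>X \<cdot> pX') \<cdot> j2'" .
    have "(pX \<cdot> \<sigma>) \<cdot> j3' = pX \<cdot> (j3 \<cdot> g)" using assoc_hom[OF j3'h \<sigma>h pXh] \<sigma>3 by simp
    also have "\<dots> = zr Y WX \<cdot> g" using post1[OF pX3 j3h pXh gh] .
    also have "\<dots> = zr Y' WX" using gh O by (simp add: hom_def)
    also have "\<dots> = \<tau>X \<cdot> zr Y' WX'" using \<tau>Xh O by (simp add: hom_def)
    also have "\<dots> = (\<tau>X \<cdot> pX') \<cdot> j3'" using assoc_hom[OF j3'h pX'h \<tau>Xh] pX3' by simp
    finally show "(pX \<cdot> \<sigma>) \<cdot> j3' = (\<tau>X \<cdot> pX') \<cdot> j3'" .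
  qed
  have C2: "\<sigma> \<cdot> sX' = sX \<cdot> \<tau>X"
  proof (rule cop_eq[OF ca'])
    show "\<sigma> \<cdot> sX' \<in> hom C (Cod C a1') P" "sX \<cdot> \<tau>X \<in> hom C (Cod C a1') P" using comp_hom[OF sX'h \<sigma>h] comp_hom[OF \<tau>Xh sXh] CP by simp_all
    have "(\<sigma> \<cdot> sX') \<cdot> a1' = j1 \<cdot> h" using assoc_hom[OF a1'h sX'h \<sigma>h] sX1' \<sigma>1 by simp
    also have "\<dots> = (sX \<cdot> \<tau>X) \<cdot> a1'" using assoc_hom[OF a1'h \<tau>Xh sXh] \<tau>X1 post1[OF sX1 a1h sXh hh] by simp
    finally show "(\<sigma> \<cdot> sX') \<cdot> a1' = (sX \<cdot> \<tau>X) \<cdot> a1'" .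
    have "(\<sigma> \<cdot> sX') \<cdot> a2' = j2 \<cdot> f" using assoc_hom[OF a2'h sX'h \<sigma>h] sX2' \<sigma>2 by simp
    also have "\<dots> = (sX \<cdot> \<tau>X) \<cdot> a2'" using assoc_hom[OF a2'h \<tau>Xh sXh] \<tau>X2 post1[OF sX2 a2h sXh fh] by simp
    finally show "(\<sigma> \<cdot> sX') \<cdot> a2' = (sX \<cdot> \<tau>X) \<cdot> a2'" .
  qed
  have C3: "pY \<cdot> \<sigma> = \<tau>Y \<cdot> pY'"
  proof (rule cop3_eq[OF c3'])
    show "pY \<cdot> \<sigma> \<in> hom C (Cod C j1') WY" "\<tau>Y \<cdot> pY' \<in> hom C (Cod C j1') WY" using comp_hom[OF \<sigma>h pYh] comp_hom[OF pY'h \<tau>Yh] CP by simp_all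
    have "(pY \<cdot> \<sigma>) \<cdot> j1' = pY \<cdot> (j1 \<cdot> h)" using assoc_hom[OF j1'h \<sigma>h pYh] \<sigma>1 by simp
    also have "\<dots> = b1 \<cdot> h" using post1[OF pY1 j1h pYh hh] .
    also have "\<dots> = (\<tau>Y \<cdot> pY') \<cdot> j1'" using assoc_hom[OF j1'h pY'h \<tau>Yh] pY1' \<tau>Y1 by simp
    finally show "(pY \<cdot> \<sigma>) \<cdot> j1' = (\<tau>Y \<cdot> pY') \<cdot> j1'" .
    have "(pY \<cdot> \<sigma>) \<cdot> j2' = pY \<cdot> (j2 \<cdot> f)" using assoc_hom[OF j2'h \<sigma>h pYh] \<sigma>2 by simp
    also have "\<dots> = zr X WY \<cdot> f" using post1[OF pY2 j2h pYh fh] .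
    also have "\<dots> = zr X' WY" using fh O by (simp add: hom_def)
    also have "\<dots> = \<tau>Y \<cdot> zr X' WY'" using \<tau>Yh O by (simp add: hom_def)
    also have "\<dots> = (\<tau>Y \<cdot> pY') \<cdot> j2'" using assoc_hom[OF j2'h pY'h \<tau>Yh] pY2' by simp
    finally show "(pY \<cdot> \<sigma>) \<cdot> j2' = (\<tau>Y \<cdot> pY') \<cdot> j2'" .
    have "(pY \<cdot> \<sigma>) \<cdot> j3' = pY \<cdot> (j3 \<cdot> g)" using assoc_hom[OF j3'h \<sigma>h pYh] \<sigma>3 by simp
    also have "\<dots> = b2 \<cdot> g" using post1[OF pY3 j3h pYh gh] .
    also have "\<dots> = (\<tau>Y \<cdot> pY') \<cdot> j3'" using assoc_hom[OF j3'h pY'h \<tau>Yh] pY3' \<tau>Y2 by simp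
    finally show "(pY \<cdot> \<sigma>) \<cdot> j3' = (\<tau>Y \<cdot> pY') \<cdot> j3'" .
  qed
  have C4: "\<sigma> \<cdot> cY' = cY \<cdot> \<tau>Y"
  proof (rule cop_eq[OF cb'])
    show "\<sigma> \<cdot> cY' \<in> hom C (Cod C b1') P" "cY \<cdot> \<tau>Y \<in> hom C (Cod C b1') P" using comp_hom[OF cY'h \<sigma>h] comp_hom[OF \<tau>Yh cYh] CP by simp_all
    have "(\<sigma> \<cdot> cY') \<cdot> b1' = j1 \<cdot> h" using assoc_hom[OF b1'h cY'h \<sigma>h] cY1' \<sigma>1 by simp
    also have "\<dots> = (cY \<cdot> \<tau>Y) \<cdot> b1'" using assoc_hom[OF b1'h \<tau>Yh cYh] \<tau>Y1 post1[OF cY1 b1h cYh hh] by simp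
    finally show "(\<sigma> \<cdot> cY') \<cdot> b1' = (cY \<cdot> \<tau>Y) \<cdot> b1'" .
    have "(\<sigma> \<cdot> cY') \<cdot> b2' = j3 \<cdot> g" using assoc_hom[OF b2'h cY'h \<sigma>h] cY2' \<sigma>3 by simp
    also have "\<dots> = (cY \<cdot> \<tau>Y) \<cdot> b2'" using assoc_hom[OF b2'h \<tau>Yh cYh] \<tau>Y2 post1[OF cY2 b2h cYh gh] by simp
    finally show "(\<sigma> \<cdot> cY') \<cdot> b2' = (cY \<cdot> \<tau>Y) \<cdot> b2'" .
  qed
  have C5: "e2 \<cdot> \<tau>Y = h \<cdot> e2'"
  proof (rule cop_eq[OF cb'])
    show "e2 \<cdot> \<tau>Y \<in> hom C (Cod C b1') W" "h \<cdot> e2' \<in> hom C (Cod C b1') W" using comp_hom[OF \<tau>Yh e2h] comp_hom[OF e2'h hh] CP by simp_all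
    have "(e2 \<cdot> \<tau>Y) \<cdot> b1' = h" using assoc_hom[OF b1'h \<tau>Yh e2h] \<tau>Y1 post1[OF e2b1 b1h e2h hh] idl_hom[OF hh] by simp
    also have "\<dots> = (h \<cdot> e2') \<cdot> b1'" using assoc_hom[OF b1'h e2'h hh] e2b1' idr_hom[OF hh] by simp
    finally show "(e2 \<cdot> \<tau>Y) \<cdot> b1' = (h \<cdot> e2') \<cdot> b1'" .
    have "(e2 \<cdot> \<tau>Y) \<cdot> b2' = zr Y W \<cdot> g" using assoc_hom[OF b2'h \<tau>Yh e2h] \<tau>Y2 post1[OF e2b2 b2h e2h gh] by simp
    also have "\<dots> = zr Y' W" using gh O by (simp add: hom_def)
    also have "\<dots> = (h \<cdot> e2') \<cdot> b2'" using assoc_hom[OF b2'h e2'h hh] e2b2' hh O by (simp add: hom_def)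
    finally show "(e2 \<cdot> \<tau>Y) \<cdot> b2' = (h \<cdot> e2') \<cdot> b2'" .
  qed
  note kXp = ker_props[OF kX] and kX'p = ker_props[OF kX']
  have \<kappa>Xm: "monic \<kappa>X" using ker_monic[OF kX] .
  have \<kappa>Ym: "monic \<kappa>Y" using ker_monic[OF kY] .
  have kXa: "is_kernel C pX \<kappa>X" using kX by (simp add: pX_def)
  have kX'a: "is_kernel C pX' \<kappa>X'" using kX' by (simp add: pX'_def)
  have pX\<kappa>X': "pX' \<cdot> \<kappa>X' = zr NX' WX'" using ker_props(4)[OF kX'a] \<kappa>X'h pX'h by (simp add: hom_def)
  have \<sigma>\<kappa>X': "\<sigma> \<cdot> \<kappa>X' \<in> hom C NX' (Dom C pX)" using comp_hom[OF \<kappa>X'h \<sigma>h] pXh by (simp add: hom_def)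
  have "pX \<cdot> (\<sigma> \<cdot> \<kappa>X') = \<tau>X \<cdot> (pX' \<cdot> \<kappa>X')" using post[OF C1 \<sigma>h pXh pX'h \<tau>Xh \<kappa>X'h] .
  also have "\<dots> = zr NX' (Cod C pX)" using pX\<kappa>X' \<tau>Xh pXh O by (simp add: hom_def)
  finally obtain \<sigma>X where \<sigma>Xh0: "\<sigma>X \<in> hom C NX' (Dom C \<kappa>X)" and \<kappa>X\<sigma>X: "\<kappa>X \<cdot> \<sigma>X = \<sigma> \<cdot> \<kappa>X'"
    using ker_ex[OF kXa \<sigma>\<kappa>X'] by blast
  have \<sigma>Xh: "\<sigma>X \<in> hom C NX' NX" using \<sigma>Xh0 \<kappa>Xh by (simp add: hom_def)
  have pXsXa: "pX \<cdot> sX = Idm C WX" and pXsX'a: "pX' \<cdot> sX' = Idm C WX'" using pXsX pXsX' by (simp_all add: pX_def pX'_def)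
  have \<sigma>Xh': "\<sigma>X \<in> hom C (Dom C \<kappa>X') (Dom C \<kappa>X)" using \<sigma>Xh \<kappa>Xh \<kappa>X'h by (simp add: hom_def)
  have \<sigma>XR: "regular_epi C \<sigma>X"
    by (rule lemmaK[OF \<sigma>R pX'h sX'h pXsX'a pXh sXh pXsXa \<sigma>h \<tau>Xh C1 C2 kX'a kXa \<sigma>Xh' \<kappa>X\<sigma>X])
  have e2\<kappa>Y': "e2' \<cdot> \<kappa>Y' = zr NY' W'" using ker_props(4)[OF kY'] \<kappa>Y'h e2'h by (simp add: hom_def)
  have \<tau>Y\<kappa>Y': "\<tau>Y \<cdot> \<kappa>Y' \<in> hom C NY' (Dom C e2)" using comp_hom[OF \<kappa>Y'h \<tau>Yh] e2h by (simp add: hom_def)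
  have "e2 \<cdot> (\<tau>Y \<cdot> \<kappa>Y') = h \<cdot> (e2' \<cdot> \<kappa>Y')" using post[OF C5 \<tau>Yh e2h e2'h hh \<kappa>Y'h] .
  also have "\<dots> = zr NY' (Cod C e2)" using e2\<kappa>Y' hh e2h O by (simp add: hom_def)
  finally obtain \<tau>Y0 where \<tau>Y0h0: "\<tau>Y0 \<in> hom C NY' (Dom C \<kappa>Y)" and \<kappa>Y\<tau>Y0: "\<kappa>Y \<cdot> \<tau>Y0 = \<tau>Y \<cdot> \<kappa>Y'"
    using ker_ex[OF kY \<tau>Y\<kappa>Y'] by blast
  have \<tau>Y0h: "\<tau>Y0 \<in> hom C NY' NY" using \<tau>Y0h0 \<kappa>Yh by (simp add: hom_def)
  have \<kappa>Yqqa: "\<kappa>Y \<cdot> qq = pY \<cdot> \<kappa>X" using \<kappa>Yqq by (simp add: pY_def)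
  have \<kappa>Yqq'a: "\<kappa>Y' \<cdot> qq' = pY' \<cdot> \<kappa>X'" using \<kappa>Yqq' by (simp add: pY'_def)
  have D1: "qq \<cdot> \<sigma>X = \<tau>Y0 \<cdot> qq'"
  proof -
    have "\<kappa>Y \<cdot> (qq \<cdot> \<sigma>X) = pY \<cdot> (\<kappa>X \<cdot> \<sigma>X)" using post[OF \<kappa>Yqqa qqh \<kappa>Yh \<kappa>Xh pYh \<sigma>Xh] .
    also have "\<dots> = pY \<cdot> (\<sigma> \<cdot> \<kappa>X')" using \<kappa>X\<sigma>X by simp
    also have "\<dots> = \<tau>Y \<cdot> (pY' \<cdot> \<kappa>X')" using post[OF C3 \<sigma>h pYh pY'h \<tau>Yh \<kappa>X'h] .
    also have "\<dots> = \<tau>Y \<cdot> (\<kappa>Y' \<cdot> qq')" using \<kappa>Yqq'a by simp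
    also have "\<dots> = \<kappa>Y \<cdot> (\<tau>Y0 \<cdot> qq')" using post[OF \<kappa>Y\<tau>Y0[symmetric] \<kappa>Y'h \<tau>Yh \<tau>Y0h \<kappa>Yh qq'h] .
    finally show ?thesis using monicD[OF \<kappa>Ym, of "qq \<cdot> \<sigma>X" NX' "\<tau>Y0 \<cdot> qq'"] comp_hom[OF \<sigma>Xh qqh] comp_hom[OF qq'h \<tau>Y0h] \<kappa>Yh
      by (simp add: hom_def)
  qed
  have D2: "\<sigma>X \<cdot> ss' = ss \<cdot> \<tau>Y0"
  proof -
    have "\<kappa>X \<cdot> (\<sigma>X \<cdot> ss') = \<sigma> \<cdot> (\<kappa>X' \<cdot> ss')" using post[OF \<kappa>X\<sigma>X \<sigma>Xh \<kappa>Xh \<kappa>X'h \<sigma>h ss'h] .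
    also have "\<dots> = \<sigma> \<cdot> (cY' \<cdot> \<kappa>Y')" using \<kappa>Xss' by simp
    also have "\<dots> = cY \<cdot> (\<tau>Y \<cdot> \<kappa>Y')" using post[OF C4 cY'h \<sigma>h \<tau>Yh cYh \<kappa>Y'h] .
    also have "\<dots> = cY \<cdot> (\<kappa>Y \<cdot> \<tau>Y0)" using \<kappa>Y\<tau>Y0 by simp
    also have "\<dots> = \<kappa>X \<cdot> (ss \<cdot> \<tau>Y0)" using post[OF \<kappa>Xss[symmetric] \<kappa>Yh cYh ssh \<kappa>Xh \<tau>Y0h] .
    finally show ?thesis using monicD[OF \<kappa>Xm, of "\<sigma>X \<cdot> ss'" NY' "ss \<cdot> \<tau>Y0"] comp_hom[OF ss'h \<sigma>Xh] comp_hom[OF \<tau>Y0h ssh] \<kappa>Xh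
      by (simp add: hom_def)
  qed
  have E: "kh \<cdot> t = \<sigma>X \<cdot> kh'"
  proof -
    have khh': "kh \<in> hom C (Dom C k) NX" by fact
    have "\<kappa>X \<cdot> (kh \<cdot> t) = k \<cdot> t" using post1[OF \<kappa>Xkh khh \<kappa>Xh th] .
    also have "\<dots> = \<sigma> \<cdot> (\<kappa>X' \<cdot> kh')" using kt \<kappa>Xkh' by simp
    also have "\<dots> = \<kappa>X \<cdot> (\<sigma>X \<cdot> kh')" using post[OF \<kappa>X\<sigma>X[symmetric] \<kappa>X'h \<sigma>h \<sigma>Xh \<kappa>Xh kh'h] .
    finally show ?thesis using monicD[OF \<kappa>Xm, of "kh \<cdot> t" "Dom C k'" "\<sigma>X \<cdot> kh'"] comp_hom[OF th khh] comp_hom[OF kh'h \<sigma>Xh] \<kappa>Xh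
      by (simp add: hom_def)
  qed
  have th': "t \<in> hom C (Dom C kh') (Dom C kh)" using th kh'h khh by (simp add: hom_def)
  have "regular_epi C t"
    by (rule lemmaK[OF \<sigma>XR qq'h ss'h qqss' qqh ssh qqss \<sigma>Xh \<tau>Y0h D1 D2 khk' khk th' E])
  then show ?thesis by (rule regular_normal)
qed

end

theorem lemma5p1:
  fixes C :: "('o, 'm) cat"
  assumes "semi_abelian C"
    and "f \<in> hom C X' X" and "g \<in> hom C Y' Y" and "h \<in> hom C W' W"
    and "normal_epi C f" and "normal_epi C g" and "normal_epi C h"
    and "is_tensor C W' X' Y' j1' j2' j3' k'"
    and "is_tensor C W X Y j1 j2 j3 k"
    and "\<sigma> \<in> hom C (Cod C j1') (Cod C j1)"
    and "Cmp C \<sigma> j1' = Cmp C j1 h" and "Cmp C \<sigma> j2' = Cmp C j2 f" and "Cmp C \<sigma> j3' = Cmp C j3 g"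
    and "t \<in> hom C (Dom C k') (Dom C k)" and "Cmp C k t = Cmp C \<sigma> k'"
  shows "normal_epi C t"
proof -
  interpret sa C by (unfold_locales) (rule assms(1))
  show ?thesis by (rule main[OF assms(2-15)])
qed

end
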